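(* Let $n\ge2$. The isolated subsemigroups of $\mathcal{I}^{\ast}_n$ are exactly $\mathcal{I}^{\ast}_n$, $\mathcal{S}_n$, $\mathcal{I}^{\ast}_n\setminus\mathcal{S}_n$, and the maximal subgroups $G(e)$ where $e$ is an idempotent of rank $n-1$.
   Context: Let $X=\{1,\dots,n\}$, $X'=\{1',\dots,n'\}$. $\mathcal{I}^{\ast}_n$ is the set of partitions of $X\cup X'$ all of whose blocks meet both $X$ and $X'$, with product: regard $\alpha$ as a partition of $X\cup X''$ and $\beta$ as a partition of $X''\cup X'$ ($X''$ a third copy of $X$), and let $\alpha\beta$ be the partition of $X\cup X'$ induced by the equivalence on $X\cup X''\cup X'$ generated by the blocks of both. Rank = number of blocks. $\mathcal{S}_n$ is the group of units (elements all of whose blocks are $\{x,\pi(x)'\}$ for a permutation $\pi$). $G(e)$ is the $\mathcal{H}$-class of the idempotent $e$. A subsemigroup $T$ of a semigroup $S$ is isolated if for all $a\in S$ and $k\ge1$, $a^k\in T$ implies $a\in T$. *)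

theory Defs
  imports "HOL-Library.Disjoint_Sets" "HOL-Combinatorics.Permutations"
begin

text \<open>Points of X \<union> X' \<union> X'' are encoded as pairs (tag, i): tag 0 = X (unprimed),
  tag 1 = X' (primed), tag 2 = X'' (the auxiliary middle copy); i ranges over 1..n.\<close>

type_synonym pt = "nat \<times> nat"
type_synonym dpart = "pt set set"

definition pts :: "nat \<Rightarrow> pt set" where
  "pts n = {0, 1} \<times> {1..n}"

definition dual_sym :: "nat \<Rightarrow> dpart set" where
  "dual_sym n = {P. partition_on (pts n) P \<and>
      (\<forall>B\<in>P. (\<exists>i. (0, i) \<in> B) \<and> (\<exists>i. (1, i) \<in> B))}"

text \<open>Product: alpha regarded on X \<union> X'' (primed points moved to tag 2), beta on
  X'' \<union> X' (unprimed points moved to tag 2); take the equivalence generated by all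
  blocks and restrict its classes to X \<union> X'.\<close>
definition lift_left :: "dpart \<Rightarrow> dpart" where
  "lift_left a = (\<lambda>B. (\<lambda>(t, i). (if t = 1 then 2 else t, i)) ` B) ` a"

definition lift_right :: "dpart \<Rightarrow> dpart" where
  "lift_right b = (\<lambda>B. (\<lambda>(t, i). (if t = 0 then 2 else t, i)) ` B) ` b"

definition dmult :: "dpart \<Rightarrow> dpart \<Rightarrow> dpart" where
  "dmult a b =
     (let Bs = lift_left a \<union> lift_right b;
          R = (\<Union>B\<in>Bs. B \<times> B)
      in (\<lambda>C. C \<inter> {p. fst p \<noteq> 2}) ` ((\<Union>Bs) // (R\<^sup>*)) - {{}})"

definition rank :: "dpart \<Rightarrow> nat" where
  "rank a = card a"

definition sym_units :: "nat \<Rightarrow> dpart set" where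
  "sym_units n = {{{(0, i), (1, \<pi> i)} | i. i \<in> {1..n}} | \<pi>. \<pi> permutes {1..n}}"

definition dpow :: "dpart \<Rightarrow> nat \<Rightarrow> dpart" where
  "dpow a k = ((\<lambda>x. dmult x a) ^^ (k - 1)) a"

definition idempotent :: "dpart \<Rightarrow> bool" where
  "idempotent e \<longleftrightarrow> dmult e e = e"

text \<open>Green's H-relation in I*_n (a monoid, so S^1 = S).\<close>
definition H_class :: "nat \<Rightarrow> dpart \<Rightarrow> dpart set" where
  "H_class n e = {a \<in> dual_sym n.
      insert a {dmult s a | s. s \<in> dual_sym n} = insert e {dmult s e | s. s \<in> dual_sym n} \<and>
      insert a {dmult a s | s. s \<in> dual_sym n} = insert e {dmult e s | s. s \<in> dual_sym n}}"

definition subsemigroup :: "nat \<Rightarrow> dpart set \<Rightarrow> bool" where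
  "subsemigroup n T \<longleftrightarrow> T \<noteq> {} \<and> T \<subseteq> dual_sym n \<and> (\<forall>a\<in>T. \<forall>b\<in>T. dmult a b \<in> T)"

definition isolated :: "nat \<Rightarrow> dpart set \<Rightarrow> bool" where
  "isolated n T \<longleftrightarrow> (\<forall>a\<in>dual_sym n. \<forall>k\<ge>1. dpow a k \<in> T \<longrightarrow> a \<in> T)"

end

theory Submission
  imports Defs
begin

definition sb :: "dpart \<Rightarrow> (pt \<times> pt) set" where
  "sb a = {(p, q). \<exists>B\<in>a. p \<in> B \<and> q \<in> B}"

abbreviation NN :: "nat \<Rightarrow> nat set" where "NN n \<equiv> {1..n}"

lemma pts_iff: "(t, i) \<in> pts n \<longleftrightarrow> (t = 0 \<or> t = 1) \<and> 1 \<le> i \<and> i \<le> n"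
  by (auto simp: pts_def)

lemma D_part: "a \<in> dual_sym n \<Longrightarrow> partition_on (pts n) a"
  by (simp add: dual_sym_def)

lemma D_equiv: "a \<in> dual_sym n \<Longrightarrow> equiv (pts n) (sb a)"
  unfolding sb_def by (rule equiv_partition_on[OF D_part])

lemma D_quot: "a \<in> dual_sym n \<Longrightarrow> pts n // sb a = a"
  unfolding sb_def by (rule partition_on_eq_quotient[OF D_part])

lemma D_ext: "a \<in> dual_sym n \<Longrightarrow> b \<in> dual_sym n \<Longrightarrow> sb a = sb b \<Longrightarrow> a = b"
  using D_quot by metis

lemma sb_sym: "(p, q) \<in> sb a \<Longrightarrow> (q, p) \<in> sb a"
  by (auto simp: sb_def)

lemma sb_trans: "a \<in> dual_sym n \<Longrightarrow> (p, q) \<in> sb a \<Longrightarrow> (q, r) \<in> sb a \<Longrightarrow> (p, r) \<in> sb a"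
  using D_equiv[of a n] unfolding equiv_def trans_def by blast

lemma sb_refl: "a \<in> dual_sym n \<Longrightarrow> p \<in> pts n \<Longrightarrow> (p, p) \<in> sb a"
  using D_equiv[of a n] unfolding equiv_def refl_on_def by blast

lemma sb_pts: "a \<in> dual_sym n \<Longrightarrow> (p, q) \<in> sb a \<Longrightarrow> p \<in> pts n \<and> q \<in> pts n"
  using D_equiv[of a n] unfolding equiv_def by blast

lemma D_tag0: "a \<in> dual_sym n \<Longrightarrow> p \<in> pts n \<Longrightarrow> \<exists>i. (p, (0, i)) \<in> sb a"
proof -
  assume a: "a \<in> dual_sym n" and p: "p \<in> pts n"
  then obtain B where "B \<in> a" "p \<in> B" using D_part[OF a] by (auto simp: partition_on_def)
  moreover then obtain i where "(0, i) \<in> B" using a by (auto simp: dual_sym_def)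
  ultimately show ?thesis by (auto simp: sb_def)
qed

lemma D_tag1: "a \<in> dual_sym n \<Longrightarrow> p \<in> pts n \<Longrightarrow> \<exists>i. (p, (1, i)) \<in> sb a"
proof -
  assume a: "a \<in> dual_sym n" and p: "p \<in> pts n"
  then obtain B where "B \<in> a" "p \<in> B" using D_part[OF a] by (auto simp: partition_on_def)
  moreover then obtain i where "(1, i) \<in> B" using a by (auto simp: dual_sym_def)
  ultimately show ?thesis by (auto simp: sb_def)
qed

lemma sb_quotient: "equiv A E \<Longrightarrow> {(p, q). \<exists>B\<in>A // E. p \<in> B \<and> q \<in> B} = E"
proof (safe)
  fix a b B assume E: "equiv A E" and B: "B \<in> A // E" "a \<in> B" "b \<in> B"
  then obtain y where "y \<in> A" "B = E `` {y}" by (auto elim: quotientE)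
  then show "(a, b) \<in> E" using B E unfolding equiv_def sym_def trans_def by blast
next
  fix a b assume E: "equiv A E" and ab: "(a, b) \<in> E"
  then have "a \<in> A" using E unfolding equiv_def by blast
  moreover have "(a, a) \<in> E" using E \<open>a \<in> A\<close> unfolding equiv_def refl_on_def by blast
  ultimately show "\<exists>B\<in>A // E. a \<in> B \<and> b \<in> B" using ab by (auto intro!: bexI[of _ "E `` {a}"] quotientI)
qed

lemma mkD:
  assumes E: "equiv (pts n) E"
    and t0: "\<And>p. p \<in> pts n \<Longrightarrow> \<exists>i. (p, (0, i)) \<in> E"
    and t1: "\<And>p. p \<in> pts n \<Longrightarrow> \<exists>i. (p, (1, i)) \<in> E"
  shows "pts n // E \<in> dual_sym n" "sb (pts n // E) = E"
proof -
  show "sb (pts n // E) = E" unfolding sb_def using sb_quotient[OF E] by simp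
  have "partition_on (pts n) (pts n // E)" by (rule partition_on_quotient[OF E])
  moreover have "\<forall>B\<in>pts n // E. (\<exists>i. (0, i) \<in> B) \<and> (\<exists>i. (1, i) \<in> B)"
  proof
    fix B assume "B \<in> pts n // E"
    then obtain p where p: "p \<in> pts n" "B = E `` {p}" by (auto elim: quotientE)
    then show "(\<exists>i. (0, i) \<in> B) \<and> (\<exists>i. (1, i) \<in> B)" using t0[OF p(1)] t1[OF p(1)] by auto
  qed
  ultimately show "pts n // E \<in> dual_sym n" by (simp add: dual_sym_def)
qed

definition kerf :: "nat \<Rightarrow> (pt \<Rightarrow> 'l) \<Rightarrow> (pt \<times> pt) set" where
  "kerf n k = {(p, q). p \<in> pts n \<and> q \<in> pts n \<and> k p = k q}"

definition mkf :: "nat \<Rightarrow> (pt \<Rightarrow> 'l) \<Rightarrow> dpart" where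
  "mkf n k = pts n // kerf n k"

lemma kerf_equiv: "equiv (pts n) (kerf n k)"
  by (auto simp: kerf_def equiv_def refl_on_def sym_def trans_def)

lemma mkf:
  assumes "\<And>i. i \<in> NN n \<Longrightarrow> \<exists>j\<in>NN n. k (1, j) = k (0, i)"
    and "\<And>j. j \<in> NN n \<Longrightarrow> \<exists>i\<in>NN n. k (0, i) = k (1, j)"
  shows "mkf n k \<in> dual_sym n" "sb (mkf n k) = kerf n k"
proof -
  have t0: "\<exists>i. (p, (0, i)) \<in> kerf n k" if "p \<in> pts n" for p
  proof -
    obtain t i where p: "p = (t, i)" by force
    show ?thesis
    proof (cases "t = 0")
      case True then show ?thesis using that p by (auto simp: kerf_def)
    next
      case False
      then have "t = 1" "i \<in> NN n" using that p by (auto simp: pts_def)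
      then obtain j where "j \<in> NN n" "k (0, j) = k (1, i)" using assms(2) by blast
      then show ?thesis using that p \<open>t = 1\<close> by (auto simp: kerf_def pts_def)
    qed
  qed
  have t1: "\<exists>i. (p, (1, i)) \<in> kerf n k" if "p \<in> pts n" for p
  proof -
    obtain t i where p: "p = (t, i)" by force
    show ?thesis
    proof (cases "t = 1")
      case True then show ?thesis using that p by (auto simp: kerf_def)
    next
      case False
      then have "t = 0" "i \<in> NN n" using that p by (auto simp: pts_def)
      then obtain j where "j \<in> NN n" "k (1, j) = k (0, i)" using assms(1) by blast
      then show ?thesis using that p \<open>t = 0\<close> by (auto simp: kerf_def pts_def)
    qed
  qed
  show "mkf n k \<in> dual_sym n" "sb (mkf n k) = kerf n k"
    unfolding mkf_def using mkD[OF kerf_equiv t0 t1] by auto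
qed



definition shl :: "pt \<Rightarrow> pt" where "shl = (\<lambda>(t, i). (if t = 1 then 2 else t, i))"
definition shr :: "pt \<Rightarrow> pt" where "shr = (\<lambda>(t, i). (if t = 0 then 2 else t, i))"

definition GG :: "dpart \<Rightarrow> dpart \<Rightarrow> (pt \<times> pt) set" where
  "GG a b = (\<lambda>(p, q). (shl p, shl q)) ` sb a \<union> (\<lambda>(p, q). (shr p, shr q)) ` sb b"

lemma shl_simps[simp]: "shl (0, i) = (0, i)" "shl (1, i) = (2, i)" "shl (Suc 0, i) = (2, i)"
  by (auto simp: shl_def)
lemma shr_simps[simp]: "shr (0, i) = (2, i)" "shr (1, i) = (1, i)" "shr (Suc 0, i) = (1, i)"
  by (auto simp: shr_def)

lemma GG_L: "(p, q) \<in> sb a \<Longrightarrow> (shl p, shl q) \<in> GG a b"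
  by (force simp: GG_def)
lemma GG_R: "(p, q) \<in> sb b \<Longrightarrow> (shr p, shr q) \<in> GG a b"
  by (force simp: GG_def)

lemma GG_sym: "sym (GG a b)"
proof (rule symI)
  fix x y assume "(x, y) \<in> GG a b"
  then consider "(x, y) \<in> (\<lambda>(p, q). (shl p, shl q)) ` sb a" | "(x, y) \<in> (\<lambda>(p, q). (shr p, shr q)) ` sb b"
    unfolding GG_def by blast
  then show "(y, x) \<in> GG a b"
  proof cases
    case 1
    assume "(x, y) \<in> (\<lambda>(p, q). (shl p, shl q)) ` sb a"
    then obtain p q where "(p, q) \<in> sb a" "x = shl p" "y = shl q" by auto
    then show ?thesis using GG_L[OF sb_sym, of p q a b] by (simp add: GG_def)
  next
    case 2
    assume "(x, y) \<in> (\<lambda>(p, q). (shr p, shr q)) ` sb b"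
    then obtain p q where "(p, q) \<in> sb b" "x = shr p" "y = shr q" by auto
    then show ?thesis using GG_R[OF sb_sym, of p q b a] by (simp add: GG_def)
  qed
qed

lemma img_sq: "(\<Union>B\<in>(`) f ` a. B \<times> B) = (\<lambda>(p, q). (f p, f q)) ` {(p, q). \<exists>B\<in>a. p \<in> B \<and> q \<in> B}"
  by (auto simp: image_iff)

lemma GG_union: "(\<Union>B\<in>lift_left a \<union> lift_right b. B \<times> B) = GG a b"
proof -
  have "lift_left a = (`) shl ` a" "lift_right b = (`) shr ` b"
    unfolding lift_left_def lift_right_def shl_def shr_def by auto
  then show ?thesis unfolding GG_def sb_def by (simp only: UN_Un img_sq)
qed

definition V3 :: "nat \<Rightarrow> pt set" where "V3 n = shl ` pts n \<union> shr ` pts n"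

lemma V3_iff: "(t, i) \<in> V3 n \<longleftrightarrow> (t = 0 \<or> t = 1 \<or> t = 2) \<and> 1 \<le> i \<and> i \<le> n"
  unfolding V3_def pts_def shl_def shr_def by (auto simp: image_iff)

lemma pts_V3: "pts n \<subseteq> V3 n"
  by (auto simp: pts_def V3_iff)

lemma GG_V3: "a \<in> dual_sym n \<Longrightarrow> b \<in> dual_sym n \<Longrightarrow> GG a b \<subseteq> V3 n \<times> V3 n"
  unfolding GG_def V3_def using sb_pts by fast

lemma Union_lift: "a \<in> dual_sym n \<Longrightarrow> b \<in> dual_sym n \<Longrightarrow> \<Union>(lift_left a \<union> lift_right b) = V3 n"
  using D_part[of a n] D_part[of b n] unfolding lift_left_def lift_right_def V3_def partition_on_def
    shl_def shr_def by blast

lemma rtr_V3: "a \<in> dual_sym n \<Longrightarrow> b \<in> dual_sym n \<Longrightarrow> (x, y) \<in> (GG a b)\<^sup>* \<Longrightarrow> x \<in> V3 n \<Longrightarrow> y \<in> V3 n"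
proof -
  assume a: "a \<in> dual_sym n" and b: "b \<in> dual_sym n" and xy: "(x, y) \<in> (GG a b)\<^sup>*" and x: "x \<in> V3 n"
  from xy x show ?thesis
    by (induction rule: rtrancl_induct) (use GG_V3[OF a b] in blast)+
qed

definition EE :: "nat \<Rightarrow> dpart \<Rightarrow> dpart \<Rightarrow> (pt \<times> pt) set" where
  "EE n a b = {(p, q). p \<in> pts n \<and> q \<in> pts n \<and> (p, q) \<in> (GG a b)\<^sup>*}"

lemma EE_equiv: "equiv (pts n) (EE n a b)"
proof -
  have s: "sym ((GG a b)\<^sup>*)" by (rule sym_rtrancl[OF GG_sym])
  show ?thesis unfolding equiv_def EE_def refl_on_def trans_def
    using s unfolding sym_def by (auto intro: rtrancl_trans)
qed

lemma EE_tags: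
  assumes a: "a \<in> dual_sym n" and b: "b \<in> dual_sym n" and p: "p \<in> pts n"
  shows "\<exists>i. (p, (0, i)) \<in> EE n a b" "\<exists>i. (p, (1, i)) \<in> EE n a b"
proof -
  obtain t i where pt: "p = (t, i)" by force
  have i: "i \<in> NN n" and t: "t = 0 \<or> t = 1" using p pt by (auto simp: pts_def)
  have s: "sym ((GG a b)\<^sup>*)" by (rule sym_rtrancl[OF GG_sym])
  have A: "\<exists>k. ((0, i), (1, k)) \<in> EE n a b" if i: "i \<in> NN n" for i
  proof -
    obtain j where j: "((0, i), (1, j)) \<in> sb a" using D_tag1[OF a, of "(0, i)"] i by (auto simp: pts_def)
    then have j': "(0, j) \<in> pts n" using sb_pts[OF a j] by (auto simp: pts_def)
    obtain k where k: "((0, j), (1, k)) \<in> sb b" using D_tag1[OF b j'] by auto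
    have "((0, i), (2, j)) \<in> GG a b" using GG_L[OF j, of b] by simp
    moreover have "((2, j), (1, k)) \<in> GG a b" using GG_R[OF k, of a] by simp
    ultimately have "((0, i), (1, k)) \<in> (GG a b)\<^sup>*" by auto
    moreover have "(1, k) \<in> pts n" using sb_pts[OF b k] by simp
    ultimately show ?thesis using i by (auto simp: EE_def pts_def)
  qed
  have B: "\<exists>k. ((1, i), (0, k)) \<in> EE n a b" if i: "i \<in> NN n" for i
  proof -
    obtain j where j: "((1, i), (0, j)) \<in> sb b" using D_tag0[OF b, of "(1, i)"] i by (auto simp: pts_def)
    then have j': "(1, j) \<in> pts n" using sb_pts[OF b j] by (auto simp: pts_def)
    obtain k where k: "((1, j), (0, k)) \<in> sb a" using D_tag0[OF a j'] by auto
    have "((1, i), (2, j)) \<in> GG a b" using GG_R[OF j, of a] by simp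
    moreover have "((2, j), (0, k)) \<in> GG a b" using GG_L[OF k, of b] by simp
    ultimately have "((1, i), (0, k)) \<in> (GG a b)\<^sup>*" by auto
    moreover have "(0, k) \<in> pts n" using sb_pts[OF a k] by simp
    ultimately show ?thesis using i by (auto simp: EE_def pts_def)
  qed
  have r: "(p, p) \<in> EE n a b" using p by (auto simp: EE_def)
  show "\<exists>i. (p, (0, i)) \<in> EE n a b" using t A[OF i] B[OF i] r pt by auto
  show "\<exists>i. (p, (1, i)) \<in> EE n a b" using t A[OF i] B[OF i] r pt by auto
qed

lemma dmult_eq:
  assumes a: "a \<in> dual_sym n" and b: "b \<in> dual_sym n"
  shows "dmult a b = pts n // EE n a b"
proof -
  let ?R = "GG a b"
  have s: "sym (?R\<^sup>*)" by (rule sym_rtrancl[OF GG_sym])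
  have dm: "dmult a b = (\<lambda>C. C \<inter> {p. fst p \<noteq> 2}) ` (V3 n // ?R\<^sup>*) - {{}}"
    unfolding dmult_def Let_def GG_union Union_lift[OF a b] by simp
  have cls: "?R\<^sup>* `` {x} \<inter> {p. fst p \<noteq> 2} = EE n a b `` {p}"
    if x: "x \<in> V3 n" and p: "p \<in> ?R\<^sup>* `` {x}" "fst p \<noteq> 2" for x p
  proof -
    have pV: "p \<in> V3 n" using rtr_V3[OF a b _ x] p by auto
    have pp: "p \<in> pts n" using pV p(2) by (cases p) (auto simp: V3_iff pts_def)
    show ?thesis
    proof (intro equalityI subsetI)
      fix q assume q0: "q \<in> ?R\<^sup>* `` {x} \<inter> {p. fst p \<noteq> 2}"
      then have q: "q \<in> ?R\<^sup>* `` {x}" "fst q \<noteq> 2" by auto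
      have qV: "q \<in> V3 n" using rtr_V3[OF a b _ x] q by auto
      have qp: "q \<in> pts n" using qV q(2) by (cases q) (auto simp: V3_iff pts_def)
      have "(x, p) \<in> ?R\<^sup>*" using p by auto
      then have "(p, x) \<in> ?R\<^sup>*" using s by (meson symD)
      then have "(p, q) \<in> ?R\<^sup>*" using q by auto
      then show "q \<in> EE n a b `` {p}" using pp qp by (auto simp: EE_def)
    next
      fix q assume q: "q \<in> EE n a b `` {p}"
      then have "(p, q) \<in> ?R\<^sup>*" "q \<in> pts n" by (auto simp: EE_def)
      moreover have "fst q \<noteq> 2" using \<open>q \<in> pts n\<close> by (cases q) (auto simp: pts_def)
      ultimately show "q \<in> ?R\<^sup>* `` {x} \<inter> {p. fst p \<noteq> 2}" using p by auto
    qed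
  qed
  show ?thesis
    unfolding dm
  proof (intro equalityI subsetI)
    fix Y assume Y: "Y \<in> (\<lambda>C. C \<inter> {p. fst p \<noteq> 2}) ` (V3 n // ?R\<^sup>*) - {{}}"
    then obtain X where X: "X \<in> V3 n // ?R\<^sup>*" and YX: "Y = X \<inter> {p. fst p \<noteq> 2}" and ne: "Y \<noteq> {}" by auto
    from X obtain x where x: "x \<in> V3 n" "X = ?R\<^sup>* `` {x}" by (auto simp: quotient_def)
    obtain p where pX: "p \<in> X" "fst p \<noteq> 2" using ne YX by auto
    have "Y = EE n a b `` {p}" using cls[OF x(1)] x(2) pX YX by auto
    moreover have "p \<in> pts n"
    proof -
      have "p \<in> V3 n" using rtr_V3[OF a b _ x(1)] pX x(2) by auto
      then show ?thesis using pX(2) by (cases p) (auto simp: V3_iff pts_def)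
    qed
    ultimately show "Y \<in> pts n // EE n a b" by (auto intro: quotientI)
  next
    fix Y assume "Y \<in> pts n // EE n a b"
    then obtain p where p: "p \<in> pts n" "Y = EE n a b `` {p}" by (auto elim: quotientE)
    have pV: "p \<in> V3 n" using p pts_V3 by auto
    have f2: "fst p \<noteq> 2" using p(1) by (cases p) (auto simp: pts_def)
    have "?R\<^sup>* `` {p} \<inter> {p. fst p \<noteq> 2} = Y"
      using cls[OF pV _ f2] p(2) by simp
    moreover have "?R\<^sup>* `` {p} \<in> V3 n // ?R\<^sup>*" using pV by (auto intro: quotientI)
    moreover have "Y \<noteq> {}" using p EE_equiv[of n a b] by (auto simp: equiv_def refl_on_def)
    ultimately show "Y \<in> (\<lambda>C. C \<inter> {p. fst p \<noteq> 2}) ` (V3 n // ?R\<^sup>*) - {{}}" by auto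
  qed
qed

lemma DM:
  assumes a: "a \<in> dual_sym n" and b: "b \<in> dual_sym n"
  shows "dmult a b \<in> dual_sym n" "sb (dmult a b) = EE n a b"
  unfolding dmult_eq[OF a b] using mkD[OF EE_equiv EE_tags(1)[OF a b] EE_tags(2)[OF a b]] by auto



lemma INV:
  assumes a: "a \<in> dual_sym n" and b: "b \<in> dual_sym n"
    and L: "\<And>p q. (p, q) \<in> sb a \<Longrightarrow> h (shl p) = h (shl q)"
    and R: "\<And>p q. (p, q) \<in> sb b \<Longrightarrow> h (shr p) = h (shr q)"
    and pq: "(p, q) \<in> sb (dmult a b)"
  shows "h p = h q"
proof -
  have "(p, q) \<in> (GG a b)\<^sup>*" using pq DM(2)[OF a b] by (auto simp: EE_def)
  then show ?thesis
  proof (induction rule: rtrancl_induct)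
    case base then show ?case by simp
  next
    case (step y z)
    have "h y = h z" using step(2) L R unfolding GG_def by auto
    then show ?case using step(3) by simp
  qed
qed

lemma PATH:
  assumes a: "a \<in> dual_sym n" and b: "b \<in> dual_sym n"
    and "p \<in> pts n" "q \<in> pts n" "(p, q) \<in> (GG a b)\<^sup>*"
  shows "(p, q) \<in> sb (dmult a b)"
  using assms DM(2)[OF a b] by (auto simp: EE_def)

lemma GG_L': "(p, q) \<in> sb a \<Longrightarrow> (shl p, shl q) \<in> (GG a b)\<^sup>*"
  using GG_L by blast
lemma GG_R': "(p, q) \<in> sb b \<Longrightarrow> (shr p, shr q) \<in> (GG a b)\<^sup>*"
  using GG_R by blast

subsection \<open>Associativity\<close>

definition rmap :: "('a \<Rightarrow> 'b) \<Rightarrow> ('a \<times> 'a) set \<Rightarrow> ('b \<times> 'b) set" where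
  "rmap g R = (\<lambda>(p, q). (g p, g q)) ` R"

lemma rmap_mem: "(p, q) \<in> R \<Longrightarrow> (g p, g q) \<in> rmap g R"
  by (force simp: rmap_def)

lemma rtrancl_map_inj:
  assumes "inj g"
  shows "(g p, g q) \<in> (rmap g R)\<^sup>* \<longleftrightarrow> (p, q) \<in> R\<^sup>*"
proof
  assume "(p, q) \<in> R\<^sup>*"
  then show "(g p, g q) \<in> (rmap g R)\<^sup>*"
    by (induction rule: rtrancl_induct) (auto intro: rtrancl_into_rtrancl rmap_mem)
next
  have "(u, v) \<in> (rmap g R)\<^sup>* \<Longrightarrow> u = g p \<Longrightarrow> \<exists>q. v = g q \<and> (p, q) \<in> R\<^sup>*" for u v
  proof (induction rule: rtrancl_induct)
    case base then show ?case by auto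
  next
    case (step y z)
    then obtain q where q: "y = g q" "(p, q) \<in> R\<^sup>*" by auto
    from step(2) obtain r s where rs: "(r, s) \<in> R" "y = g r" "z = g s" by (auto simp: rmap_def)
    then have "r = q" using q assms by (auto dest: injD)
    then show ?case using rs q by (auto intro: rtrancl_into_rtrancl)
  qed
  moreover assume "(g p, g q) \<in> (rmap g R)\<^sup>*"
  ultimately show "(p, q) \<in> R\<^sup>*" using assms by (auto dest: injD)
qed

lemma rmap_cong: "(\<And>p q. (p, q) \<in> R \<Longrightarrow> g p = g' p \<and> g q = g' q) \<Longrightarrow> rmap g R = rmap g' R"
  unfolding rmap_def by (force simp: image_iff)

lemma rmap_Un: "rmap g (A \<union> B) = rmap g A \<union> rmap g B"
  by (auto simp: rmap_def)

lemma rmap_comp: "rmap g (rmap f R) = rmap (g \<circ> f) R"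
  by (force simp: rmap_def image_iff)

lemma rmap_restr:
  assumes "inj g"
  shows "rmap g {(p, q). p \<in> A \<and> q \<in> A \<and> (p, q) \<in> G\<^sup>*}
       = {(u, v). u \<in> g ` A \<and> v \<in> g ` A \<and> (u, v) \<in> (rmap g G)\<^sup>*}"
  using rtrancl_map_inj[OF assms] by (force simp: rmap_def)

lemma rtr_field: "(x, y) \<in> G\<^sup>* \<Longrightarrow> G \<subseteq> V \<times> V \<Longrightarrow> x = y \<or> y \<in> V"
  by (induction rule: rtrancl_induct) auto

lemma glue:
  assumes G: "G \<subseteq> V1 \<times> V1" and H: "H \<subseteq> V2 \<times> V2" and W: "V1 \<inter> V2 \<subseteq> W"
    and x: "x \<notin> V1 - W" and y: "y \<notin> V1 - W" and xy: "(x, y) \<in> (G \<union> H)\<^sup>*"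
  shows "(x, y) \<in> ({(u, v). (u, v) \<in> G\<^sup>* \<and> u \<in> W \<and> v \<in> W} \<union> H)\<^sup>*"
proof -
  define K where "K = {(u, v). (u, v) \<in> G\<^sup>* \<and> u \<in> W \<and> v \<in> W} \<union> H"
  have close: "(x, z) \<in> K\<^sup>*" if w: "(x, w) \<in> K\<^sup>*" "w \<in> W" "(w, z) \<in> G\<^sup>*" and z: "z \<notin> V1 - W" for w z
  proof -
    from rtr_field[OF w(3) G] show ?thesis
    proof
      assume "w = z" then show ?thesis using w(1) by simp
    next
      assume "z \<in> V1"
      then have "z \<in> W" using z by blast
      then have "(w, z) \<in> K" using w(2,3) unfolding K_def by blast
      with w(1) show ?thesis by (rule rtrancl_into_rtrancl)
    qed
  qed
  have inv: "(\<exists>w. (x, w) \<in> K\<^sup>* \<and> w \<in> W \<and> (w, z) \<in> G\<^sup>*) \<or> ((x, z) \<in> K\<^sup>* \<and> z \<notin> V1 - W)"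
    if "(x, z) \<in> (G \<union> H)\<^sup>*" for z
    using that
  proof (induction rule: rtrancl_induct)
    case base then show ?case using x by blast
  next
    case (step y z)
    from step(2) show ?case
    proof
      assume yz: "(y, z) \<in> G"
      then have yV: "y \<in> V1" using G by blast
      from step(3) show ?case
      proof
        assume "\<exists>w. (x, w) \<in> K\<^sup>* \<and> w \<in> W \<and> (w, y) \<in> G\<^sup>*"
        then obtain w where "(x, w) \<in> K\<^sup>*" "w \<in> W" "(w, y) \<in> G\<^sup>*" by blast
        then have "(w, z) \<in> G\<^sup>*" using yz by (meson rtrancl.rtrancl_into_rtrancl)
        then show ?case using \<open>(x, w) \<in> K\<^sup>*\<close> \<open>w \<in> W\<close> by blast
      next
        assume a: "(x, y) \<in> K\<^sup>* \<and> y \<notin> V1 - W"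
        then have "y \<in> W" using yV by blast
        moreover have "(y, z) \<in> G\<^sup>*" using yz by blast
        ultimately show ?case using a by blast
      qed
    next
      assume yz: "(y, z) \<in> H"
      then have yV: "y \<in> V2" "z \<in> V2" using H by blast+
      have zW: "z \<notin> V1 - W" using yV W by blast
      have yW: "y \<notin> V1 - W" using yV W by blast
      have "(x, y) \<in> K\<^sup>*"
        using step(3)
      proof
        assume "\<exists>w. (x, w) \<in> K\<^sup>* \<and> w \<in> W \<and> (w, y) \<in> G\<^sup>*"
        then obtain w where w: "(x, w) \<in> K\<^sup>*" "w \<in> W" "(w, y) \<in> G\<^sup>*" by blast
        show ?thesis by (rule close[OF w yW])
      next
        assume "(x, y) \<in> K\<^sup>* \<and> y \<notin> V1 - W"
        then show ?thesis by blast
      qed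
      moreover have "(y, z) \<in> K" using yz unfolding K_def by blast
      ultimately have "(x, z) \<in> K\<^sup>*" by (rule rtrancl_into_rtrancl)
      then show ?case using zW by blast
    qed
  qed
  from inv[OF xy] have "(x, y) \<in> K\<^sup>*"
  proof
    assume "\<exists>w. (x, w) \<in> K\<^sup>* \<and> w \<in> W \<and> (w, y) \<in> G\<^sup>*"
    then obtain w where w: "(x, w) \<in> K\<^sup>*" "w \<in> W" "(w, y) \<in> G\<^sup>*" by blast
    show ?thesis by (rule close[OF w y])
  qed blast
  then show ?thesis unfolding K_def .
qed

lemma glue_conv:
  assumes "(x, y) \<in> ({(u, v). (u, v) \<in> G\<^sup>* \<and> u \<in> W \<and> v \<in> W} \<union> H)\<^sup>*"
  shows "(x, y) \<in> (G \<union> H)\<^sup>*"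
proof -
  have g: "G\<^sup>* \<subseteq> (G \<union> H)\<^sup>*" by (rule rtrancl_mono) blast
  have "{(u, v). (u, v) \<in> G\<^sup>* \<and> u \<in> W \<and> v \<in> W} \<union> H \<subseteq> (G \<union> H)\<^sup>*"
  proof (rule Un_least)
    show "{(u, v). (u, v) \<in> G\<^sup>* \<and> u \<in> W \<and> v \<in> W} \<subseteq> (G \<union> H)\<^sup>*" using g by blast
    show "H \<subseteq> (G \<union> H)\<^sup>*" by blast
  qed
  then have "({(u, v). (u, v) \<in> G\<^sup>* \<and> u \<in> W \<and> v \<in> W} \<union> H)\<^sup>* \<subseteq> ((G \<union> H)\<^sup>*)\<^sup>*"
    by (rule rtrancl_mono)
  then show ?thesis using assms by (simp add: subset_iff)
qed

definition tmap :: "(nat \<Rightarrow> nat) \<Rightarrow> pt \<Rightarrow> pt" where "tmap f = (\<lambda>(t, i). (f t, i))"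

lemma inj_tmap: "inj f \<Longrightarrow> inj (tmap f)"
  by (auto simp: tmap_def inj_def)

definition s23 :: "pt \<Rightarrow> pt" where "s23 = (\<lambda>(t, i). (if t = 0 then 2 else 3, i))"
definition s31 :: "pt \<Rightarrow> pt" where "s31 = (\<lambda>(t, i). (if t = 0 then 3 else t, i))"
definition s03 :: "pt \<Rightarrow> pt" where "s03 = (\<lambda>(t, i). (if t = 0 then 0 else 3, i))"

definition FF :: "dpart \<Rightarrow> dpart \<Rightarrow> dpart \<Rightarrow> (pt \<times> pt) set" where
  "FF a b c = rmap shl (sb a) \<union> rmap s23 (sb b) \<union> rmap s31 (sb c)"

lemma GG_rmap: "GG a b = rmap shl (sb a) \<union> rmap shr (sb b)"
  by (simp add: GG_def rmap_def)

definition sw :: "nat \<Rightarrow> nat \<Rightarrow> nat \<Rightarrow> nat" where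
  "sw x y t = (if t = x then y else if t = y then x else t)"

lemma inj_sw: "inj (sw x y)"
  by (auto simp: inj_def sw_def)

definition cyc :: "nat \<Rightarrow> nat" where
  "cyc t = (if t = 0 then 2 else if t = 2 then 3 else if t = 3 then 0 else t)"

lemma inj_cyc: "inj cyc"
  by (auto simp: inj_def cyc_def)

lemma pts_cases: "p \<in> pts n \<Longrightarrow> (\<exists>i. p = (0, i)) \<or> (\<exists>i. p = (1, i))"
  by (auto simp: pts_def)

lemma pt_eqs:
  assumes "p \<in> pts n"
  shows "tmap (sw 2 3) (shl p) = s03 p" "tmap (sw 2 3) (shr p) = s31 p" "tmap (sw 1 3) p = s03 p"
    "tmap (sw 1 3) (shl p) = shl p" "tmap (sw 1 3) (shr p) = s23 p" "tmap cyc (shl p) = s23 p"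
    "tmap cyc (shr p) = s31 p" "tmap cyc p = shr p" "tmap (sw 2 3) p = p"
proof -
  obtain t i where p: "p = (t, i)" and t: "t = 0 \<or> t = 1" using assms by (auto simp: pts_def)
  show "tmap (sw 2 3) (shl p) = s03 p" using t unfolding p by (auto simp: tmap_def sw_def s03_def)
  show "tmap (sw 2 3) (shr p) = s31 p" using t unfolding p by (auto simp: tmap_def sw_def s31_def)
  show "tmap (sw 1 3) p = s03 p" using t unfolding p by (auto simp: tmap_def sw_def s03_def)
  show "tmap (sw 1 3) (shl p) = shl p" using t unfolding p by (auto simp: tmap_def sw_def)
  show "tmap (sw 1 3) (shr p) = s23 p" using t unfolding p by (auto simp: tmap_def sw_def s23_def)
  show "tmap cyc (shl p) = s23 p" using t unfolding p by (auto simp: tmap_def cyc_def s23_def)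
  show "tmap cyc (shr p) = s31 p" using t unfolding p by (auto simp: tmap_def cyc_def s31_def)
  show "tmap cyc p = shr p" using t unfolding p by (auto simp: tmap_def cyc_def)
  show "tmap (sw 2 3) p = p" using t unfolding p by (auto simp: tmap_def sw_def)
qed

lemma rmap_cong_pts:
  assumes "R \<subseteq> pts n \<times> pts n" "\<And>p. p \<in> pts n \<Longrightarrow> g p = g' p"
  shows "rmap g R = rmap g' R"
proof (rule rmap_cong)
  fix p q assume "(p, q) \<in> R"
  then have "p \<in> pts n" "q \<in> pts n" using assms(1) by auto
  then show "g p = g' p \<and> g q = g' q" using assms(2) by simp
qed

lemma sb_sub: "a \<in> dual_sym n \<Longrightarrow> sb a \<subseteq> pts n \<times> pts n"
  using sb_pts by (metis mem_Sigma_iff subrelI)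

lemma rmap_sub:
  assumes "R \<subseteq> pts n \<times> pts n" "\<And>p. p \<in> pts n \<Longrightarrow> g p \<in> V"
  shows "rmap g R \<subseteq> V \<times> V"
proof
  fix x assume "x \<in> rmap g R"
  then obtain p q where pq: "(p, q) \<in> R" "x = (g p, g q)" by (auto simp: rmap_def)
  then have "p \<in> pts n" "q \<in> pts n" using assms(1) by auto
  then show "x \<in> V \<times> V" using assms(2) pq(2) by simp
qed

lemma tags_in:
  assumes "p \<in> pts n"
  shows "shl p \<in> {p. fst p \<in> {0, 2, 3} \<and> snd p \<in> NN n}" "s23 p \<in> {p. fst p \<in> {0, 2, 3} \<and> snd p \<in> NN n}"
    "s31 p \<in> {p. fst p \<in> {3, 1} \<and> snd p \<in> NN n}"
    "s23 p \<in> {p. fst p \<in> {2, 3, 1} \<and> snd p \<in> NN n}" "s31 p \<in> {p. fst p \<in> {2, 3, 1} \<and> snd p \<in> NN n}"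
    "shl p \<in> {p. fst p \<in> {0, 2} \<and> snd p \<in> NN n}"
proof -
  obtain t i where p: "p = (t, i)" and t: "t = 0 \<or> t = 1" and i: "i \<in> NN n" using assms by (auto simp: pts_def)
  show "shl p \<in> {p. fst p \<in> {0, 2, 3} \<and> snd p \<in> NN n}" using t i unfolding p by (auto simp: shl_def)
  show "s23 p \<in> {p. fst p \<in> {0, 2, 3} \<and> snd p \<in> NN n}" using t i unfolding p by (auto simp: s23_def)
  show "s31 p \<in> {p. fst p \<in> {3, 1} \<and> snd p \<in> NN n}" using t i unfolding p by (auto simp: s31_def)
  show "s23 p \<in> {p. fst p \<in> {2, 3, 1} \<and> snd p \<in> NN n}" using t i unfolding p by (auto simp: s23_def)
  show "s31 p \<in> {p. fst p \<in> {2, 3, 1} \<and> snd p \<in> NN n}" using t i unfolding p by (auto simp: s31_def)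
  show "shl p \<in> {p. fst p \<in> {0, 2} \<and> snd p \<in> NN n}" using t i unfolding p by (auto simp: shl_def)
qed

lemma img_c1: "tmap (sw 1 3) ` pts n = {p. (fst p = 0 \<or> fst p = 3) \<and> snd p \<in> NN n}"
proof (intro equalityI subsetI)
  fix x assume "x \<in> tmap (sw 1 3) ` pts n"
  then obtain p where "p \<in> pts n" "x = tmap (sw 1 3) p" by blast
  then show "x \<in> {p. (fst p = 0 \<or> fst p = 3) \<and> snd p \<in> NN n}"
    using pts_cases[of p n] by (auto simp: tmap_def sw_def pts_def)
next
  fix x :: pt assume x: "x \<in> {p. (fst p = 0 \<or> fst p = 3) \<and> snd p \<in> NN n}"
  obtain t i where ti: "x = (t, i)" by force
  show "x \<in> tmap (sw 1 3) ` pts n"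
  proof (cases "t = 0")
    case True
    then have "x = tmap (sw 1 3) (0, i)" "(0, i) \<in> pts n" using ti x by (auto simp: tmap_def sw_def pts_def)
    then show ?thesis by blast
  next
    case False
    then have "x = tmap (sw 1 3) (1, i)" "(1, i) \<in> pts n" using ti x by (auto simp: tmap_def sw_def pts_def)
    then show ?thesis by blast
  qed
qed

lemma img_c3: "tmap cyc ` pts n = {p. (fst p = 2 \<or> fst p = 1) \<and> snd p \<in> NN n}"
proof (intro equalityI subsetI)
  fix x assume "x \<in> tmap cyc ` pts n"
  then obtain p where "p \<in> pts n" "x = tmap cyc p" by blast
  then show "x \<in> {p. (fst p = 2 \<or> fst p = 1) \<and> snd p \<in> NN n}"
    using pts_cases[of p n] by (auto simp: tmap_def cyc_def pts_def)
next
  fix x :: pt assume x: "x \<in> {p. (fst p = 2 \<or> fst p = 1) \<and> snd p \<in> NN n}"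
  obtain t i where ti: "x = (t, i)" by force
  show "x \<in> tmap cyc ` pts n"
  proof (cases "t = 2")
    case True
    then have "x = tmap cyc (0, i)" "(0, i) \<in> pts n" using ti x by (auto simp: tmap_def cyc_def pts_def)
    then show ?thesis by blast
  next
    case False
    then have "x = tmap cyc (1, i)" "(1, i) \<in> pts n" using ti x by (auto simp: tmap_def cyc_def pts_def)
    then show ?thesis by blast
  qed
qed

lemma assoc_left:
  assumes a: "a \<in> dual_sym n" and b: "b \<in> dual_sym n" and c: "c \<in> dual_sym n"
  shows "sb (dmult (dmult a b) c) = {(p, q). p \<in> pts n \<and> q \<in> pts n \<and> (p, q) \<in> (FF a b c)\<^sup>*}"
proof -
  have ab: "dmult a b \<in> dual_sym n" using DM[OF a b] by simp
  let ?c2 = "tmap (sw 2 3)" and ?c1 = "tmap (sw 1 3)"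
  have i2: "inj ?c2" and i1: "inj ?c1" by (auto intro: inj_tmap inj_sw)
  have fix2: "?c2 p = p" if "p \<in> pts n" for p using that by (auto simp: pts_def tmap_def sw_def)
  have e1: "rmap ?c2 (GG (dmult a b) c) = rmap s03 (sb (dmult a b)) \<union> rmap s31 (sb c)"
    unfolding GG_rmap rmap_Un rmap_comp
    by (intro arg_cong2[where f="(\<union>)"] rmap_cong_pts[OF sb_sub[OF ab]] rmap_cong_pts[OF sb_sub[OF c]])
       (auto simp: pt_eqs pt_eqs[simplified])
  have e2: "rmap s03 (sb (dmult a b)) = rmap ?c1 (sb (dmult a b))"
    by (rule rmap_cong_pts[OF sb_sub[OF ab]]) (auto simp: pt_eqs pt_eqs[simplified])
  have e3: "rmap ?c1 (GG a b) = rmap shl (sb a) \<union> rmap s23 (sb b)"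
    unfolding GG_rmap rmap_Un rmap_comp
    by (intro arg_cong2[where f="(\<union>)"] rmap_cong_pts[OF sb_sub[OF a]] rmap_cong_pts[OF sb_sub[OF b]])
       (auto simp: pt_eqs pt_eqs[simplified])
  define W where "W = ?c1 ` pts n"
  have W: "W = {p. (fst p = 0 \<or> fst p = 3) \<and> snd p \<in> NN n}"
    unfolding W_def by (rule img_c1)
  let ?G1 = "rmap shl (sb a) \<union> rmap s23 (sb b)"
  let ?H = "rmap s31 (sb c)"
  have e4: "rmap s03 (sb (dmult a b)) = {(u, v). (u, v) \<in> ?G1\<^sup>* \<and> u \<in> W \<and> v \<in> W}"
  proof -
    have "rmap s03 (sb (dmult a b)) = rmap ?c1 (EE n a b)" using e2 DM(2)[OF a b] by simp
    also have "\<dots> = {(u, v). u \<in> W \<and> v \<in> W \<and> (u, v) \<in> (rmap ?c1 (GG a b))\<^sup>*}"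
      unfolding EE_def rmap_restr[OF i1] W_def ..
    also have "\<dots> = {(u, v). (u, v) \<in> ?G1\<^sup>* \<and> u \<in> W \<and> v \<in> W}" unfolding e3 by blast
    finally show ?thesis .
  qed
  let ?V1 = "{p. fst p \<in> {0, 2, 3} \<and> snd p \<in> NN n}" and ?V2 = "{p. fst p \<in> {3, 1} \<and> snd p \<in> NN n}"
  have G1: "?G1 \<subseteq> ?V1 \<times> ?V1"
    by (intro Un_least rmap_sub[OF sb_sub[OF a]] rmap_sub[OF sb_sub[OF b]] tags_in)
  have H: "?H \<subseteq> ?V2 \<times> ?V2"
    by (intro rmap_sub[OF sb_sub[OF c]] tags_in)
  have VW: "?V1 \<inter> ?V2 \<subseteq> W"
    unfolding W by force
  have out: "p \<notin> ?V1 - W" if "p \<in> pts n" for p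
    using that pts_cases[OF that] unfolding W by (auto simp: pts_def)
  show ?thesis
  proof (intro equalityI subsetI; clarify)
    fix p q assume pq: "(p, q) \<in> sb (dmult (dmult a b) c)"
    then have pq': "p \<in> pts n" "q \<in> pts n" "(p, q) \<in> (GG (dmult a b) c)\<^sup>*"
      using DM(2)[OF ab c] by (auto simp: EE_def)
    then have "(?c2 p, ?c2 q) \<in> (rmap ?c2 (GG (dmult a b) c))\<^sup>*"
      using rtrancl_map_inj[OF i2] by blast
    then have "(p, q) \<in> ({(u, v). (u, v) \<in> ?G1\<^sup>* \<and> u \<in> W \<and> v \<in> W} \<union> ?H)\<^sup>*"
      unfolding e1 e4 fix2[OF pq'(1)] fix2[OF pq'(2)] .
    then have "(p, q) \<in> (?G1 \<union> ?H)\<^sup>*" by (rule glue_conv)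
    then show "p \<in> pts n \<and> q \<in> pts n \<and> (p, q) \<in> (FF a b c)\<^sup>*"
      using pq' by (simp add: FF_def)
  next
    fix p q assume pq: "p \<in> pts n" "q \<in> pts n" "(p, q) \<in> (FF a b c)\<^sup>*"
    then have "(p, q) \<in> ({(u, v). (u, v) \<in> ?G1\<^sup>* \<and> u \<in> W \<and> v \<in> W} \<union> ?H)\<^sup>*"
      using glue[OF G1 H VW out[OF pq(1)] out[OF pq(2)]] by (simp add: FF_def)
    then have "(?c2 p, ?c2 q) \<in> (rmap ?c2 (GG (dmult a b) c))\<^sup>*"
      unfolding e1 e4 fix2[OF pq(1)] fix2[OF pq(2)] .
    then have "(p, q) \<in> (GG (dmult a b) c)\<^sup>*"
      using rtrancl_map_inj[OF i2] by blast
    then show "(p, q) \<in> sb (dmult (dmult a b) c)"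
      using pq DM(2)[OF ab c] by (auto simp: EE_def)
  qed
qed

lemma assoc_right:
  assumes a: "a \<in> dual_sym n" and b: "b \<in> dual_sym n" and c: "c \<in> dual_sym n"
  shows "sb (dmult a (dmult b c)) = {(p, q). p \<in> pts n \<and> q \<in> pts n \<and> (p, q) \<in> (FF a b c)\<^sup>*}"
proof -
  have bc: "dmult b c \<in> dual_sym n" using DM[OF b c] by simp
  let ?c3 = "tmap cyc"
  have i3: "inj ?c3" by (auto intro: inj_tmap inj_cyc)
  have e2: "rmap shr (sb (dmult b c)) = rmap ?c3 (sb (dmult b c))"
    by (rule rmap_cong_pts[OF sb_sub[OF bc]]) (auto simp: pt_eqs pt_eqs[simplified])
  have e3: "rmap ?c3 (GG b c) = rmap s23 (sb b) \<union> rmap s31 (sb c)"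
    unfolding GG_rmap rmap_Un rmap_comp
    by (intro arg_cong2[where f="(\<union>)"] rmap_cong_pts[OF sb_sub[OF b]] rmap_cong_pts[OF sb_sub[OF c]])
       (auto simp: pt_eqs pt_eqs[simplified])
  define W where "W = ?c3 ` pts n"
  have W: "W = {p. (fst p = 2 \<or> fst p = 1) \<and> snd p \<in> NN n}"
    unfolding W_def by (rule img_c3)
  let ?G1 = "rmap s23 (sb b) \<union> rmap s31 (sb c)"
  let ?H = "rmap shl (sb a)"
  have e4: "rmap shr (sb (dmult b c)) = {(u, v). (u, v) \<in> ?G1\<^sup>* \<and> u \<in> W \<and> v \<in> W}"
  proof -
    have "rmap shr (sb (dmult b c)) = rmap ?c3 (EE n b c)" using e2 DM(2)[OF b c] by simp
    also have "\<dots> = {(u, v). u \<in> W \<and> v \<in> W \<and> (u, v) \<in> (rmap ?c3 (GG b c))\<^sup>*}"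
      unfolding EE_def rmap_restr[OF i3] W_def ..
    also have "\<dots> = {(u, v). (u, v) \<in> ?G1\<^sup>* \<and> u \<in> W \<and> v \<in> W}" unfolding e3 by blast
    finally show ?thesis .
  qed
  let ?V1 = "{p. fst p \<in> {2, 3, 1} \<and> snd p \<in> NN n}" and ?V2 = "{p. fst p \<in> {0, 2} \<and> snd p \<in> NN n}"
  have G1: "?G1 \<subseteq> ?V1 \<times> ?V1"
    by (intro Un_least rmap_sub[OF sb_sub[OF b]] rmap_sub[OF sb_sub[OF c]] tags_in)
  have H: "?H \<subseteq> ?V2 \<times> ?V2"
    by (intro rmap_sub[OF sb_sub[OF a]] tags_in)
  have VW: "?V1 \<inter> ?V2 \<subseteq> W"
    unfolding W by force
  have out: "p \<notin> ?V1 - W" if "p \<in> pts n" for p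
    using that pts_cases[OF that] unfolding W by (auto simp: pts_def)
  have GG: "GG a (dmult b c) = ?H \<union> rmap shr (sb (dmult b c))" by (simp add: GG_rmap)
  have FF: "FF a b c = ?G1 \<union> ?H" by (auto simp: FF_def)
  show ?thesis
  proof (intro equalityI subsetI; clarify)
    fix p q assume pq: "(p, q) \<in> sb (dmult a (dmult b c))"
    then have pq': "p \<in> pts n" "q \<in> pts n" "(p, q) \<in> (GG a (dmult b c))\<^sup>*"
      using DM(2)[OF a bc] by (auto simp: EE_def)
    then have "(p, q) \<in> ({(u, v). (u, v) \<in> ?G1\<^sup>* \<and> u \<in> W \<and> v \<in> W} \<union> ?H)\<^sup>*"
      unfolding GG e4 by (simp add: Un_commute)
    then have "(p, q) \<in> (?G1 \<union> ?H)\<^sup>*" by (rule glue_conv)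
    then show "p \<in> pts n \<and> q \<in> pts n \<and> (p, q) \<in> (FF a b c)\<^sup>*"
      using pq' by (simp add: FF)
  next
    fix p q assume pq: "p \<in> pts n" "q \<in> pts n" "(p, q) \<in> (FF a b c)\<^sup>*"
    then have "(p, q) \<in> ({(u, v). (u, v) \<in> ?G1\<^sup>* \<and> u \<in> W \<and> v \<in> W} \<union> ?H)\<^sup>*"
      using glue[OF G1 H VW out[OF pq(1)] out[OF pq(2)]] by (simp add: FF)
    then have "(p, q) \<in> (GG a (dmult b c))\<^sup>*"
      unfolding GG e4 by (simp add: Un_commute)
    then show "(p, q) \<in> sb (dmult a (dmult b c))"
      using pq DM(2)[OF a bc] by (auto simp: EE_def)
  qed
qed

lemma assoc:
  assumes a: "a \<in> dual_sym n" and b: "b \<in> dual_sym n" and c: "c \<in> dual_sym n"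
  shows "dmult (dmult a b) c = dmult a (dmult b c)"
proof (rule D_ext)
  show "dmult (dmult a b) c \<in> dual_sym n" using DM[OF DM(1)[OF a b] c] by simp
  show "dmult a (dmult b c) \<in> dual_sym n" using DM[OF a DM(1)[OF b c]] by simp
  show "sb (dmult (dmult a b) c) = sb (dmult a (dmult b c))"
    using assoc_left[OF a b c] assoc_right[OF a b c] by simp
qed



abbreviation DS where "DS \<equiv> dual_sym"

lemma dmult_in: "a \<in> DS n \<Longrightarrow> b \<in> DS n \<Longrightarrow> dmult a b \<in> DS n"
  by (rule DM(1))

lemma dpow_1[simp]: "dpow a 1 = a" "dpow a (Suc 0) = a"
  by (simp_all add: dpow_def)

lemma dpow_Suc: "1 \<le> k \<Longrightarrow> dpow a (Suc k) = dmult (dpow a k) a"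
  unfolding dpow_def by (cases k) auto

lemma dpow_in: "a \<in> DS n \<Longrightarrow> 1 \<le> k \<Longrightarrow> dpow a k \<in> DS n"
proof (induction k)
  case 0 then show ?case by simp
next
  case (Suc k)
  then show ?case by (cases "k = 0") (auto simp: dpow_Suc dmult_in)
qed

lemma dpow_add: "a \<in> DS n \<Longrightarrow> 1 \<le> i \<Longrightarrow> 1 \<le> j \<Longrightarrow> dpow a (i + j) = dmult (dpow a i) (dpow a j)"
proof (induction j)
  case 0 then show ?case by simp
next
  case (Suc j)
  show ?case
  proof (cases "j = 0")
    case True then show ?thesis using Suc by (simp add: dpow_Suc)
  next
    case False
    then have "dpow a (i + Suc j) = dmult (dpow a (i + j)) a" using Suc by (simp add: dpow_Suc)
    also have "\<dots> = dmult (dmult (dpow a i) (dpow a j)) a" using Suc False by simp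
    also have "\<dots> = dmult (dpow a i) (dmult (dpow a j) a)"
    proof -
      have "dpow a i \<in> DS n" "dpow a j \<in> DS n" using Suc False dpow_in by auto
      then show ?thesis using assoc Suc(2) by blast
    qed
    also have "\<dots> = dmult (dpow a i) (dpow a (Suc j))" using False by (simp add: dpow_Suc)
    finally show ?thesis .
  qed
qed

lemma dpow_Suc_left: "a \<in> DS n \<Longrightarrow> 1 \<le> k \<Longrightarrow> dpow a (Suc k) = dmult a (dpow a k)"
  using dpow_add[of a n 1 k] by simp

lemma dpow_2: "dpow a 2 = dmult a a"
  using dpow_Suc[of 1 a] by (simp add: numeral_2_eq_2)

lemma finite_DS: "finite (DS n)"
proof -
  have "DS n \<subseteq> Pow (Pow (pts n))"
    unfolding dual_sym_def partition_on_def by auto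
  moreover have "finite (pts n)" by (simp add: pts_def)
  ultimately show ?thesis by (meson finite_Pow_iff finite_subset)
qed

lemma pow_repeat:
  assumes a: "a \<in> DS n"
  shows "\<exists>i j. 1 \<le> i \<and> i < j \<and> dpow a i = dpow a j"
proof -
  let ?M = "card (DS n)"
  have sub: "(dpow a) ` {1..?M + 1} \<subseteq> DS n" using dpow_in[OF a] by auto
  have "card ((dpow a) ` {1..?M + 1}) \<le> ?M" using card_mono[OF finite_DS sub] .
  then have "\<not> inj_on (dpow a) {1..?M + 1}"
    using card_image by fastforce
  then obtain i j where ij: "i \<in> {1..?M+1}" "j \<in> {1..?M+1}" "i \<noteq> j" "dpow a i = dpow a j"
    unfolding inj_on_def by blast
  show ?thesis
  proof (cases "i < j")
    case True then show ?thesis using ij by auto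
  next
    case False then show ?thesis using ij by (intro exI[of _ j] exI[of _ i]) auto
  qed
qed

definition idem :: "dpart \<Rightarrow> bool" where "idem e \<longleftrightarrow> dmult e e = e"

lemma idempotent_idem: "idempotent e = idem e"
  by (simp add: idempotent_def idem_def)

lemma idem_pow:
  assumes a: "a \<in> DS n"
  shows "\<exists>m\<ge>2. idem (dpow a m)"
proof -
  obtain i j where ij: "1 \<le> i" "i < j" "dpow a i = dpow a j" using pow_repeat[OF a] by blast
  define p where "p = j - i"
  have p: "p \<ge> 1" "j = i + p" using ij unfolding p_def by auto
  have per: "dpow a s = dpow a (s + p)" if "s \<ge> i" for s
  proof (cases "s = i")
    case True then show ?thesis using ij p by simp
  next
    case False
    then have s: "s = i + (s - i)" "s - i \<ge> 1" using that by auto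
    have "dpow a s = dmult (dpow a i) (dpow a (s - i))" using dpow_add[OF a ij(1) s(2)] s(1) by simp
    also have "\<dots> = dmult (dpow a j) (dpow a (s - i))" using ij by simp
    also have "\<dots> = dpow a (j + (s - i))" using dpow_add[OF a _ s(2), of j] ij by simp
    finally show ?thesis using p s by (simp add: algebra_simps)
  qed
  have perk: "dpow a s = dpow a (s + k * p)" if "s \<ge> i" for s k
  proof (induction k)
    case 0 then show ?case by simp
  next
    case (Suc k)
    have "dpow a (s + Suc k * p) = dpow a ((s + k * p) + p)" by (simp add: algebra_simps)
    also have "\<dots> = dpow a (s + k * p)" using per[of "s + k * p"] that by simp
    finally show ?case using Suc by simp
  qed
  define m where "m = 2 * i * p"
  have m: "m \<ge> i" "m \<ge> 2" using p ij unfolding m_def by (auto simp: algebra_simps)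
  have "dmult (dpow a m) (dpow a m) = dpow a (m + m)" using dpow_add[OF a, of m m] m by simp
  also have "\<dots> = dpow a (m + (2 * i) * p)" unfolding m_def by (simp add: algebra_simps)
  also have "\<dots> = dpow a m" using perk[OF m(1)] by simp
  finally show ?thesis using m by (auto simp: idem_def)
qed

subsection \<open>Kernel and cokernel\<close>

definition kr :: "dpart \<Rightarrow> (nat \<times> nat) set" where "kr a = {(i, j). ((0, i), (0, j)) \<in> sb a}"
definition ck :: "dpart \<Rightarrow> (nat \<times> nat) set" where "ck a = {(i, j). ((1, i), (1, j)) \<in> sb a}"

lemma kr_equiv: "a \<in> DS n \<Longrightarrow> equiv (NN n) (kr a)"
proof (rule equivI)
  assume a: "a \<in> DS n"
  show "kr a \<subseteq> NN n \<times> NN n"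
  proof
    fix x assume "x \<in> kr a"
    then obtain i j where "x = (i, j)" "((0, i), (0, j)) \<in> sb a" by (auto simp: kr_def)
    then show "x \<in> NN n \<times> NN n" using sb_pts[OF a] by (auto simp: pts_def)
  qed
  show "refl_on (NN n) (kr a)" unfolding refl_on_def kr_def using sb_refl[OF a] by (auto simp: pts_def)
  show "sym (kr a)" unfolding sym_def kr_def using sb_sym by auto
  show "trans (kr a)" unfolding trans_def kr_def using sb_trans[OF a] by blast
qed

lemma ck_equiv: "a \<in> DS n \<Longrightarrow> equiv (NN n) (ck a)"
proof (rule equivI)
  assume a: "a \<in> DS n"
  show "ck a \<subseteq> NN n \<times> NN n"
  proof
    fix x assume "x \<in> ck a"
    then obtain i j where "x = (i, j)" "((1, i), (1, j)) \<in> sb a" by (auto simp: ck_def)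
    then show "x \<in> NN n \<times> NN n" using sb_pts[OF a] by (auto simp: pts_def)
  qed
  show "refl_on (NN n) (ck a)" unfolding refl_on_def ck_def using sb_refl[OF a] by (auto simp: pts_def)
  show "sym (ck a)" unfolding sym_def ck_def using sb_sym by auto
  show "trans (ck a)" unfolding trans_def ck_def using sb_trans[OF a] by blast
qed

lemma kr_mono: "a \<in> DS n \<Longrightarrow> b \<in> DS n \<Longrightarrow> kr a \<subseteq> kr (dmult a b)"
proof
  fix x assume a: "a \<in> DS n" and b: "b \<in> DS n" and x: "x \<in> kr a"
  then obtain i j where ij: "x = (i, j)" "((0, i), (0, j)) \<in> sb a" by (auto simp: kr_def)
  then have "((0, i), (0, j)) \<in> (GG a b)\<^sup>*" using GG_L'[OF ij(2)] by simp
  then show "x \<in> kr (dmult a b)" using PATH[OF a b] sb_pts[OF a ij(2)] ij by (auto simp: kr_def)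
qed

lemma ck_mono: "a \<in> DS n \<Longrightarrow> b \<in> DS n \<Longrightarrow> ck b \<subseteq> ck (dmult a b)"
proof
  fix x assume a: "a \<in> DS n" and b: "b \<in> DS n" and x: "x \<in> ck b"
  then obtain i j where ij: "x = (i, j)" "((1, i), (1, j)) \<in> sb b" by (auto simp: ck_def)
  then have "((1, i), (1, j)) \<in> (GG a b)\<^sup>*" using GG_R'[OF ij(2)] by simp
  then show "x \<in> ck (dmult a b)" using PATH[OF a b] sb_pts[OF b ij(2)] ij by (auto simp: ck_def)
qed

definition arg :: "(nat \<Rightarrow> nat) \<Rightarrow> pt \<Rightarrow> nat" where
  "arg \<sigma> = (\<lambda>(t, i). if t = 0 then i else \<sigma> i)"

definition elt :: "nat \<Rightarrow> (nat \<times> nat) set \<Rightarrow> (nat \<Rightarrow> nat) \<Rightarrow> dpart" where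
  "elt n A \<sigma> = mkf n (\<lambda>p. A `` {arg \<sigma> p})"

definition idm :: "nat \<Rightarrow> (nat \<times> nat) set \<Rightarrow> dpart" where
  "idm n K = elt n K id"

lemma arg_simps[simp]: "arg \<sigma> (0, i) = i" "arg \<sigma> (1, i) = \<sigma> i" "arg \<sigma> (Suc 0, i) = \<sigma> i"
  by (auto simp: arg_def)

lemma arg_in: "p \<in> pts n \<Longrightarrow> \<sigma> ` NN n = NN n \<Longrightarrow> arg \<sigma> p \<in> NN n"
proof -
  assume p: "p \<in> pts n" and s: "\<sigma> ` NN n = NN n"
  obtain t i where ti: "p = (t, i)" "t = 0 \<or> t = 1" "i \<in> NN n" using p by (auto simp: pts_def)
  have "\<sigma> i \<in> NN n" using ti(3) s by blast
  then show ?thesis using ti by (auto simp: arg_def)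
qed

lemma elt_props:
  assumes A: "equiv (NN n) A" and s: "\<sigma> ` NN n = NN n"
  shows "elt n A \<sigma> \<in> DS n"
    "sb (elt n A \<sigma>) = {(p, q). p \<in> pts n \<and> q \<in> pts n \<and> (arg \<sigma> p, arg \<sigma> q) \<in> A}"
proof -
  have c1: "\<exists>j\<in>NN n. A `` {arg \<sigma> (1, j)} = A `` {arg \<sigma> (0, i)}" if "i \<in> NN n" for i
  proof -
    have "i \<in> \<sigma> ` NN n" using that s by simp
    then obtain j where "j \<in> NN n" "i = \<sigma> j" by blast
    then show ?thesis by (intro bexI[of _ j]) auto
  qed
  have c2: "\<exists>i\<in>NN n. A `` {arg \<sigma> (0, i)} = A `` {arg \<sigma> (1, j)}" if "j \<in> NN n" for j
  proof -
    have "\<sigma> j \<in> NN n" using that s by blast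
    then show ?thesis by (intro bexI[of _ "\<sigma> j"]) auto
  qed
  note m = mkf[of n "\<lambda>p. A `` {arg \<sigma> p}", OF c1 c2]
  show "elt n A \<sigma> \<in> DS n" unfolding elt_def by (rule m(1))
  show "sb (elt n A \<sigma>) = {(p, q). p \<in> pts n \<and> q \<in> pts n \<and> (arg \<sigma> p, arg \<sigma> q) \<in> A}"
  proof -
    have "A `` {arg \<sigma> p} = A `` {arg \<sigma> q} \<longleftrightarrow> (arg \<sigma> p, arg \<sigma> q) \<in> A" if "p \<in> pts n" "q \<in> pts n" for p q
      using eq_equiv_class_iff[OF A arg_in[OF that(1) s] arg_in[OF that(2) s]] .
    moreover have "sb (elt n A \<sigma>) = kerf n (\<lambda>p. A `` {arg \<sigma> p})" using m(2) unfolding elt_def .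
    ultimately show ?thesis unfolding kerf_def by blast
  qed
qed

lemma idm_props:
  assumes K: "equiv (NN n) K"
  shows "idm n K \<in> DS n"
    "sb (idm n K) = {(p, q). p \<in> pts n \<and> q \<in> pts n \<and> (snd p, snd q) \<in> K}"
proof -
  have s: "id ` NN n = NN n" by simp
  show "idm n K \<in> DS n" unfolding idm_def by (rule elt_props(1)[OF K s])
  have "arg id p = snd p" for p by (cases p) (auto simp: arg_def)
  then show "sb (idm n K) = {(p, q). p \<in> pts n \<and> q \<in> pts n \<and> (snd p, snd q) \<in> K}"
    unfolding idm_def elt_props(2)[OF K s] by simp
qed

lemma kr_idm: "equiv (NN n) K \<Longrightarrow> kr (idm n K) = K"
  unfolding kr_def idm_props(2) by (auto simp: pts_def equiv_def)

lemma ck_idm: "equiv (NN n) K \<Longrightarrow> ck (idm n K) = K"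
  unfolding ck_def idm_props(2) by (auto simp: pts_def equiv_def)

lemma kr_elt: "equiv (NN n) A \<Longrightarrow> \<sigma> ` NN n = NN n \<Longrightarrow> kr (elt n A \<sigma>) = A"
  unfolding kr_def elt_props(2) by (auto simp: pts_def equiv_def)

subsection \<open>Idempotents\<close>

lemma idem_diag:
  assumes e: "e \<in> DS n" and id: "idem e" and j: "j \<in> NN n"
  shows "((0, j), (1, j)) \<in> sb e"
proof -
  have j0: "(0, j) \<in> pts n" and j1: "(1, j) \<in> pts n" using j by (auto simp: pts_def)
  obtain i where i: "((1, j), (0, i)) \<in> sb e" using D_tag0[OF e j1] by auto
  obtain k where k: "((0, j), (1, k)) \<in> sb e" using D_tag1[OF e j0] by auto
  have "((0, i), (2, j)) \<in> (GG e e)\<^sup>*" using GG_L'[OF sb_sym[OF i], of e] by simp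
  moreover have "((2, j), (1, k)) \<in> (GG e e)\<^sup>*" using GG_R'[OF k, of e] by simp
  ultimately have "((0, i), (1, k)) \<in> (GG e e)\<^sup>*" by (rule rtrancl_trans)
  then have "((0, i), (1, k)) \<in> sb (dmult e e)"
    using PATH[OF e e] sb_pts[OF e i] sb_pts[OF e k] by auto
  then have ik: "((0, i), (1, k)) \<in> sb e" using id by (simp add: idem_def)
  show ?thesis using sb_sym[OF sb_trans[OF e sb_trans[OF e i ik] sb_sym[OF k]]] .
qed

lemma idem_is_idm:
  assumes e: "e \<in> DS n" and id: "idem e"
  shows "e = idm n (kr e)"
proof (rule D_ext[OF e idm_props(1)[OF kr_equiv[OF e]]])
  have z: "(p, (0, snd p)) \<in> sb e" if "p \<in> pts n" for p
  proof -
    from pts_cases[OF that] show ?thesis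
    proof
      assume "\<exists>i. p = (0, i)"
      then show ?thesis using sb_refl[OF e that] by auto
    next
      assume "\<exists>i. p = (1, i)"
      then obtain i where p: "p = (1, i)" by auto
      then have "i \<in> NN n" using that by (auto simp: pts_def)
      then show ?thesis using p idem_diag[OF e id] sb_sym by auto
    qed
  qed
  show "sb e = sb (idm n (kr e))"
    unfolding idm_props(2)[OF kr_equiv[OF e]]
  proof (intro equalityI subsetI; clarify)
    fix p q assume pq: "(p, q) \<in> sb e"
    have p: "p \<in> pts n" and q: "q \<in> pts n" using sb_pts[OF e pq] by auto
    have "((0, snd p), (0, snd q)) \<in> sb e"
      using sb_trans[OF e sb_trans[OF e sb_sym[OF z[OF p]] pq] z[OF q]] .
    then show "p \<in> pts n \<and> q \<in> pts n \<and> (snd p, snd q) \<in> kr e" using p q by (simp add: kr_def)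
  next
    fix p q assume "p \<in> pts n" "q \<in> pts n" "(snd p, snd q) \<in> kr e"
    then show "(p, q) \<in> sb e"
      using z sb_trans[OF e] sb_sym by (metis (no_types, lifting) case_prodD kr_def mem_Collect_eq)
  qed
qed



lemma GG_rsym: "(p, q) \<in> (GG a b)\<^sup>* \<Longrightarrow> (q, p) \<in> (GG a b)\<^sup>*"
  using sym_rtrancl[OF GG_sym] by (meson symD)

lemma equiv_class_eq': "equiv A r \<Longrightarrow> (x, y) \<in> r \<Longrightarrow> r `` {x} = r `` {y}"
  by (rule equiv_class_eq)

lemma join_equiv:
  assumes A: "equiv N A" and X: "X \<subseteq> N \<times> N" "sym X"
  shows "equiv N ((A \<union> X)\<^sup>+)"
proof (rule equivI)
  have "A \<union> X \<subseteq> N \<times> N" using A X unfolding equiv_def by auto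
  then show "(A \<union> X)\<^sup>+ \<subseteq> N \<times> N" by (rule trancl_subset_Sigma)
  show "refl_on N ((A \<union> X)\<^sup>+)" using A unfolding equiv_def refl_on_def by auto
  have "sym (A \<union> X)" using A X unfolding equiv_def by (simp add: sym_Un)
  then show "sym ((A \<union> X)\<^sup>+)" by (rule sym_trancl)
  show "trans ((A \<union> X)\<^sup>+)" by (rule trans_trancl)
qed

lemma rmap_sub_N:
  assumes B: "equiv N B" and s: "\<sigma> ` N = N"
  shows "rmap \<sigma> B \<subseteq> N \<times> N" "sym (rmap \<sigma> B)"
proof -
  show "rmap \<sigma> B \<subseteq> N \<times> N"
  proof
    fix x assume "x \<in> rmap \<sigma> B"
    then obtain u v where "(u, v) \<in> B" "x = (\<sigma> u, \<sigma> v)" by (auto simp: rmap_def)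
    moreover then have "u \<in> N" "v \<in> N" using B unfolding equiv_def by auto
    ultimately show "x \<in> N \<times> N" using s by auto
  qed
  show "sym (rmap \<sigma> B)"
    unfolding sym_def rmap_def using B unfolding equiv_def sym_def by auto
qed

definition arg3 :: "(nat \<Rightarrow> nat) \<Rightarrow> (nat \<Rightarrow> nat) \<Rightarrow> pt \<Rightarrow> nat" where
  "arg3 \<sigma> \<tau> = (\<lambda>(t, i). if t = 0 then i else if t = 2 then \<sigma> i else \<sigma> (\<tau> i))"

lemma arg3_simps: "p \<in> pts n \<Longrightarrow> arg3 \<sigma> \<tau> (shl p) = arg \<sigma> p"
  "p \<in> pts n \<Longrightarrow> arg3 \<sigma> \<tau> (shr p) = \<sigma> (arg \<tau> p)"
  "p \<in> pts n \<Longrightarrow> arg3 \<sigma> \<tau> p = arg (\<sigma> \<circ> \<tau>) p"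
  by (auto dest!: pts_cases simp: arg3_def arg_def)

lemma elt_sbI:
  assumes "equiv (NN n) A" "\<sigma> ` NN n = NN n" "p \<in> pts n" "q \<in> pts n" "(arg \<sigma> p, arg \<sigma> q) \<in> A"
  shows "(p, q) \<in> sb (elt n A \<sigma>)"
proof -
  have "(p, q) \<in> {(p, q). p \<in> pts n \<and> q \<in> pts n \<and> (arg \<sigma> p, arg \<sigma> q) \<in> A}" using assms(3-5) by simp
  then show ?thesis by (simp only: elt_props(2)[OF assms(1,2)])
qed

lemma elt_sbD:
  assumes "equiv (NN n) A" "\<sigma> ` NN n = NN n" "(p, q) \<in> sb (elt n A \<sigma>)"
  shows "p \<in> pts n" "q \<in> pts n" "(arg \<sigma> p, arg \<sigma> q) \<in> A"
proof -
  have "(p, q) \<in> {(p, q). p \<in> pts n \<and> q \<in> pts n \<and> (arg \<sigma> p, arg \<sigma> q) \<in> A}"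
    using assms(3) by (simp only: elt_props(2)[OF assms(1,2)])
  then show "p \<in> pts n" "q \<in> pts n" "(arg \<sigma> p, arg \<sigma> q) \<in> A" by simp_all
qed

lemma equiv_refl: "equiv N A \<Longrightarrow> x \<in> N \<Longrightarrow> (x, x) \<in> A"
  unfolding equiv_def refl_on_def by blast

lemma equiv_N: "equiv N A \<Longrightarrow> (x, y) \<in> A \<Longrightarrow> x \<in> N \<and> y \<in> N"
  unfolding equiv_def by blast

lemma img_in: "\<sigma> ` N = N \<Longrightarrow> x \<in> N \<Longrightarrow> \<sigma> x \<in> N"
  by blast

lemma pts0: "i \<in> NN n \<Longrightarrow> (0, i) \<in> pts n" and pts1: "i \<in> NN n \<Longrightarrow> (1, i) \<in> pts n"
  by (auto simp: pts_def)

lemma elt_mult: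
  assumes A: "equiv (NN n) A" and B: "equiv (NN n) B"
    and s: "\<sigma> ` NN n = NN n" and t: "\<tau> ` NN n = NN n"
  shows "dmult (elt n A \<sigma>) (elt n B \<tau>) = elt n ((A \<union> rmap \<sigma> B)\<^sup>+) (\<sigma> \<circ> \<tau>)"
proof -
  let ?x = "elt n A \<sigma>" and ?y = "elt n B \<tau>"
  define J where "J = (A \<union> rmap \<sigma> B)\<^sup>+"
  have x: "?x \<in> DS n" by (rule elt_props(1)[OF A s])
  have y: "?y \<in> DS n" by (rule elt_props(1)[OF B t])
  note rB = rmap_sub_N[OF B s]
  have J: "equiv (NN n) J" unfolding J_def by (rule join_equiv[OF A rB])
  have st: "(\<sigma> \<circ> \<tau>) ` NN n = NN n" using s t by (metis image_comp)
  have AJ: "A \<subseteq> J" unfolding J_def by (intro subsetI r_into_trancl') blast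
  have BJ: "rmap \<sigma> B \<subseteq> J" unfolding J_def by (intro subsetI r_into_trancl') blast
  have xy: "dmult ?x ?y \<in> DS n" by (rule dmult_in[OF x y])
  have r: "elt n J (\<sigma> \<circ> \<tau>) \<in> DS n" by (rule elt_props(1)[OF J st])
  show ?thesis unfolding J_def[symmetric]
  proof (rule D_ext[OF xy r])
    show "sb (dmult ?x ?y) = sb (elt n J (\<sigma> \<circ> \<tau>))"
      unfolding elt_props(2)[OF J st]
    proof (intro equalityI subsetI; clarify)
      fix p q assume pq: "(p, q) \<in> sb (dmult ?x ?y)"
      have pq': "p \<in> pts n" "q \<in> pts n" using sb_pts[OF xy pq] by auto
      let ?h = "\<lambda>p. J `` {arg3 \<sigma> \<tau> p}"
      have "?h p = ?h q"
      proof (rule INV[OF x y, where h="?h", OF _ _ pq])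
        fix p q assume "(p, q) \<in> sb ?x"
        then have "(p, q) \<in> {(p, q). p \<in> pts n \<and> q \<in> pts n \<and> (arg \<sigma> p, arg \<sigma> q) \<in> A}"
          by (simp only: elt_props(2)[OF A s])
        then have pq: "p \<in> pts n" "q \<in> pts n" "(arg \<sigma> p, arg \<sigma> q) \<in> A" by simp_all
        then have "J `` {arg \<sigma> p} = J `` {arg \<sigma> q}" using AJ equiv_class_eq[OF J] by blast
        then show "?h (shl p) = ?h (shl q)" by (simp only: arg3_simps(1)[OF pq(1)] arg3_simps(1)[OF pq(2)])
      next
        fix p q assume "(p, q) \<in> sb ?y"
        then have "(p, q) \<in> {(p, q). p \<in> pts n \<and> q \<in> pts n \<and> (arg \<tau> p, arg \<tau> q) \<in> B}"
          by (simp only: elt_props(2)[OF B t])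
        then have pq: "p \<in> pts n" "q \<in> pts n" "(arg \<tau> p, arg \<tau> q) \<in> B" by simp_all
        then have "(\<sigma> (arg \<tau> p), \<sigma> (arg \<tau> q)) \<in> J" using subsetD[OF BJ rmap_mem[OF pq(3)]] by simp
        then have "J `` {\<sigma> (arg \<tau> p)} = J `` {\<sigma> (arg \<tau> q)}" using equiv_class_eq[OF J] by blast
        then show "?h (shr p) = ?h (shr q)" by (simp only: arg3_simps(2)[OF pq(1)] arg3_simps(2)[OF pq(2)])
      qed
      then have "J `` {arg (\<sigma> \<circ> \<tau>) p} = J `` {arg (\<sigma> \<circ> \<tau>) q}"
        by (simp only: arg3_simps(3)[OF pq'(1)] arg3_simps(3)[OF pq'(2)])
      then have "(arg (\<sigma> \<circ> \<tau>) p, arg (\<sigma> \<circ> \<tau>) q) \<in> J"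
        using eq_equiv_class_iff[OF J arg_in[OF pq'(1) st] arg_in[OF pq'(2) st]] by simp
      then show "p \<in> pts n \<and> q \<in> pts n \<and> (arg (\<sigma> \<circ> \<tau>) p, arg (\<sigma> \<circ> \<tau>) q) \<in> J" using pq' by simp
    next
      fix p q assume p: "p \<in> pts n" and q: "q \<in> pts n" and pqJ: "(arg (\<sigma> \<circ> \<tau>) p, arg (\<sigma> \<circ> \<tau>) q) \<in> J"
      have edge: "((0, u), (0, v)) \<in> (GG ?x ?y)\<^sup>*" if "(u, v) \<in> A \<union> rmap \<sigma> B" for u v
      proof -
        from that show ?thesis
        proof
          assume uv: "(u, v) \<in> A"
          have "u \<in> NN n" "v \<in> NN n" using equiv_N[OF A uv] by auto
          then have "((0, u), (0, v)) \<in> sb ?x" using elt_sbI[OF A s pts0 pts0] uv by simp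
          then show ?thesis using GG_L'[of "(0, u)" "(0, v)"] by simp
        next
          assume "(u, v) \<in> rmap \<sigma> B"
          then obtain u' v' where uv: "(u', v') \<in> B" "u = \<sigma> u'" "v = \<sigma> v'" by (auto simp: rmap_def)
          have N: "u' \<in> NN n" "v' \<in> NN n" using equiv_N[OF B uv(1)] by auto
          have su: "\<sigma> u' \<in> NN n" "\<sigma> v' \<in> NN n" using img_in[OF s] N by auto
          have "((0, u), (1, u')) \<in> sb ?x"
            using elt_sbI[OF A s pts0[OF su(1)] pts1[OF N(1)]] equiv_refl[OF A su(1)] uv(2) by simp
          then have 1: "((0, u), (2, u')) \<in> (GG ?x ?y)\<^sup>*" using GG_L'[of "(0, u)" "(1, u')"] by simp
          have "((0, u'), (0, v')) \<in> sb ?y" using elt_sbI[OF B t pts0[OF N(1)] pts0[OF N(2)]] uv(1) by simp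
          then have 2: "((2, u'), (2, v')) \<in> (GG ?x ?y)\<^sup>*" using GG_R'[of "(0, u')" "(0, v')"] by simp
          have "((0, v), (1, v')) \<in> sb ?x"
            using elt_sbI[OF A s pts0[OF su(2)] pts1[OF N(2)]] equiv_refl[OF A su(2)] uv(3) by simp
          then have 3: "((0, v), (2, v')) \<in> (GG ?x ?y)\<^sup>*" using GG_L'[of "(0, v)" "(1, v')"] by simp
          show ?thesis using rtrancl_trans[OF rtrancl_trans[OF 1 2] GG_rsym[OF 3]] .
        qed
      qed
      have path: "((0, u), (0, v)) \<in> (GG ?x ?y)\<^sup>*" if "(u, v) \<in> J" for u v
        using that unfolding J_def
      proof (induction rule: trancl_induct)
        case (base v)
        then show ?case by (rule edge)
      next
        case (step v w)
        show ?case using rtrancl_trans[OF step(3) edge[OF step(2)]] .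
      qed
      have to0: "(r, (0, arg (\<sigma> \<circ> \<tau>) r)) \<in> (GG ?x ?y)\<^sup>*" if r: "r \<in> pts n" for r
      proof -
        from pts_cases[OF r] show ?thesis
        proof
          assume "\<exists>i. r = (0, i)" then show ?thesis by auto
        next
          assume "\<exists>i. r = (1, i)"
          then obtain k where k: "r = (1, k)" by auto
          then have kN: "k \<in> NN n" using r by (auto simp: pts_def)
          have tk: "\<tau> k \<in> NN n" using img_in[OF t kN] .
          have stk: "\<sigma> (\<tau> k) \<in> NN n" using img_in[OF s tk] .
          have "((0, \<tau> k), (1, k)) \<in> sb ?y"
            using elt_sbI[OF B t pts0[OF tk] pts1[OF kN]] equiv_refl[OF B tk] by simp
          then have 1: "((2, \<tau> k), (1, k)) \<in> (GG ?x ?y)\<^sup>*" using GG_R'[of "(0, \<tau> k)" "(1, k)"] by simp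
          have "((0, \<sigma> (\<tau> k)), (1, \<tau> k)) \<in> sb ?x"
            using elt_sbI[OF A s pts0[OF stk] pts1[OF tk]] equiv_refl[OF A stk] by simp
          then have 2: "((0, \<sigma> (\<tau> k)), (2, \<tau> k)) \<in> (GG ?x ?y)\<^sup>*" using GG_L'[of "(0, \<sigma> (\<tau> k))" "(1, \<tau> k)"] by simp
          have "((0, \<sigma> (\<tau> k)), (1, k)) \<in> (GG ?x ?y)\<^sup>*" using rtrancl_trans[OF 2 1] .
          then show ?thesis using k GG_rsym by simp
        qed
      qed
      have "(p, q) \<in> (GG ?x ?y)\<^sup>*"
        using rtrancl_trans[OF rtrancl_trans[OF to0[OF p] path[OF pqJ]] GG_rsym[OF to0[OF q]]] .
      then show "(p, q) \<in> sb (dmult ?x ?y)" by (rule PATH[OF x y p q])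
    qed
  qed
qed



definition blk :: "dpart \<Rightarrow> pt \<Rightarrow> pt set" where "blk a p = {q. (p, q) \<in> sb a}"

lemma blk_eq: "a \<in> DS n \<Longrightarrow> (p, q) \<in> sb a \<Longrightarrow> blk a p = blk a q"
  unfolding blk_def using sb_trans[of a n] sb_sym[of _ _ a] by blast

lemma blk_eqD: "a \<in> DS n \<Longrightarrow> p \<in> pts n \<Longrightarrow> blk a p = blk a q \<Longrightarrow> (p, q) \<in> sb a"
proof -
  assume a: "a \<in> DS n" and p: "p \<in> pts n" and e: "blk a p = blk a q"
  have "p \<in> blk a p" using sb_refl[OF a p] by (simp add: blk_def)
  then have "p \<in> blk a q" using e by simp
  then have "(q, p) \<in> sb a" by (simp add: blk_def)
  then show ?thesis by (rule sb_sym)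
qed

lemma kr_ck_mult:
  assumes a: "a \<in> DS n" and b: "b \<in> DS n" and eq: "ck a = kr b"
  shows "kr (dmult a b) = kr a" "ck (dmult a b) = ck b"
proof -
  define h :: "pt \<Rightarrow> nat set" where "h = (\<lambda>(t, i). if t = 0 then {j. ((0, i), (1, j)) \<in> sb a}
                       else if t = 2 then ck a `` {i} else {j. ((0, j), (1, i)) \<in> sb b})"
  have h0: "h (0, i) = {j. ((0, i), (1, j)) \<in> sb a}" for i by (simp add: h_def)
  have h1: "h (1, i) = {j. ((0, j), (1, i)) \<in> sb b}" "h (Suc 0, i) = {j. ((0, j), (1, i)) \<in> sb b}" for i by (simp_all add: h_def)
  have key: "h p = h q" if "(p, q) \<in> sb (dmult a b)" for p q
  proof (rule INV[OF a b, where h=h, OF _ _ that])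
    have L: "h (shl p) = {j. (p, (1, j)) \<in> sb a}" if "p \<in> pts n" for p
      using pts_cases[OF that] by (auto simp: h_def ck_def)
    fix p q assume pq: "(p, q) \<in> sb a"
    have "{j. (p, (1, j)) \<in> sb a} = {j. (q, (1, j)) \<in> sb a}"
      using pq sb_trans[OF a] sb_sym by blast
    then show "h (shl p) = h (shl q)" using L sb_pts[OF a pq] by simp
  next
    have R: "h (shr p) = {j. (p, (0, j)) \<in> sb b}" if "p \<in> pts n" for p
      using pts_cases[OF that] eq by (auto simp: h_def kr_def intro: sb_sym)
    fix p q assume pq: "(p, q) \<in> sb b"
    have "{j. (p, (0, j)) \<in> sb b} = {j. (q, (0, j)) \<in> sb b}"
      using pq sb_trans[OF b] sb_sym by blast
    then show "h (shr p) = h (shr q)" using R sb_pts[OF b pq] by simp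
  qed
  show "kr (dmult a b) = kr a"
  proof (intro equalityI subsetI)
    fix x assume "x \<in> kr (dmult a b)"
    then obtain i i' where x: "x = (i, i')" "((0, i), (0, i')) \<in> sb (dmult a b)" by (auto simp: kr_def)
    have e: "h (0, i) = h (0, i')" by (rule key[OF x(2)])
    have "(0, i) \<in> pts n" using sb_pts[OF dmult_in[OF a b] x(2)] by simp
    then obtain j where j: "((0, i), (1, j)) \<in> sb a" using D_tag1[OF a] by blast
    then have "j \<in> h (0, i)" by (simp add: h0)
    then have "j \<in> h (0, i')" using e by simp
    then have "((0, i'), (1, j)) \<in> sb a" by (simp add: h0)
    then have "((0, i), (0, i')) \<in> sb a" using sb_trans[OF a j sb_sym] by blast
    then show "x \<in> kr a" using x by (simp add: kr_def)
  qed (use kr_mono[OF a b] in blast)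
  show "ck (dmult a b) = ck b"
  proof (intro equalityI subsetI)
    fix x assume "x \<in> ck (dmult a b)"
    then obtain i i' where x: "x = (i, i')" "((1, i), (1, i')) \<in> sb (dmult a b)" by (auto simp: ck_def)
    have e: "h (1, i) = h (1, i')" by (rule key[OF x(2)])
    have "(1, i) \<in> pts n" using sb_pts[OF dmult_in[OF a b] x(2)] by simp
    then obtain j where j: "((1, i), (0, j)) \<in> sb b" using D_tag0[OF b] by blast
    then have "j \<in> h (1, i)" using sb_sym by (simp add: h1)
    then have "j \<in> h (1, i')" using e by simp
    then have "((0, j), (1, i')) \<in> sb b" by (simp add: h1)
    then have "((1, i), (1, i')) \<in> sb b" using sb_trans[OF b j] by blast
    then show "x \<in> ck b" using x by (simp add: ck_def)
  qed (use ck_mono[OF a b] in blast)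
qed

subsection \<open>Reversal\<close>

definition flip :: "pt \<Rightarrow> pt" where
  "flip = (\<lambda>(t, i). (if t = 0 then 1 else if t = 1 then 0 else t, i))"

lemma flip_simps[simp]: "flip (0, i) = (1, i)" "flip (1, i) = (0, i)" "flip (Suc 0, i) = (0, i)"
  by (auto simp: flip_def)

lemma flip_flip[simp]: "flip (flip p) = p"
  by (cases p) (auto simp: flip_def)

lemma flip_pts: "p \<in> pts n \<Longrightarrow> flip p \<in> pts n"
  by (auto simp: pts_def flip_def)

lemma rmap_flip: "(p, q) \<in> rmap flip R \<longleftrightarrow> (flip p, flip q) \<in> R"
proof
  assume "(p, q) \<in> rmap flip R"
  then obtain u v where "(u, v) \<in> R" "p = flip u" "q = flip v" by (auto simp: rmap_def)
  then show "(flip p, flip q) \<in> R" by simp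
next
  assume "(flip p, flip q) \<in> R"
  then have "(flip (flip p), flip (flip q)) \<in> rmap flip R" by (rule rmap_mem)
  then show "(p, q) \<in> rmap flip R" by simp
qed

definition rvs :: "nat \<Rightarrow> dpart \<Rightarrow> dpart" where "rvs n a = pts n // rmap flip (sb a)"

lemma rev_props:
  assumes a: "a \<in> DS n"
  shows "rvs n a \<in> DS n" "sb (rvs n a) = rmap flip (sb a)"
proof -
  have E: "equiv (pts n) (rmap flip (sb a))"
  proof (rule equivI)
    show "rmap flip (sb a) \<subseteq> pts n \<times> pts n"
    proof
      fix x assume "x \<in> rmap flip (sb a)"
      then obtain p q where x: "x = (p, q)" "(flip p, flip q) \<in> sb a" by (cases x) (auto simp: rmap_flip)
      then show "x \<in> pts n \<times> pts n" using sb_pts[OF a x(2)] flip_pts[of "flip p" n] flip_pts[of "flip q" n] by simp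
    qed
    show "refl_on (pts n) (rmap flip (sb a))"
      unfolding refl_on_def rmap_flip using sb_refl[OF a] flip_pts by blast
    show "sym (rmap flip (sb a))"
      unfolding sym_def using rmap_flip sb_sym by (metis surj_pair)
    show "trans (rmap flip (sb a))"
      unfolding trans_def using rmap_flip sb_trans[OF a] by (metis surj_pair)
  qed
  have t0: "\<exists>i. (p, (0, i)) \<in> rmap flip (sb a)" if "p \<in> pts n" for p
    using D_tag1[OF a flip_pts[OF that]] by (auto simp: rmap_flip)
  have t1: "\<exists>i. (p, (1, i)) \<in> rmap flip (sb a)" if "p \<in> pts n" for p
    using D_tag0[OF a flip_pts[OF that]] by (auto simp: rmap_flip)
  show "rvs n a \<in> DS n" "sb (rvs n a) = rmap flip (sb a)"
    unfolding rvs_def using mkD[OF E t0 t1] by auto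
qed

lemma kr_rev: "a \<in> DS n \<Longrightarrow> kr (rvs n a) = ck a"
  unfolding kr_def ck_def rev_props(2) rmap_flip by simp

lemma ck_rev: "a \<in> DS n \<Longrightarrow> ck (rvs n a) = kr a"
  unfolding kr_def ck_def rev_props(2) rmap_flip by simp

lemma rev_rev: "a \<in> DS n \<Longrightarrow> rvs n (rvs n a) = a"
proof (rule D_ext[OF rev_props(1)[OF rev_props(1)]])
  assume a: "a \<in> DS n"
  then show "a \<in> DS n" .
  show "sb (rvs n (rvs n a)) = sb a"
    unfolding rev_props(2)[OF rev_props(1)[OF a]] rev_props(2)[OF a]
    by (auto simp: rmap_flip)
qed

lemma mult_rev:
  assumes x: "x \<in> DS n"
  shows "dmult x (rvs n x) = idm n (kr x)"
proof -
  have r: "rvs n x \<in> DS n" by (rule rev_props(1)[OF x])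
  have K: "equiv (NN n) (kr x)" by (rule kr_equiv[OF x])
  have xr: "dmult x (rvs n x) \<in> DS n" by (rule dmult_in[OF x r])
  show ?thesis
  proof (rule D_ext[OF xr idm_props(1)[OF K]])
    show "sb (dmult x (rvs n x)) = sb (idm n (kr x))"
      unfolding idm_props(2)[OF K]
    proof (intro equalityI subsetI; clarify)
      fix p q assume pq: "(p, q) \<in> sb (dmult x (rvs n x))"
      have pq': "p \<in> pts n" "q \<in> pts n" using sb_pts[OF xr pq] by auto
      define h :: "pt \<Rightarrow> pt set" where "h = (\<lambda>(t, i). if t = 2 then blk x (1, i) else blk x (0, i))"
      have hp: "h p = blk x (0, snd p)" if "p \<in> pts n" for p
        using pts_cases[OF that] by (auto simp: h_def)
      have "h p = h q"
      proof (rule INV[OF x r, where h=h, OF _ _ pq])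
        fix p q assume pq: "(p, q) \<in> sb x"
        have "h (shl p) = blk x p" if "p \<in> pts n" for p
          using pts_cases[OF that] by (auto simp: h_def)
        then show "h (shl p) = h (shl q)" using blk_eq[OF x pq] sb_pts[OF x pq] by simp
      next
        fix p q assume pq: "(p, q) \<in> sb (rvs n x)"
        then have fpq: "(flip p, flip q) \<in> sb x" by (simp add: rev_props(2)[OF x] rmap_flip)
        have "h (shr p) = blk x (flip p)" if "p \<in> pts n" for p
          using pts_cases[OF that] by (auto simp: h_def)
        then show "h (shr p) = h (shr q)" using blk_eq[OF x fpq] sb_pts[OF r pq] by simp
      qed
      then have "blk x (0, snd p) = blk x (0, snd q)" using hp pq' by simp
      then have "((0, snd p), (0, snd q)) \<in> sb x"
        by (rule blk_eqD[OF x, rotated]) (use pq'(1) in \<open>auto simp: pts_def\<close>)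
      then show "p \<in> pts n \<and> q \<in> pts n \<and> (snd p, snd q) \<in> kr x" using pq' by (simp add: kr_def)
    next
      fix p q assume p: "p \<in> pts n" and q: "q \<in> pts n" and pqK: "(snd p, snd q) \<in> kr x"
      have to0: "(r, (0, snd r)) \<in> (GG x (rvs n x))\<^sup>*" if r: "r \<in> pts n" for r
      proof -
        from pts_cases[OF r] show ?thesis
        proof
          assume "\<exists>i. r = (0, i)" then show ?thesis by auto
        next
          assume "\<exists>i. r = (1, i)"
          then obtain k where k: "r = (1, k)" by auto
          then have k0: "(0, k) \<in> pts n" using r by (auto simp: pts_def)
          obtain j where j: "((0, k), (1, j)) \<in> sb x" using D_tag1[OF x k0] by auto
          have "((0, j), (1, k)) \<in> sb (rvs n x)"
            using sb_sym[OF j] by (simp add: rev_props(2)[OF x] rmap_flip)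
          then have 1: "((2, j), (1, k)) \<in> (GG x (rvs n x))\<^sup>*" using GG_R'[of "(0, j)" "(1, k)"] by simp
          have 2: "((0, k), (2, j)) \<in> (GG x (rvs n x))\<^sup>*" using GG_L'[OF j] by simp
          show ?thesis using k GG_rsym[OF rtrancl_trans[OF 2 1]] by simp
        qed
      qed
      have "((0, snd p), (0, snd q)) \<in> (GG x (rvs n x))\<^sup>*"
        using GG_L'[of "(0, snd p)" "(0, snd q)" x] pqK by (simp add: kr_def)
      then have "(p, q) \<in> (GG x (rvs n x))\<^sup>*"
        using rtrancl_trans[OF rtrancl_trans[OF to0[OF p]] GG_rsym[OF to0[OF q]]] by blast
      then show "(p, q) \<in> sb (dmult x (rvs n x))" by (rule PATH[OF x r p q])
    qed
  qed
qed

lemma rev_mult: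
  assumes x: "x \<in> DS n"
  shows "dmult (rvs n x) x = idm n (ck x)"
  using mult_rev[OF rev_props(1)[OF x]] rev_rev[OF x] kr_rev[OF x] by simp

lemma idm_mult:
  assumes x: "x \<in> DS n"
  shows "dmult (idm n (kr x)) x = x"
proof -
  have K: "equiv (NN n) (kr x)" by (rule kr_equiv[OF x])
  have e: "idm n (kr x) \<in> DS n" by (rule idm_props(1)[OF K])
  have ex: "dmult (idm n (kr x)) x \<in> DS n" by (rule dmult_in[OF e x])
  have esb: "(p, q) \<in> sb (idm n (kr x)) \<longleftrightarrow> p \<in> pts n \<and> q \<in> pts n \<and> (snd p, snd q) \<in> kr x" for p q
    unfolding idm_props(2)[OF K] by simp
  show ?thesis
  proof (rule D_ext[OF ex x], intro equalityI subsetI; clarify)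
    fix p q assume pq: "(p, q) \<in> sb (dmult (idm n (kr x)) x)"
    have pq': "p \<in> pts n" "q \<in> pts n" using sb_pts[OF ex pq] by auto
    define h :: "pt \<Rightarrow> pt set" where "h = (\<lambda>(t, i). if t = 1 then blk x (1, i) else blk x (0, i))"
    have hp: "h p = blk x p" if "p \<in> pts n" for p
      using pts_cases[OF that] by (auto simp: h_def)
    have "h p = h q"
    proof (rule INV[OF e x, where h=h, OF _ _ pq])
      fix p q assume pq: "(p, q) \<in> sb (idm n (kr x))"
      then have pq2: "p \<in> pts n" "q \<in> pts n" "(snd p, snd q) \<in> kr x" using esb by auto
      have hl: "h (shl p) = blk x (0, snd p)" if "p \<in> pts n" for p
        using pts_cases[OF that] by (auto simp: h_def)
      have "blk x (0, snd p) = blk x (0, snd q)" using blk_eq[OF x] pq2(3) by (simp add: kr_def)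
      then show "h (shl p) = h (shl q)" using hl pq2 by simp
    next
      fix p q assume pq: "(p, q) \<in> sb x"
      have "h (shr p) = blk x p" if "p \<in> pts n" for p
        using pts_cases[OF that] by (auto simp: h_def)
      then show "h (shr p) = h (shr q)" using blk_eq[OF x pq] sb_pts[OF x pq] by simp
    qed
    then show "(p, q) \<in> sb x" using hp pq' blk_eqD[OF x pq'(1)] by simp
  next
    fix p q assume pq: "(p, q) \<in> sb x"
    have pq': "p \<in> pts n" "q \<in> pts n" using sb_pts[OF x pq] by auto
    have tos: "(r, shr r) \<in> (GG (idm n (kr x)) x)\<^sup>*" if r: "r \<in> pts n" for r
    proof -
      from pts_cases[OF r] show ?thesis
      proof
        assume "\<exists>i. r = (0, i)"
        then obtain i where i: "r = (0, i)" by auto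
        have "((0, i), (1, i)) \<in> sb (idm n (kr x))"
          using esb r i equiv_refl[OF K] by (auto simp: pts_def)
        then show ?thesis using GG_L'[of "(0, i)" "(1, i)"] i by simp
      next
        assume "\<exists>i. r = (1, i)" then show ?thesis by auto
      qed
    qed
    have "(shr p, shr q) \<in> (GG (idm n (kr x)) x)\<^sup>*" by (rule GG_R'[OF pq])
    then have "(p, q) \<in> (GG (idm n (kr x)) x)\<^sup>*"
      using rtrancl_trans[OF rtrancl_trans[OF tos[OF pq'(1)]] GG_rsym[OF tos[OF pq'(2)]]] by blast
    then show "(p, q) \<in> sb (dmult (idm n (kr x)) x)" by (rule PATH[OF e x pq'])
  qed
qed

lemma mult_idm:
  assumes x: "x \<in> DS n"
  shows "dmult x (idm n (ck x)) = x"
proof -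
  have K: "equiv (NN n) (ck x)" by (rule ck_equiv[OF x])
  have e: "idm n (ck x) \<in> DS n" by (rule idm_props(1)[OF K])
  have ex: "dmult x (idm n (ck x)) \<in> DS n" by (rule dmult_in[OF x e])
  have esb: "(p, q) \<in> sb (idm n (ck x)) \<longleftrightarrow> p \<in> pts n \<and> q \<in> pts n \<and> (snd p, snd q) \<in> ck x" for p q
    unfolding idm_props(2)[OF K] by simp
  show ?thesis
  proof (rule D_ext[OF ex x], intro equalityI subsetI; clarify)
    fix p q assume pq: "(p, q) \<in> sb (dmult x (idm n (ck x)))"
    have pq': "p \<in> pts n" "q \<in> pts n" using sb_pts[OF ex pq] by auto
    define h :: "pt \<Rightarrow> pt set" where "h = (\<lambda>(t, i). if t = 0 then blk x (0, i) else blk x (1, i))"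
    have hp: "h p = blk x p" if "p \<in> pts n" for p
      using pts_cases[OF that] by (auto simp: h_def)
    have "h p = h q"
    proof (rule INV[OF x e, where h=h, OF _ _ pq])
      fix p q assume pq: "(p, q) \<in> sb x"
      have "h (shl p) = blk x p" if "p \<in> pts n" for p
        using pts_cases[OF that] by (auto simp: h_def)
      then show "h (shl p) = h (shl q)" using blk_eq[OF x pq] sb_pts[OF x pq] by simp
    next
      fix p q assume pq: "(p, q) \<in> sb (idm n (ck x))"
      then have pq2: "p \<in> pts n" "q \<in> pts n" "(snd p, snd q) \<in> ck x" using esb by auto
      have hr: "h (shr p) = blk x (1, snd p)" if "p \<in> pts n" for p
        using pts_cases[OF that] by (auto simp: h_def)
      have "blk x (1, snd p) = blk x (1, snd q)" using blk_eq[OF x] pq2(3) by (simp add: ck_def)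
      then show "h (shr p) = h (shr q)" using hr pq2 by simp
    qed
    then show "(p, q) \<in> sb x" using hp pq' blk_eqD[OF x pq'(1)] by simp
  next
    fix p q assume pq: "(p, q) \<in> sb x"
    have pq': "p \<in> pts n" "q \<in> pts n" using sb_pts[OF x pq] by auto
    have tos: "(r, shl r) \<in> (GG x (idm n (ck x)))\<^sup>*" if r: "r \<in> pts n" for r
    proof -
      from pts_cases[OF r] show ?thesis
      proof
        assume "\<exists>i. r = (1, i)"
        then obtain i where i: "r = (1, i)" by auto
        have "((0, i), (1, i)) \<in> sb (idm n (ck x))"
          using esb r i equiv_refl[OF K] by (auto simp: pts_def)
        then have "((2, i), (1, i)) \<in> (GG x (idm n (ck x)))\<^sup>*" using GG_R'[of "(0, i)" "(1, i)"] by simp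
        then show ?thesis using i GG_rsym by simp
      next
        assume "\<exists>i. r = (0, i)" then show ?thesis by auto
      qed
    qed
    have "(shl p, shl q) \<in> (GG x (idm n (ck x)))\<^sup>*" by (rule GG_L'[OF pq])
    then have "(p, q) \<in> (GG x (idm n (ck x)))\<^sup>*"
      using rtrancl_trans[OF rtrancl_trans[OF tos[OF pq'(1)]] GG_rsym[OF tos[OF pq'(2)]]] by blast
    then show "(p, q) \<in> sb (dmult x (idm n (ck x)))" by (rule PATH[OF x e pq'])
  qed
qed



abbreviation Dl :: "nat \<Rightarrow> (nat \<times> nat) set" where "Dl n \<equiv> Id_on (NN n)"

lemma blocks_blk: "x \<in> DS n \<Longrightarrow> x = blk x ` pts n"
proof -
  assume x: "x \<in> DS n"
  have "x = pts n // sb x" using D_quot[OF x] by simp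
  also have "\<dots> = blk x ` pts n" unfolding quotient_def blk_def by auto
  finally show ?thesis .
qed

lemma kr_Dl_ck:
  assumes x: "x \<in> DS n" and k: "kr x = Dl n"
  shows "ck x = Dl n"
proof -
  let ?a = "\<lambda>i. blk x (0, i)" and ?b = "\<lambda>j. blk x (1, j)"
  have surj0: "?a ` NN n = x"
  proof -
    have "?a ` NN n \<subseteq> x" using blocks_blk[OF x] by (auto simp: pts_def)
    moreover have "x \<subseteq> ?a ` NN n"
    proof
      fix B assume "B \<in> x"
      then have "B \<in> blk x ` pts n" by (metis blocks_blk[OF x])
      then obtain p where p: "p \<in> pts n" "B = blk x p" by blast
      obtain i where i: "(p, (0, i)) \<in> sb x" using D_tag0[OF x p(1)] by auto
      then have "(0, i) \<in> pts n" using sb_pts[OF x] by auto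
      then show "B \<in> ?a ` NN n" using blk_eq[OF x i] p by (auto simp: pts_def)
    qed
    ultimately show ?thesis by blast
  qed
  have inj0: "inj_on ?a (NN n)"
  proof (rule inj_onI)
    fix i i' assume "i \<in> NN n" "i' \<in> NN n" "?a i = ?a i'"
    then have "((0, i), (0, i')) \<in> sb x" using blk_eqD[OF x] by (auto simp: pts_def)
    then have "(i, i') \<in> Dl n" using k by (auto simp: kr_def)
    then show "i = i'" by auto
  qed
  have surj1: "?b ` NN n = x"
  proof -
    have "?b ` NN n \<subseteq> x" using blocks_blk[OF x] by (auto simp: pts_def)
    moreover have "x \<subseteq> ?b ` NN n"
    proof
      fix B assume "B \<in> x"
      then have "B \<in> blk x ` pts n" by (metis blocks_blk[OF x])
      then obtain p where p: "p \<in> pts n" "B = blk x p" by blast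
      obtain i where i: "(p, (1, i)) \<in> sb x" using D_tag1[OF x p(1)] by auto
      then have "(1, i) \<in> pts n" using sb_pts[OF x] by auto
      then show "B \<in> ?b ` NN n" using blk_eq[OF x i] p by (auto simp: pts_def)
    qed
    ultimately show ?thesis by blast
  qed
  have "card x = card (NN n)" using card_image[OF inj0] surj0 by simp
  then have "card (?b ` NN n) = card (NN n)" using surj1 by simp
  then have inj1: "inj_on ?b (NN n)" by (rule eq_card_imp_inj_on[rotated]) simp
  show ?thesis
  proof (intro equalityI subsetI)
    fix z assume "z \<in> ck x"
    then obtain j j' where z: "z = (j, j')" "((1, j), (1, j')) \<in> sb x" by (auto simp: ck_def)
    then have N: "j \<in> NN n" "j' \<in> NN n" using sb_pts[OF x z(2)] by (auto simp: pts_def)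
    have "?b j = ?b j'" using blk_eq[OF x z(2)] .
    then have "j = j'" using inj1 N by (auto dest: inj_onD)
    then show "z \<in> Dl n" using z N by auto
  next
    fix z assume "z \<in> Dl n"
    then show "z \<in> ck x" using ck_equiv[OF x] unfolding equiv_def refl_on_def by auto
  qed
qed

lemma ck_Dl_kr:
  assumes x: "x \<in> DS n" and k: "ck x = Dl n"
  shows "kr x = Dl n"
  using kr_Dl_ck[OF rev_props(1)[OF x]] k kr_rev[OF x] ck_rev[OF x] by simp

subsection \<open>Units\<close>

definition uu :: "nat \<Rightarrow> (nat \<Rightarrow> nat) \<Rightarrow> dpart" where
  "uu n \<pi> = {{(0, i), (1, \<pi> i)} | i. i \<in> NN n}"

lemma sym_units_uu: "sym_units n = {uu n \<pi> | \<pi>. \<pi> permutes NN n}"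
  unfolding sym_units_def uu_def by simp

lemma uu_mem: "B \<in> uu n \<pi> \<longleftrightarrow> (\<exists>i\<in>NN n. B = {(0, i), (1, \<pi> i)})"
  unfolding uu_def by blast

lemma uu_props:
  assumes p: "\<pi> permutes NN n"
  shows "uu n \<pi> \<in> DS n" "kr (uu n \<pi>) = Dl n"
proof -
  have pN: "\<pi> i \<in> NN n" if "i \<in> NN n" for i using permutes_in_image[OF p] that by blast
  have inj: "\<pi> i = \<pi> j \<Longrightarrow> i = j" for i j using p by (meson permutes_inj injD)
  have part: "partition_on (pts n) (uu n \<pi>)"
  proof (rule partition_onI)
    show "\<Union> (uu n \<pi>) = pts n"
    proof (intro equalityI subsetI)
      fix x assume "x \<in> \<Union> (uu n \<pi>)"
      then obtain B where "B \<in> uu n \<pi>" "x \<in> B" by blast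
      then obtain i where i: "i \<in> NN n" "x \<in> {(0, i), (1, \<pi> i)}" unfolding uu_mem by blast
      have "(0, i) \<in> pts n" "(1, \<pi> i) \<in> pts n" using i(1) pN[OF i(1)] by (auto simp: pts_def)
      then show "x \<in> pts n" using i(2) by blast
    next
      fix x assume x: "x \<in> pts n"
      from pts_cases[OF x] show "x \<in> \<Union> (uu n \<pi>)"
      proof
        assume "\<exists>i. x = (0, i)"
        then obtain i where i: "x = (0, i)" "i \<in> NN n" using x by (auto simp: pts_def)
        have "{(0, i), (1, \<pi> i)} \<in> uu n \<pi>" using i(2) unfolding uu_mem by blast
        then show ?thesis using i(1) by blast
      next
        assume "\<exists>i. x = (1, i)"
        then obtain j where j: "x = (1, j)" "j \<in> NN n" using x by (auto simp: pts_def)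
        have "j \<in> \<pi> ` NN n" using j(2) permutes_image[OF p] by simp
        then obtain i where ij: "i \<in> NN n" "\<pi> i = j" by blast
        then have "{(0, i), (1, \<pi> i)} \<in> uu n \<pi>" unfolding uu_mem by blast
        then show ?thesis using j ij(2) by blast
      qed
    qed
  next
    fix P Q assume "P \<in> uu n \<pi>" "Q \<in> uu n \<pi>" "P \<noteq> Q"
    then obtain i j where ij: "P = {(0, i), (1, \<pi> i)}" "Q = {(0, j), (1, \<pi> j)}" "i \<noteq> j"
      unfolding uu_mem by blast
    then have "\<pi> i \<noteq> \<pi> j" using inj by blast
    then show "disjnt P Q" using ij by (simp add: disjnt_def)
  next
    show "{} \<notin> uu n \<pi>" unfolding uu_mem by blast
  qed
  have "\<forall>B\<in>uu n \<pi>. (\<exists>i. (0, i) \<in> B) \<and> (\<exists>i. (1, i) \<in> B)"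
  proof
    fix B assume "B \<in> uu n \<pi>"
    then obtain i where "B = {(0, i), (1, \<pi> i)}" unfolding uu_mem by blast
    then show "(\<exists>i. (0, i) \<in> B) \<and> (\<exists>i. (1, i) \<in> B)" by blast
  qed
  then show u: "uu n \<pi> \<in> DS n" using part by (simp add: dual_sym_def)
  show "kr (uu n \<pi>) = Dl n"
  proof (intro equalityI subsetI)
    fix z assume "z \<in> kr (uu n \<pi>)"
    then obtain i j where z: "z = (i, j)" "((0, i), (0, j)) \<in> sb (uu n \<pi>)" by (auto simp: kr_def)
    then obtain B where B: "B \<in> uu n \<pi>" "(0, i) \<in> B" "(0, j) \<in> B" by (auto simp: sb_def)
    then obtain k where "B = {(0, k), (1, \<pi> k)}" unfolding uu_mem by blast
    then have "i = j" using B by simp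
    then show "z \<in> Dl n" using z sb_pts[OF u z(2)] by (auto simp: pts_def)
  next
    fix z assume "z \<in> Dl n"
    then show "z \<in> kr (uu n \<pi>)" using kr_equiv[OF u] unfolding equiv_def refl_on_def by auto
  qed
qed

lemma unit_char:
  assumes x: "x \<in> DS n"
  shows "x \<in> sym_units n \<longleftrightarrow> kr x = Dl n"
proof
  assume "x \<in> sym_units n"
  then obtain \<pi> where "\<pi> permutes NN n" "x = uu n \<pi>" by (auto simp: sym_units_uu)
  then show "kr x = Dl n" using uu_props by simp
next
  assume k: "kr x = Dl n"
  have c: "ck x = Dl n" by (rule kr_Dl_ck[OF x k])
  define \<pi> where "\<pi> i = (if i \<in> NN n then (THE j. ((0, i), (1, j)) \<in> sb x) else i)" for i
  have ex: "\<exists>!j. ((0, i), (1, j)) \<in> sb x" if i: "i \<in> NN n" for i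
  proof -
    obtain j where j: "((0, i), (1, j)) \<in> sb x" using D_tag1[OF x, of "(0, i)"] i by (auto simp: pts_def)
    moreover have "j' = j" if "((0, i), (1, j')) \<in> sb x" for j'
    proof -
      have "((1, j'), (1, j)) \<in> sb x" using sb_trans[OF x sb_sym[OF that] j] .
      then have "(j', j) \<in> ck x" by (simp add: ck_def)
      then have "(j', j) \<in> Dl n" using c by simp
      then show ?thesis by auto
    qed
    ultimately show ?thesis by blast
  qed
  have pi: "((0, i), (1, \<pi> i)) \<in> sb x" if i: "i \<in> NN n" for i
    using theI'[OF ex[OF i]] i by (simp add: \<pi>_def)
  have piN: "\<pi> i \<in> NN n" if i: "i \<in> NN n" for i using sb_pts[OF x pi[OF i]] by (auto simp: pts_def)
  have piu: "j = \<pi> i" if "i \<in> NN n" "((0, i), (1, j)) \<in> sb x" for i j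
    using ex[OF that(1)] pi[OF that(1)] that(2) by blast
  have bij: "bij_betw \<pi> (NN n) (NN n)"
  proof (rule bij_betw_imageI)
    show "inj_on \<pi> (NN n)"
    proof (rule inj_onI)
      fix i i' assume ii: "i \<in> NN n" "i' \<in> NN n" "\<pi> i = \<pi> i'"
      have "((0, i), (1, \<pi> i')) \<in> sb x" using pi[OF ii(1)] ii(3) by simp
      then have "((0, i), (0, i')) \<in> sb x" using sb_trans[OF x _ sb_sym[OF pi[OF ii(2)]]] by blast
      then have "(i, i') \<in> kr x" by (simp add: kr_def)
      then have "(i, i') \<in> Dl n" using k by simp
      then show "i = i'" by auto
    qed
    show "\<pi> ` NN n = NN n"
    proof (intro equalityI subsetI)
      fix j assume "j \<in> \<pi> ` NN n" then show "j \<in> NN n" using piN by auto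
    next
      fix j assume j: "j \<in> NN n"
      obtain i where i: "((1, j), (0, i)) \<in> sb x" using D_tag0[OF x, of "(1, j)"] j by (auto simp: pts_def)
      then have iN: "i \<in> NN n" using sb_pts[OF x i] by (auto simp: pts_def)
      then have "j = \<pi> i" using piu[OF iN sb_sym[OF i]] by simp
      then show "j \<in> \<pi> ` NN n" using iN by blast
    qed
  qed
  have perm: "\<pi> permutes NN n" by (rule bij_imp_permutes[OF bij]) (auto simp: \<pi>_def)
  have "x = uu n \<pi>"
  proof (rule D_ext[OF x uu_props(1)[OF perm]])
    show "sb x = sb (uu n \<pi>)"
    proof (intro equalityI subsetI; clarify)
      fix p q assume pq: "(p, q) \<in> sb x"
      have to: "\<exists>i\<in>NN n. p \<in> {(0, i), (1, \<pi> i)} \<and> q \<in> {(0, i), (1, \<pi> i)}"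
      proof -
        have p: "p \<in> pts n" using sb_pts[OF x pq] by simp
        obtain i where i: "(p, (0, i)) \<in> sb x" using D_tag0[OF x p] by auto
        have iN: "i \<in> NN n" using sb_pts[OF x i] by (auto simp: pts_def)
        have mem: "r \<in> {(0, i), (1, \<pi> i)}" if "(r, (0, i)) \<in> sb x" for r
        proof -
          have r: "r \<in> pts n" using sb_pts[OF x that] by simp
          from pts_cases[OF r] show ?thesis
          proof
            assume "\<exists>i'. r = (0, i')"
            then obtain i' where "r = (0, i')" by auto
            then have "(i', i) \<in> kr x" using that by (simp add: kr_def)
            then have "(i', i) \<in> Dl n" using k by simp
            then show ?thesis using \<open>r = (0, i')\<close> by auto
          next
            assume "\<exists>j. r = (1, j)"
            then obtain j where rj: "r = (1, j)" by auto
            then have "((1, j), (0, i)) \<in> sb x" using that by simp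
            then have "j = \<pi> i" using piu[OF iN sb_sym] by blast
            then show ?thesis using \<open>r = (1, j)\<close> by auto
          qed
        qed
        have "(q, (0, i)) \<in> sb x" using sb_trans[OF x sb_sym[OF pq] i] .
        then have "q \<in> {(0, i), (1, \<pi> i)}" by (rule mem)
        moreover have "p \<in> {(0, i), (1, \<pi> i)}" by (rule mem[OF i])
        ultimately show ?thesis using iN by blast
      qed
      then show "(p, q) \<in> sb (uu n \<pi>)" unfolding sb_def uu_def by blast
    next
      fix p q assume "(p, q) \<in> sb (uu n \<pi>)"
      then obtain i where i: "i \<in> NN n" "p \<in> {(0, i), (1, \<pi> i)}" "q \<in> {(0, i), (1, \<pi> i)}"
        unfolding sb_def uu_def by blast
      have r0: "((0, i), (0, i)) \<in> sb x" using sb_refl[OF x] i(1) by (auto simp: pts_def)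
      have r1: "((1, \<pi> i), (1, \<pi> i)) \<in> sb x" using sb_refl[OF x] piN[OF i(1)] by (auto simp: pts_def)
      have p01: "((0, i), (1, \<pi> i)) \<in> sb x" by (rule pi[OF i(1)])
      have p10: "((1, \<pi> i), (0, i)) \<in> sb x" by (rule sb_sym[OF p01])
      show "(p, q) \<in> sb x" using i(2,3) r0 r1 p01 p10 by auto
    qed
  qed
  then show "x \<in> sym_units n" using perm by (auto simp: sym_units_uu)
qed



definition atom :: "nat \<Rightarrow> (nat \<times> nat) set \<Rightarrow> bool" where
  "atom n K \<longleftrightarrow> (\<exists>a b. a \<in> NN n \<and> b \<in> NN n \<and> a \<noteq> b \<and> K = Dl n \<union> {(a, b), (b, a)})"

definition big :: "(nat \<times> nat) set \<Rightarrow> bool" where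
  "big K \<longleftrightarrow> (\<exists>a b c d. (a, b) \<in> K \<and> (c, d) \<in> K \<and> a \<noteq> b \<and> c \<noteq> d \<and> {a, b} \<noteq> {c, d})"

lemma Dl_equiv: "equiv (NN n) (Dl n)"
  by (rule equivI) (auto simp: refl_on_def sym_def trans_def)

lemma atom_equiv: "atom n K \<Longrightarrow> equiv (NN n) K"
  unfolding atom_def by (rule equivI) (auto simp: refl_on_def sym_def trans_def)

lemma nonbig_atom:
  assumes K: "equiv (NN n) K" and nd: "K \<noteq> Dl n" and nb: "\<not> big K"
  shows "atom n K"
proof -
  have sub: "K \<subseteq> NN n \<times> NN n" and rf: "Dl n \<subseteq> K" using K unfolding equiv_def refl_on_def by auto
  obtain a b where ab: "(a, b) \<in> K" "a \<noteq> b"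
  proof -
    have "\<not> K \<subseteq> Dl n" using nd rf by blast
    then obtain x where "x \<in> K" "x \<notin> Dl n" by blast
    then show ?thesis using that sub by (cases x) auto
  qed
  have N: "a \<in> NN n" "b \<in> NN n" using ab sub by auto
  have ba: "(b, a) \<in> K" using K ab unfolding equiv_def sym_def by blast
  have "K = Dl n \<union> {(a, b), (b, a)}"
  proof (intro equalityI subsetI)
    fix x assume x: "x \<in> K"
    obtain c d where cd: "x = (c, d)" by force
    show "x \<in> Dl n \<union> {(a, b), (b, a)}"
    proof (cases "c = d")
      case True then show ?thesis using x sub cd by auto
    next
      case False
      then have "{a, b} = {c, d}" using nb ab x cd unfolding big_def by blast
      then show ?thesis using cd by (auto simp: doubleton_eq_iff)
    qed
  next
    fix x assume "x \<in> Dl n \<union> {(a, b), (b, a)}"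
    then show "x \<in> K" using rf ab ba by blast
  qed
  then show ?thesis using N ab(2) unfolding atom_def by blast
qed

lemma atom_not_big: "atom n K \<Longrightarrow> \<not> big K"
  unfolding atom_def big_def by (auto simp: doubleton_eq_iff)

lemma atom_nonDl: "atom n K \<Longrightarrow> K \<noteq> Dl n"
  unfolding atom_def by auto

lemma big_mono: "big K \<Longrightarrow> K \<subseteq> K' \<Longrightarrow> big K'"
  unfolding big_def by blast

lemma fin_quot: "equiv (NN n) K \<Longrightarrow> finite (NN n // K)"
  by (rule finite_quotient) (auto simp: equiv_def)

lemma class_fin: "equiv (NN n) K \<Longrightarrow> C \<in> NN n // K \<Longrightarrow> finite C \<and> 1 \<le> card C"
proof -
  assume K: "equiv (NN n) K" and C: "C \<in> NN n // K"
  have "C \<subseteq> NN n" using C K unfolding quotient_def equiv_def by auto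
  then have f: "finite C" by (rule finite_subset) simp
  have "C \<noteq> {}" using in_quotient_imp_non_empty[OF K C] .
  then show ?thesis using f by (simp add: Suc_le_eq card_gt_0_iff)
qed

lemma sum_classes: "equiv (NN n) K \<Longrightarrow> (\<Sum>C\<in>NN n // K. card C) = n"
  using product_partition[OF partition_on_quotient, of "NN n" K] class_fin by simp

lemma card_classes:
  assumes K: "equiv (NN n) K"
  shows "card (NN n // K) + (\<Sum>C\<in>NN n // K. card C - 1) = n"
proof -
  have fin: "finite (NN n // K)" by (rule fin_quot[OF K])
  have "(\<Sum>C\<in>NN n // K. card C) = (\<Sum>C\<in>NN n // K. (card C - 1) + 1)"
  proof (rule sum.cong)
    fix x assume "x \<in> NN n // K"
    then have "1 \<le> card x" using class_fin[OF K] by blast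
    then show "card x = card x - 1 + 1" by simp
  qed simp
  also have "\<dots> = (\<Sum>C\<in>NN n // K. card C - 1) + (\<Sum>C\<in>NN n // K. 1)"
    by (rule sum.distrib)
  also have "\<dots> = (\<Sum>C\<in>NN n // K. card C - 1) + card (NN n // K)"
    by simp
  finally show ?thesis using sum_classes[OF K] by simp
qed

lemma big_card:
  assumes K: "equiv (NN n) K" and b: "big K"
  shows "card (NN n // K) + 2 \<le> n"
proof -
  have fin: "finite (NN n // K)" by (rule fin_quot[OF K])
  obtain a b c d where abcd: "(a, b) \<in> K" "(c, d) \<in> K" "a \<noteq> b" "c \<noteq> d" "{a, b} \<noteq> {c, d}"
    using b unfolding big_def by blast
  have N: "a \<in> NN n" "c \<in> NN n" using abcd K unfolding equiv_def by auto
  let ?f = "\<lambda>C. card C - 1"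
  have cl: "K `` {a} \<in> NN n // K" "K `` {c} \<in> NN n // K" using N by (auto intro: quotientI)
  have mem: "b \<in> K `` {a}" "a \<in> K `` {a}" "d \<in> K `` {c}" "c \<in> K `` {c}"
    using abcd K N unfolding equiv_def refl_on_def by auto
  have "(\<Sum>C\<in>NN n // K. ?f C) \<ge> 2"
  proof (cases "K `` {a} = K `` {c}")
    case True
    then have "{a, b, c, d} \<subseteq> K `` {a}" using mem by auto
    moreover have "card {a, b, c, d} \<ge> 3"
    proof -
      have "c \<notin> {a, b} \<or> d \<notin> {a, b}" using abcd(4,5) by auto
      then show ?thesis using abcd(3,4)
        by (cases "c \<in> {a, b}"; cases "d \<in> {a, b}") (auto simp: card_insert_if)
    qed
    ultimately have "card (K `` {a}) \<ge> 3"
      using class_fin[OF K cl(1)] card_mono by (meson le_trans)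
    then have "?f (K `` {a}) \<ge> 2" by simp
    moreover have "?f (K `` {a}) \<le> (\<Sum>C\<in>NN n // K. ?f C)"
      by (rule member_le_sum[OF cl(1)]) (use fin in auto)
    ultimately show ?thesis by simp
  next
    case False
    have "card {a, b} \<le> card (K `` {a})" using mem class_fin[OF K cl(1)] by (intro card_mono) auto
    then have 1: "?f (K `` {a}) \<ge> 1" using abcd(3) by simp
    have "card {c, d} \<le> card (K `` {c})" using mem class_fin[OF K cl(2)] by (intro card_mono) auto
    then have 2: "?f (K `` {c}) \<ge> 1" using abcd(4) by simp
    have "(\<Sum>C\<in>{K `` {a}, K `` {c}}. ?f C) = ?f (K `` {a}) + ?f (K `` {c})" using False by simp
    moreover have "(\<Sum>C\<in>{K `` {a}, K `` {c}}. ?f C) \<le> (\<Sum>C\<in>NN n // K. ?f C)"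
      by (rule sum_mono2[OF fin]) (use cl in auto)
    ultimately show ?thesis using 1 2 by simp
  qed
  then show ?thesis using card_classes[OF K] by simp
qed

lemma Dl_classes: "NN n // Dl n = (\<lambda>i. {i}) ` NN n"
  unfolding quotient_def by auto

lemma Dl_card: "card (NN n // Dl n) = n"
  unfolding Dl_classes by (subst card_image) (auto simp: inj_on_def)

lemma atom_card:
  assumes A: "atom n K"
  shows "card (NN n // K) = n - 1"
proof -
  obtain a b where ab: "a \<in> NN n" "b \<in> NN n" "a \<noteq> b" "K = Dl n \<union> {(a, b), (b, a)}"
    using A unfolding atom_def by blast
  have K: "equiv (NN n) K" by (rule atom_equiv[OF A])
  have fin: "finite (NN n // K)" by (rule fin_quot[OF K])
  let ?f = "\<lambda>C. card C - 1"
  have ca: "K `` {a} = {a, b}" using ab by auto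
  have cl: "{a, b} \<in> NN n // K" using ca ab(1) quotientI[of a "NN n" K] by simp
  have other: "?f C = 0" if "C \<in> NN n // K - {{a, b}}" for C
  proof -
    have "C \<in> NN n // K" using that by blast
    then obtain i where i: "i \<in> NN n" "C = K `` {i}" unfolding quotient_def by blast
    have "i \<noteq> a" "i \<noteq> b" using i that ca ab by auto
    then have "C = {i}" using i ab by auto
    then show ?thesis by simp
  qed
  have "(\<Sum>C\<in>NN n // K. ?f C) = ?f {a, b} + (\<Sum>C\<in>NN n // K - {{a, b}}. ?f C)"
    by (rule sum.remove[OF fin cl])
  also have "\<dots> = 1" using other ab(3) by simp
  finally show ?thesis using card_classes[OF K] by simp
qed

lemma card_atom:
  assumes K: "equiv (NN n) K" and n: "n \<ge> 2" and c: "card (NN n // K) = n - 1"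
  shows "atom n K"
proof (rule nonbig_atom[OF K])
  show "K \<noteq> Dl n" using c Dl_card[of n] n by auto
  show "\<not> big K" using big_card[OF K] c n by fastforce
qed

lemma card_idm:
  assumes K: "equiv (NN n) K"
  shows "card (idm n K) = card (NN n // K)"
proof -
  have e: "idm n K \<in> DS n" by (rule idm_props(1)[OF K])
  have cls: "sb (idm n K) `` {p} = {0, 1} \<times> K `` {snd p}" if "p \<in> pts n" for p
    using that K unfolding idm_props(2)[OF K] equiv_def by (auto simp: pts_def)
  have "idm n K = pts n // sb (idm n K)" using D_quot[OF e] by simp
  also have "\<dots> = (\<lambda>C. {0::nat, 1} \<times> C) ` (NN n // K)"
  proof (intro equalityI subsetI)
    fix X assume "X \<in> pts n // sb (idm n K)"
    then obtain p where p: "p \<in> pts n" "X = sb (idm n K) `` {p}" by (auto elim: quotientE)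
    have "snd p \<in> NN n" using p(1) by (auto simp: pts_def)
    then have "K `` {snd p} \<in> NN n // K" by (rule quotientI)
    then show "X \<in> (\<lambda>C. {0::nat, 1} \<times> C) ` (NN n // K)" using cls[OF p(1)] p(2) by blast
  next
    fix X assume "X \<in> (\<lambda>C. {0::nat, 1} \<times> C) ` (NN n // K)"
    then obtain i where i: "i \<in> NN n" "X = {0, 1} \<times> K `` {i}" by (auto elim: quotientE)
    have p: "(0, i) \<in> pts n" using i by (auto simp: pts_def)
    have "sb (idm n K) `` {(0, i)} \<in> pts n // sb (idm n K)" by (rule quotientI[OF p])
    then show "X \<in> pts n // sb (idm n K)" using cls[OF p] i(2) by simp
  qed
  finally have eq: "idm n K = (\<lambda>C. {0::nat, 1} \<times> C) ` (NN n // K)" .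
  have "inj_on (\<lambda>C. {(0::nat), 1} \<times> C) (NN n // K)"
    by (rule inj_onI) (auto simp: times_eq_iff)
  then show ?thesis by (subst eq) (rule card_image)
qed



abbreviation SU where "SU \<equiv> sym_units"

lemma SU_DS: "SU n \<subseteq> DS n"
  using uu_props(1) by (auto simp: sym_units_uu)

lemma unit_iff: "x \<in> SU n \<longleftrightarrow> x \<in> DS n \<and> kr x = Dl n"
  using unit_char SU_DS by blast

lemma Dl_sub: "equiv (NN n) K \<Longrightarrow> Dl n \<subseteq> K"
  unfolding equiv_def refl_on_def by auto

lemma nonDl: "equiv (NN n) K \<Longrightarrow> K \<noteq> Dl n \<Longrightarrow> \<not> K \<subseteq> Dl n"
  using Dl_sub by blast

lemma unit_mult: "x \<in> SU n \<Longrightarrow> y \<in> SU n \<Longrightarrow> dmult x y \<in> SU n"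
proof -
  assume x: "x \<in> SU n" and y: "y \<in> SU n"
  have xd: "x \<in> DS n" "kr x = Dl n" and yd: "y \<in> DS n" "kr y = Dl n" using x y unit_iff by auto
  have "ck x = kr y" using kr_Dl_ck[OF xd] yd by simp
  then have "kr (dmult x y) = Dl n" using kr_ck_mult(1)[OF xd(1) yd(1)] xd by simp
  then show ?thesis using unit_iff dmult_in[OF xd(1) yd(1)] by blast
qed

lemma nonunit_mult: "x \<in> DS n - SU n \<Longrightarrow> y \<in> DS n \<Longrightarrow> dmult x y \<in> DS n - SU n"
proof -
  assume x: "x \<in> DS n - SU n" and y: "y \<in> DS n"
  have xd: "x \<in> DS n" "kr x \<noteq> Dl n" using x unit_iff by auto
  have "\<not> kr x \<subseteq> Dl n" by (rule nonDl[OF kr_equiv[OF xd(1)] xd(2)])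
  then have "\<not> kr (dmult x y) \<subseteq> Dl n" using kr_mono[OF xd(1) y] by blast
  then show ?thesis using unit_iff dmult_in[OF xd(1) y] by auto
qed

lemma kr_pow: "a \<in> DS n \<Longrightarrow> 1 \<le> k \<Longrightarrow> kr a \<subseteq> kr (dpow a k)"
proof (induction k)
  case 0 then show ?case by simp
next
  case (Suc k)
  show ?case
  proof (cases "k = 0")
    case True then show ?thesis by simp
  next
    case False
    then have "dpow a (Suc k) = dmult a (dpow a k)" using dpow_Suc_left[OF Suc(2)] by simp
    then show ?thesis using kr_mono[OF Suc(2) dpow_in[OF Suc(2)]] False by simp
  qed
qed

lemma ck_pow: "a \<in> DS n \<Longrightarrow> 1 \<le> k \<Longrightarrow> ck a \<subseteq> ck (dpow a k)"
proof (induction k)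
  case 0 then show ?case by simp
next
  case (Suc k)
  show ?case
  proof (cases "k = 0")
    case True then show ?thesis by simp
  next
    case False
    then have "dpow a (Suc k) = dmult (dpow a k) a" using dpow_Suc by simp
    then show ?thesis using ck_mono[OF dpow_in[OF Suc(2)] Suc(2)] False by simp
  qed
qed

lemma unit_pow: "a \<in> SU n \<Longrightarrow> 1 \<le> k \<Longrightarrow> dpow a k \<in> SU n"
proof (induction k)
  case 0 then show ?case by simp
next
  case (Suc k)
  then show ?case by (cases "k = 0") (auto simp: dpow_Suc unit_mult)
qed

lemma nonunit_pow: "a \<in> DS n - SU n \<Longrightarrow> 1 \<le> k \<Longrightarrow> dpow a k \<in> DS n - SU n"
proof -
  assume a: "a \<in> DS n - SU n" and k: "1 \<le> k"
  have ad: "a \<in> DS n" "kr a \<noteq> Dl n" using a unit_iff by auto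
  have "\<not> kr a \<subseteq> Dl n" by (rule nonDl[OF kr_equiv[OF ad(1)] ad(2)])
  then have "\<not> kr (dpow a k) \<subseteq> Dl n" using kr_pow[OF ad(1) k] by blast
  then show ?thesis using unit_iff dpow_in[OF ad(1) k] by auto
qed

lemma ss_pow: "subsemigroup n T \<Longrightarrow> a \<in> T \<Longrightarrow> 1 \<le> k \<Longrightarrow> dpow a k \<in> T"
proof (induction k)
  case 0 then show ?case by simp
next
  case (Suc k)
  then show ?case by (cases "k = 0") (auto simp: dpow_Suc subsemigroup_def)
qed

lemma ss_sub: "subsemigroup n T \<Longrightarrow> T \<subseteq> DS n"
  by (simp add: subsemigroup_def)

lemma ss_mult: "subsemigroup n T \<Longrightarrow> a \<in> T \<Longrightarrow> b \<in> T \<Longrightarrow> dmult a b \<in> T"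
  by (simp add: subsemigroup_def)

lemma iso_root: "isolated n T \<Longrightarrow> a \<in> DS n \<Longrightarrow> 1 \<le> k \<Longrightarrow> dpow a k \<in> T \<Longrightarrow> a \<in> T"
  by (simp add: isolated_def)

lemma iso_sq: "isolated n T \<Longrightarrow> a \<in> DS n \<Longrightarrow> dmult a a \<in> T \<Longrightarrow> a \<in> T"
  using iso_root[of n T a 2] by (simp add: dpow_2)

lemma idem_power:
  assumes a: "a \<in> DS n"
  obtains m where "m \<ge> 2" "dpow a m = idm n (kr (dpow a m))"
proof -
  obtain m where m: "m \<ge> 2" "idem (dpow a m)" using idem_pow[OF a] by blast
  have "dpow a m \<in> DS n" using dpow_in[OF a] m by simp
  then show ?thesis using that m idem_is_idm by blast
qed

lemma unit_idem: "e \<in> SU n \<Longrightarrow> e = idm n (kr e) \<Longrightarrow> e = idm n (Dl n)"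
  using unit_iff by auto

lemma units_all:
  assumes ss: "subsemigroup n T" and iso: "isolated n T" and u: "u \<in> T" "u \<in> SU n"
  shows "SU n \<subseteq> T"
proof
  obtain m where m: "m \<ge> 2" "dpow u m = idm n (kr (dpow u m))" using idem_power[OF SU_DS[THEN subsetD, OF u(2)]] by blast
  have "dpow u m \<in> SU n" using unit_pow[OF u(2)] m by simp
  then have "dpow u m = idm n (Dl n)" using unit_iff m by auto
  moreover have "dpow u m \<in> T" using ss_pow[OF ss u(1)] m by simp
  ultimately have idT: "idm n (Dl n) \<in> T" by simp
  fix v assume v: "v \<in> SU n"
  obtain m' where m': "m' \<ge> 2" "dpow v m' = idm n (kr (dpow v m'))" using idem_power[OF SU_DS[THEN subsetD, OF v]] by blast
  have "dpow v m' \<in> SU n" using unit_pow[OF v] m' by simp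
  then have "dpow v m' = idm n (Dl n)" using unit_iff m' by auto
  then show "v \<in> T" using iso_root[OF iso SU_DS[THEN subsetD, OF v], of m'] idT m' by simp
qed

subsection \<open>H-classes\<close>

lemma H_pow:
  assumes x: "x \<in> DS n" and k: "kr x = K" and c: "ck x = K" and m: "1 \<le> m"
  shows "kr (dpow x m) = K \<and> ck (dpow x m) = K"
  using m
proof (induction m)
  case 0 then show ?case by simp
next
  case (Suc m)
  show ?case
  proof (cases "m = 0")
    case True then show ?thesis using k c by simp
  next
    case False
    then have IH: "kr (dpow x m) = K" "ck (dpow x m) = K" using Suc by auto
    have e: "dpow x (Suc m) = dmult (dpow x m) x" using dpow_Suc False by simp
    have eq: "ck (dpow x m) = kr x" using IH k by simp
    show ?thesis using kr_ck_mult[OF dpow_in[OF x] x eq] IH c e False by simp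
  qed
qed

lemma H_in_T:
  assumes iso: "isolated n T" and K: "equiv (NN n) K" and e: "idm n K \<in> T"
    and x: "x \<in> DS n" "kr x = K" "ck x = K"
  shows "x \<in> T"
proof -
  obtain m where m: "m \<ge> 2" "dpow x m = idm n (kr (dpow x m))" using idem_power[OF x(1)] by blast
  have "kr (dpow x m) = K" using H_pow[OF x, of m] m by simp
  then have "dpow x m = idm n K" using m by simp
  then show ?thesis using iso_root[OF iso x(1), of m] e m by simp
qed

lemma H_mult:
  assumes x: "x \<in> DS n" "kr x = K" "ck x = K" and y: "y \<in> DS n" "kr y = K" "ck y = K"
  shows "dmult x y \<in> DS n" "kr (dmult x y) = K" "ck (dmult x y) = K"
  using dmult_in[OF x(1) y(1)] kr_ck_mult[OF x(1) y(1)] x y by auto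

lemma H_class_char:
  assumes K: "equiv (NN n) K"
  shows "H_class n (idm n K) = {x \<in> DS n. kr x = K \<and> ck x = K}"
proof -
  let ?e = "idm n K"
  have e: "?e \<in> DS n" by (rule idm_props(1)[OF K])
  have ke: "kr ?e = K" "ck ?e = K" using kr_idm[OF K] ck_idm[OF K] by auto
  show ?thesis
  proof (intro equalityI subsetI)
    fix x assume "x \<in> H_class n ?e"
    then have x: "x \<in> DS n"
      and L: "insert x {dmult s x | s. s \<in> DS n} = insert ?e {dmult s ?e | s. s \<in> DS n}"
      and R: "insert x {dmult x s | s. s \<in> DS n} = insert ?e {dmult ?e s | s. s \<in> DS n}"
      unfolding H_class_def by auto
    have "ck x \<subseteq> K"
    proof -
      have "?e \<in> insert x {dmult s x | s. s \<in> DS n}" using L by blast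
      then consider "?e = x" | s where "s \<in> DS n" "?e = dmult s x" by blast
      then show ?thesis
      proof cases
        case 1 then show ?thesis using ke by simp
      next
        case 2 then show ?thesis using ck_mono[OF 2(1) x] ke by simp
      qed
    qed
    moreover have "K \<subseteq> ck x"
    proof -
      have "x \<in> insert ?e {dmult s ?e | s. s \<in> DS n}" using L by blast
      then consider "x = ?e" | s where "s \<in> DS n" "x = dmult s ?e" by blast
      then show ?thesis
      proof cases
        case 1 then show ?thesis using ke by simp
      next
        case 2 then show ?thesis using ck_mono[OF 2(1) e] ke by simp
      qed
    qed
    moreover have "kr x \<subseteq> K"
    proof -
      have "?e \<in> insert x {dmult x s | s. s \<in> DS n}" using R by blast
      then consider "?e = x" | s where "s \<in> DS n" "?e = dmult x s" by blast
      then show ?thesis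
      proof cases
        case 1 then show ?thesis using ke by simp
      next
        case 2 then show ?thesis using kr_mono[OF x 2(1)] ke by simp
      qed
    qed
    moreover have "K \<subseteq> kr x"
    proof -
      have "x \<in> insert ?e {dmult ?e s | s. s \<in> DS n}" using R by blast
      then consider "x = ?e" | s where "s \<in> DS n" "x = dmult ?e s" by blast
      then show ?thesis
      proof cases
        case 1 then show ?thesis using ke by simp
      next
        case 2 then show ?thesis using kr_mono[OF e 2(1)] ke by simp
      qed
    qed
    ultimately show "x \<in> {x \<in> DS n. kr x = K \<and> ck x = K}" using x by auto
  next
    fix x assume "x \<in> {x \<in> DS n. kr x = K \<and> ck x = K}"
    then have x: "x \<in> DS n" "kr x = K" "ck x = K" by auto
    have r: "rvs n x \<in> DS n" by (rule rev_props(1)[OF x(1)])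
    have xe: "x = dmult x ?e" using mult_idm[OF x(1)] x(3) by simp
    have ex: "x = dmult ?e x" using idm_mult[OF x(1)] x(2) by simp
    have e1: "?e = dmult (rvs n x) x" using rev_mult[OF x(1)] x(3) by simp
    have e2: "?e = dmult x (rvs n x)" using mult_rev[OF x(1)] x(2) by simp
    have L: "insert x {dmult s x | s. s \<in> DS n} = insert ?e {dmult s ?e | s. s \<in> DS n}"
    proof (intro equalityI subsetI)
      fix z assume "z \<in> insert x {dmult s x | s. s \<in> DS n}"
      then consider "z = x" | s where "s \<in> DS n" "z = dmult s x" by blast
      then show "z \<in> insert ?e {dmult s ?e | s. s \<in> DS n}"
      proof cases
        case 1 then show ?thesis using xe x(1) by blast
      next
        case 2
        then have "z = dmult (dmult s x) ?e" using xe assoc[OF 2(1) x(1) e] by simp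
        then show ?thesis using dmult_in[OF 2(1) x(1)] by blast
      qed
    next
      fix z assume "z \<in> insert ?e {dmult s ?e | s. s \<in> DS n}"
      then consider "z = ?e" | s where "s \<in> DS n" "z = dmult s ?e" by blast
      then show "z \<in> insert x {dmult s x | s. s \<in> DS n}"
      proof cases
        case 1 then show ?thesis using e1 r by blast
      next
        case 2
        then have "z = dmult (dmult s (rvs n x)) x" using e1 assoc[OF 2(1) r x(1)] by simp
        then show ?thesis using dmult_in[OF 2(1) r] by blast
      qed
    qed
    have R: "insert x {dmult x s | s. s \<in> DS n} = insert ?e {dmult ?e s | s. s \<in> DS n}"
    proof (intro equalityI subsetI)
      fix z assume "z \<in> insert x {dmult x s | s. s \<in> DS n}"
      then consider "z = x" | s where "s \<in> DS n" "z = dmult x s" by blast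
      then show "z \<in> insert ?e {dmult ?e s | s. s \<in> DS n}"
      proof cases
        case 1 then show ?thesis using ex x(1) by blast
      next
        case 2
        then have "z = dmult ?e (dmult x s)" using ex assoc[OF e x(1) 2(1)] by simp
        then show ?thesis using dmult_in[OF x(1) 2(1)] by blast
      qed
    next
      fix z assume "z \<in> insert ?e {dmult ?e s | s. s \<in> DS n}"
      then consider "z = ?e" | s where "s \<in> DS n" "z = dmult ?e s" by blast
      then show "z \<in> insert x {dmult x s | s. s \<in> DS n}"
      proof cases
        case 1 then show ?thesis using e2 r by blast
      next
        case 2
        then have "z = dmult x (dmult (rvs n x) s)" using e2 assoc[OF x(1) r 2(1)] by simp
        then show ?thesis using dmult_in[OF r 2(1)] by blast
      qed
    qed
    show "x \<in> H_class n ?e" unfolding H_class_def using x(1) L R by blast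
  qed
qed



lemma elt_cong:
  assumes "\<And>i. i \<in> NN n \<Longrightarrow> \<sigma> i = \<sigma>' i"
  shows "elt n A \<sigma> = elt n A \<sigma>'"
proof -
  have "kerf n (\<lambda>p. A `` {arg \<sigma> p}) = kerf n (\<lambda>p. A `` {arg \<sigma>' p})"
    unfolding kerf_def using assms by (auto dest!: pts_cases simp: pts_def)
  then show ?thesis unfolding elt_def mkf_def by simp
qed

lemma rmap_id: "rmap id R = R"
  by (auto simp: rmap_def)

lemma rmap_invol:
  assumes "R \<subseteq> NN n \<times> NN n" "\<And>i. i \<in> NN n \<Longrightarrow> \<sigma> (\<sigma> i) = i"
  shows "rmap \<sigma> (rmap \<sigma> R) = R"
proof -
  have "rmap \<sigma> (rmap \<sigma> R) = rmap (\<sigma> \<circ> \<sigma>) R" by (rule rmap_comp)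
  also have "\<dots> = rmap id R"
  proof (rule rmap_cong)
    fix p q assume "(p, q) \<in> R"
    then show "(\<sigma> \<circ> \<sigma>) p = id p \<and> (\<sigma> \<circ> \<sigma>) q = id q" using assms by auto
  qed
  finally show ?thesis by (simp add: rmap_id)
qed

lemma invol_img: "(\<And>i. i \<in> NN n \<Longrightarrow> \<sigma> (\<sigma> i) = i) \<Longrightarrow> (\<And>i. i \<in> NN n \<Longrightarrow> \<sigma> i \<in> NN n) \<Longrightarrow> \<sigma> ` NN n = NN n"
  by (metis image_subsetI subset_antisym imageI subsetI)

lemma rmap_equiv:
  assumes R: "equiv (NN n) R" and inv: "\<And>i. i \<in> NN n \<Longrightarrow> \<sigma> (\<sigma> i) = i" and s: "\<And>i. i \<in> NN n \<Longrightarrow> \<sigma> i \<in> NN n"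
  shows "equiv (NN n) (rmap \<sigma> R)"
proof (rule equivI)
  have RN: "R \<subseteq> NN n \<times> NN n" using R by (simp add: equiv_def)
  show "rmap \<sigma> R \<subseteq> NN n \<times> NN n" using RN s by (auto simp: rmap_def)
  show "refl_on (NN n) (rmap \<sigma> R)"
    unfolding refl_on_def
  proof
    fix i assume i: "i \<in> NN n"
    have "(\<sigma> i, \<sigma> i) \<in> R" using equiv_refl[OF R s[OF i]] .
    then have "(\<sigma> (\<sigma> i), \<sigma> (\<sigma> i)) \<in> rmap \<sigma> R" by (rule rmap_mem)
    then show "(i, i) \<in> rmap \<sigma> R" using inv[OF i] by simp
  qed
  show "sym (rmap \<sigma> R)" using R unfolding equiv_def sym_def rmap_def by auto
  show "trans (rmap \<sigma> R)"
  proof (rule transI)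
    fix u v w assume "(u, v) \<in> rmap \<sigma> R" "(v, w) \<in> rmap \<sigma> R"
    then obtain u1 v1 v2 w2 where a: "(u1, v1) \<in> R" "u = \<sigma> u1" "v = \<sigma> v1"
      and b: "(v2, w2) \<in> R" "v = \<sigma> v2" "w = \<sigma> w2" by (auto simp: rmap_def)
    have "v1 \<in> NN n" "v2 \<in> NN n" using a b RN by auto
    then have "v1 = v2" using inv a(3) b(2) by metis
    then have "(u1, w2) \<in> R" using a b R unfolding equiv_def trans_def by blast
    then show "(u, w) \<in> rmap \<sigma> R" using a b rmap_mem by metis
  qed
qed

lemma trancl_equiv: "equiv N R \<Longrightarrow> R\<^sup>+ = R"
  by (simp add: equiv_def trancl_id)

lemma join_idm:
  assumes P: "equiv (NN n) P" and Q: "equiv (NN n) Q"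
  shows "dmult (idm n P) (idm n Q) = idm n ((P \<union> Q)\<^sup>+)" "equiv (NN n) ((P \<union> Q)\<^sup>+)"
proof -
  have i: "id ` NN n = NN n" by simp
  show "dmult (idm n P) (idm n Q) = idm n ((P \<union> Q)\<^sup>+)"
    unfolding idm_def using elt_mult[OF P Q i i] by (simp add: rmap_id)
  show "equiv (NN n) ((P \<union> Q)\<^sup>+)" using join_equiv[OF P, of Q] Q by (simp add: equiv_def)
qed

subsection \<open>The root trick\<close>

lemma trick:
  assumes ss: "subsemigroup n T" and iso: "isolated n T"
    and P: "equiv (NN n) P" and R: "equiv (NN n) R" and eP: "idm n P \<in> T"
    and inv: "\<And>i. i \<in> NN n \<Longrightarrow> \<sigma> (\<sigma> i) = i" and sN: "\<And>i. i \<in> NN n \<Longrightarrow> \<sigma> i \<in> NN n"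
    and J: "(R \<union> rmap \<sigma> R)\<^sup>+ = P"
  shows "idm n R \<in> T"
proof -
  have s: "\<sigma> ` NN n = NN n" by (rule invol_img[OF inv sN])
  define S where "S = rmap \<sigma> R"
  have S: "equiv (NN n) S" unfolding S_def by (rule rmap_equiv[OF R inv sN])
  have RN: "R \<subseteq> NN n \<times> NN n" using R by (simp add: equiv_def)
  have SS: "rmap \<sigma> S = R" unfolding S_def by (rule rmap_invol[OF RN inv])
  have ss_id: "elt n A (\<sigma> \<circ> \<sigma>) = idm n A" for A
    unfolding idm_def by (rule elt_cong) (simp add: inv)
  let ?y = "elt n R \<sigma>" and ?z = "elt n S \<sigma>"
  have y: "?y \<in> DS n" by (rule elt_props(1)[OF R s])
  have z: "?z \<in> DS n" by (rule elt_props(1)[OF S s])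
  have "dmult ?y ?y = idm n P" using elt_mult[OF R R s s] J ss_id by simp
  then have yT: "?y \<in> T" using iso_sq[OF iso y] eP by simp
  have "(S \<union> rmap \<sigma> S)\<^sup>+ = P" using J SS unfolding S_def by (simp add: Un_commute)
  then have "dmult ?z ?z = idm n P" using elt_mult[OF S S s s] ss_id by simp
  then have zT: "?z \<in> T" using iso_sq[OF iso z] eP by simp
  have "dmult ?y ?z = idm n ((R \<union> R)\<^sup>+)" using elt_mult[OF R S s s] SS ss_id by simp
  also have "\<dots> = idm n R" using trancl_equiv[OF R] by simp
  finally show ?thesis using ss_mult[OF ss yT zT] by simp
qed

lemma equiv_class_mem: "equiv N P \<Longrightarrow> w \<in> N \<Longrightarrow> i \<in> P `` {w} \<Longrightarrow> j \<in> P `` {w} \<Longrightarrow> (i, j) \<in> P"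
  unfolding equiv_def sym_def trans_def by blast

lemma split_class:
  assumes ss: "subsemigroup n T" and iso: "isolated n T"
    and P: "equiv (NN n) P" and eP: "idm n P \<in> T"
    and w: "w \<in> NN n" and W: "W = P `` {w}" and W1: "W1 \<subseteq> W"
    and x: "x \<in> W1" and x': "x' \<in> W1" and xx: "x \<noteq> x'" and y: "y \<in> W" "y \<notin> W1"
  shows "idm n {(i, j). (i, j) \<in> P \<and> (i \<in> W1 \<longleftrightarrow> j \<in> W1)} \<in> T"
proof -
  define R where "R = {(i, j). (i, j) \<in> P \<and> (i \<in> W1 \<longleftrightarrow> j \<in> W1)}"
  have PN: "P \<subseteq> NN n \<times> NN n" using P by (simp add: equiv_def)
  have WN: "W \<subseteq> NN n" using W PN by auto
  have inW: "(i, j) \<in> P" if "i \<in> W" "j \<in> W" for i j using equiv_class_mem[OF P w] that W by simp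
  have cls: "j \<in> W" if "i \<in> W" "(i, j) \<in> P" for i j
    using that W P unfolding equiv_def trans_def by blast
  have R: "equiv (NN n) R"
  proof (rule equivI)
    show "R \<subseteq> NN n \<times> NN n" using PN unfolding R_def by auto
    show "refl_on (NN n) R" using P unfolding R_def equiv_def refl_on_def by auto
    show "sym R" using P unfolding R_def equiv_def sym_def by auto
    show "trans R" using P unfolding R_def equiv_def trans_def by blast
  qed
  define \<sigma> where "\<sigma> = sw x y"
  have xN: "x \<in> NN n" "y \<in> NN n" "x' \<in> NN n" using x x' y W1 WN by auto
  have inv: "\<sigma> (\<sigma> i) = i" for i by (auto simp: \<sigma>_def sw_def)
  have sN: "\<sigma> i \<in> NN n" if "i \<in> NN n" for i using that xN by (auto simp: \<sigma>_def sw_def)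
  have xy: "x \<noteq> y" "x' \<noteq> y" using x x' y by auto
  have sx: "\<sigma> x = y" "\<sigma> y = x" "\<sigma> x' = x'" using xx xy by (auto simp: \<sigma>_def sw_def)
  have move: "(u, \<sigma> u) \<in> P" if "u \<in> NN n" for u
  proof (cases "u = x \<or> u = y")
    case True then show ?thesis using inW x y W1 sx by auto
  next
    case False
    then have "\<sigma> u = u" by (auto simp: \<sigma>_def sw_def)
    then show ?thesis using equiv_refl[OF P that] by simp
  qed
  have J: "(R \<union> rmap \<sigma> R)\<^sup>+ = P"
  proof (intro equalityI subsetI)
    fix z assume z: "z \<in> (R \<union> rmap \<sigma> R)\<^sup>+"
    have "R \<union> rmap \<sigma> R \<subseteq> P"
    proof
      fix v assume "v \<in> R \<union> rmap \<sigma> R"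
      then show "v \<in> P"
      proof
        assume "v \<in> R" then show ?thesis unfolding R_def by auto
      next
        assume "v \<in> rmap \<sigma> R"
        then obtain u1 u2 where u: "(u1, u2) \<in> R" "v = (\<sigma> u1, \<sigma> u2)" by (auto simp: rmap_def)
        then have u': "(u1, u2) \<in> P" "u1 \<in> NN n" "u2 \<in> NN n" using PN unfolding R_def by auto
        have "(\<sigma> u1, u1) \<in> P" using move[OF u'(2)] P unfolding equiv_def sym_def by blast
        then have "(\<sigma> u1, u2) \<in> P" using u'(1) P unfolding equiv_def trans_def by blast
        then have "(\<sigma> u1, \<sigma> u2) \<in> P" using move[OF u'(3)] P unfolding equiv_def trans_def by blast
        then show ?thesis using u by simp
      qed
    qed
    then have "z \<in> P\<^sup>+" by (rule trancl_mono[OF z])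
    then show "z \<in> P" using trancl_equiv[OF P] by simp
  next
    fix z assume zP: "z \<in> P"
    obtain i j where z: "z = (i, j)" by force
    show "z \<in> (R \<union> rmap \<sigma> R)\<^sup>+"
    proof (cases "z \<in> R")
      case True then show ?thesis by (intro r_into_trancl') blast
    next
      case False
      then have ij: "(i, j) \<in> P" "\<not> (i \<in> W1 \<longleftrightarrow> j \<in> W1)" using zP z unfolding R_def by auto
      have iW: "i \<in> W" "j \<in> W"
      proof -
        have "i \<in> W \<or> j \<in> W" using ij(2) W1 by auto
        then show "i \<in> W" "j \<in> W"
          using cls ij(1) P unfolding equiv_def sym_def by blast+
      qed
      have xxR: "(x', x) \<in> R" "(x, x') \<in> R" using inW x x' W1 unfolding R_def by auto
      have sR1: "(x', y) \<in> rmap \<sigma> R" using rmap_mem[OF xxR(1), of \<sigma>] sx by simp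
      have sR2: "(y, x') \<in> rmap \<sigma> R" using rmap_mem[OF xxR(2), of \<sigma>] sx by simp
      show ?thesis
      proof (cases "i \<in> W1")
        case True
        then have jn: "j \<notin> W1" using ij(2) by simp
        have 1: "(i, x') \<in> R" using inW True x' W1 unfolding R_def by auto
        have 2: "(y, j) \<in> R" using inW y iW jn unfolding R_def by auto
        have "(i, x') \<in> (R \<union> rmap \<sigma> R)\<^sup>+" "(x', y) \<in> (R \<union> rmap \<sigma> R)\<^sup>+" "(y, j) \<in> (R \<union> rmap \<sigma> R)\<^sup>+"
          using 1 2 sR1 by (blast intro: r_into_trancl')+
        then show ?thesis using z by (meson trancl_trans)
      next
        case False
        then have jn: "j \<in> W1" using ij(2) by simp
        have 1: "(i, y) \<in> R" using inW y iW False unfolding R_def by auto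
        have 2: "(x', j) \<in> R" using inW jn x' W1 unfolding R_def by auto
        have "(i, y) \<in> (R \<union> rmap \<sigma> R)\<^sup>+" "(y, x') \<in> (R \<union> rmap \<sigma> R)\<^sup>+" "(x', j) \<in> (R \<union> rmap \<sigma> R)\<^sup>+"
          using 1 2 sR2 by (blast intro: r_into_trancl')+
        then show ?thesis using z by (meson trancl_trans)
      qed
    qed
  qed
  show ?thesis using trick[OF ss iso P R eP inv sN J] unfolding R_def .
qed



lemma two_pairs:
  assumes ss: "subsemigroup n T" and iso: "isolated n T"
    and P: "equiv (NN n) P" and eP: "idm n P \<in> T"
    and N: "a \<in> NN n" "b \<in> NN n" "c \<in> NN n" "d \<in> NN n"
    and dist: "a \<noteq> b" "a \<noteq> c" "a \<noteq> d" "b \<noteq> c" "b \<noteq> d" "c \<noteq> d"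
    and A: "P `` {a} = {a, b}" and B: "P `` {c} = {c, d}"
  shows "idm n (P - {(a, b), (b, a)}) \<in> T"
proof -
  define R where "R = P - {(a, b), (b, a)}"
  have PN: "P \<subseteq> NN n \<times> NN n" using P by (simp add: equiv_def)
  have Psym: "(u, v) \<in> P \<Longrightarrow> (v, u) \<in> P" for u v using P unfolding equiv_def sym_def by blast
  have Ptr: "(u, v) \<in> P \<Longrightarrow> (v, w) \<in> P \<Longrightarrow> (u, w) \<in> P" for u v w using P unfolding equiv_def trans_def by blast
  have clsA: "(u, v) \<in> P \<Longrightarrow> u \<in> {a, b} \<Longrightarrow> v \<in> {a, b}" for u v
  proof -
    assume uv: "(u, v) \<in> P" and u: "u \<in> {a, b}"
    have "(a, u) \<in> P" using u A by auto
    then have "(a, v) \<in> P" using Ptr uv by blast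
    then show "v \<in> {a, b}" using A by auto
  qed
  have clsB: "(u, v) \<in> P \<Longrightarrow> u \<in> {c, d} \<Longrightarrow> v \<in> {c, d}" for u v
  proof -
    assume uv: "(u, v) \<in> P" and u: "u \<in> {c, d}"
    have "(c, u) \<in> P" using u B by auto
    then have "(c, v) \<in> P" using Ptr uv by blast
    then show "v \<in> {c, d}" using B by auto
  qed
  have ab: "(a, b) \<in> P" "(b, a) \<in> P" using A Psym by auto
  have cd: "(c, d) \<in> P" "(d, c) \<in> P" using B Psym by auto
  have R: "equiv (NN n) R"
  proof (rule equivI)
    show "R \<subseteq> NN n \<times> NN n" using PN unfolding R_def by auto
    show "refl_on (NN n) R" using P dist unfolding R_def equiv_def refl_on_def by auto
    show "sym R" using Psym unfolding R_def sym_def by auto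
    show "trans R"
    proof (rule transI)
      fix u v w assume uv: "(u, v) \<in> R" and vw: "(v, w) \<in> R"
      have uw: "(u, w) \<in> P" using uv vw Ptr unfolding R_def by blast
      have "(u, w) \<notin> {(a, b), (b, a)}"
      proof
        assume "(u, w) \<in> {(a, b), (b, a)}"
        then have "u \<in> {a, b}" "w \<in> {a, b}" "u \<noteq> w" using dist by auto
        moreover have "v \<in> {a, b}" using clsA uv \<open>u \<in> {a, b}\<close> unfolding R_def by blast
        ultimately show False using uv vw unfolding R_def by auto
      qed
      then show "(u, w) \<in> R" using uw unfolding R_def by blast
    qed
  qed
  define \<sigma> where "\<sigma> t = (if t = a then c else if t = c then a else if t = b then d else if t = d then b else t)" for t
  have inv: "\<sigma> (\<sigma> i) = i" for i using dist by (auto simp: \<sigma>_def)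
  have sN: "\<sigma> i \<in> NN n" if "i \<in> NN n" for i using that N by (auto simp: \<sigma>_def)
  have pres: "(\<sigma> u, \<sigma> v) \<in> P" if uv: "(u, v) \<in> P" for u v
  proof (cases "u \<in> {a, b}")
    case True
    then have "v \<in> {a, b}" using clsA uv by blast
    then have "\<sigma> u \<in> {c, d}" "\<sigma> v \<in> {c, d}" using True dist by (auto simp: \<sigma>_def)
    then show ?thesis using cd equiv_refl[OF P] N by auto
  next
    case F1: False
    show ?thesis
    proof (cases "u \<in> {c, d}")
      case True
      then have "v \<in> {c, d}" using clsB uv by blast
      then have "\<sigma> u \<in> {a, b}" "\<sigma> v \<in> {a, b}" using True dist by (auto simp: \<sigma>_def)
      then show ?thesis using ab equiv_refl[OF P] N by auto
    next
      case False
      have "v \<notin> {a, b}" using clsA Psym uv F1 by blast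
      moreover have "v \<notin> {c, d}" using clsB Psym uv False by blast
      ultimately have "\<sigma> u = u" "\<sigma> v = v" using F1 False by (auto simp: \<sigma>_def)
      then show ?thesis using uv by simp
    qed
  qed
  have J: "(R \<union> rmap \<sigma> R)\<^sup>+ = P"
  proof (intro equalityI subsetI)
    fix z assume z: "z \<in> (R \<union> rmap \<sigma> R)\<^sup>+"
    have "R \<union> rmap \<sigma> R \<subseteq> P"
    proof
      fix v assume "v \<in> R \<union> rmap \<sigma> R"
      then show "v \<in> P"
      proof
        assume "v \<in> R" then show ?thesis unfolding R_def by auto
      next
        assume "v \<in> rmap \<sigma> R"
        then obtain u1 u2 where u: "(u1, u2) \<in> R" "v = (\<sigma> u1, \<sigma> u2)" by (auto simp: rmap_def)
        then show ?thesis using pres unfolding R_def by auto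
      qed
    qed
    then have "z \<in> P\<^sup>+" by (rule trancl_mono[OF z])
    then show "z \<in> P" using trancl_equiv[OF P] by simp
  next
    fix z assume zP: "z \<in> P"
    show "z \<in> (R \<union> rmap \<sigma> R)\<^sup>+"
    proof (cases "z \<in> R")
      case True then show ?thesis by (intro r_into_trancl') blast
    next
      case False
      then have "z = (a, b) \<or> z = (b, a)" using zP unfolding R_def by auto
      moreover have "(c, d) \<in> R" "(d, c) \<in> R" using cd dist unfolding R_def by auto
      moreover have "\<sigma> c = a" "\<sigma> d = b" using dist by (auto simp: \<sigma>_def)
      ultimately have "z \<in> rmap \<sigma> R" using rmap_mem by metis
      then show ?thesis by (intro r_into_trancl') blast
    qed
  qed
  show ?thesis using trick[OF ss iso P R eP inv sN J] unfolding R_def .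
qed

lemma merge:
  assumes ss: "subsemigroup n T" and iso: "isolated n T"
    and P: "equiv (NN n) P" and R: "equiv (NN n) R" and eP: "idm n P \<in> T" and eR: "idm n R \<in> T"
    and RP: "R \<subseteq> P" and N: "x \<in> NN n" "x' \<in> NN n" "y \<in> NN n"
    and xx: "(x, x') \<in> P" "(x, x') \<notin> R" and xy: "(x, y) \<notin> P"
  shows "\<exists>Q. equiv (NN n) Q \<and> idm n Q \<in> T \<and> P \<subset> Q"
proof -
  define X where "X = R `` {x}"
  define Y where "Y = R `` {y}"
  define swp where "swp Z = (if Z = X then Y else if Z = Y then X else Z)" for Z
  define \<kappa> where "\<kappa> = (\<lambda>(t::nat, i). if t = 0 then R `` {i} else swp (R `` {i}))"
  have k0: "\<kappa> (0, i) = R `` {i}" for i by (simp add: \<kappa>_def)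
  have k1: "\<kappa> (1, i) = swp (R `` {i})" "\<kappa> (Suc 0, i) = swp (R `` {i})" for i by (simp_all add: \<kappa>_def)
  have Psym: "(u, v) \<in> P \<Longrightarrow> (v, u) \<in> P" for u v using P unfolding equiv_def sym_def by blast
  have Ptr: "(u, v) \<in> P \<Longrightarrow> (v, w) \<in> P \<Longrightarrow> (u, w) \<in> P" for u v w using P unfolding equiv_def trans_def by blast
  have XY: "X \<noteq> Y"
  proof
    assume "X = Y"
    then have "(x, y) \<in> R" using eq_equiv_class_iff[OF R N(1) N(3)] unfolding X_def Y_def by simp
    then show False using xy RP by blast
  qed
  have swp_swp: "swp (swp Z) = Z" for Z using XY by (auto simp: swp_def)
  have swpX: "swp X = Y" and swpY: "swp Y = X" using XY by (auto simp: swp_def)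
  have x'X: "R `` {x'} \<noteq> X"
  proof
    assume "R `` {x'} = X"
    then have "(x', x) \<in> R" using eq_equiv_class_iff[OF R N(2) N(1)] unfolding X_def by simp
    then show False using xx(2) R unfolding equiv_def sym_def by blast
  qed
  have x'Y: "R `` {x'} \<noteq> Y"
  proof
    assume "R `` {x'} = Y"
    then have "(x', y) \<in> R" using eq_equiv_class_iff[OF R N(2) N(3)] unfolding Y_def by simp
    then have "(x', y) \<in> P" using RP by blast
    then show False using xy xx(1) Ptr by blast
  qed
  have swpx': "swp (R `` {x'}) = R `` {x'}" using x'X x'Y by (simp add: swp_def)
  have c1: "\<exists>j\<in>NN n. \<kappa> (1, j) = \<kappa> (0, i)" if i: "i \<in> NN n" for i
  proof -
    consider "R `` {i} = X" | "R `` {i} = Y" | "R `` {i} \<noteq> X" "R `` {i} \<noteq> Y" by blast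
    then show ?thesis
    proof cases
      case 1 then show ?thesis using N(3) swpY unfolding Y_def by (intro bexI[of _ y]) (auto simp: k0 k1)
    next
      case 2 then show ?thesis using N(1) swpX unfolding X_def by (intro bexI[of _ x]) (auto simp: k0 k1)
    next
      case 3 then show ?thesis using i by (intro bexI[of _ i]) (auto simp: k0 k1 swp_def)
    qed
  qed
  have c2: "\<exists>i\<in>NN n. \<kappa> (0, i) = \<kappa> (1, j)" if j: "j \<in> NN n" for j
  proof -
    consider "R `` {j} = X" | "R `` {j} = Y" | "R `` {j} \<noteq> X" "R `` {j} \<noteq> Y" by blast
    then show ?thesis
    proof cases
      case 1 then show ?thesis using N(3) swpX unfolding Y_def by (intro bexI[of _ y]) (auto simp: k0 k1)
    next
      case 2 then show ?thesis using N(1) swpY unfolding X_def by (intro bexI[of _ x]) (auto simp: k0 k1)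
    next
      case 3 then show ?thesis using j by (intro bexI[of _ j]) (auto simp: k0 k1 swp_def)
    qed
  qed
  define h where "h = mkf n \<kappa>"
  have h: "h \<in> DS n" unfolding h_def by (rule mkf(1)[OF c1 c2])
  have hsb: "sb h = kerf n \<kappa>" unfolding h_def by (rule mkf(2)[OF c1 c2])
  have hsbI: "(p, q) \<in> sb h" if "p \<in> pts n" "q \<in> pts n" "\<kappa> p = \<kappa> q" for p q
    using that hsb by (simp add: kerf_def)
  have krh: "kr h = R"
  proof (intro equalityI subsetI)
    fix z assume "z \<in> kr h"
    then obtain i j where z: "z = (i, j)" "((0, i), (0, j)) \<in> kerf n \<kappa>" by (auto simp: kr_def hsb)
    then have "i \<in> NN n" "j \<in> NN n" "R `` {i} = R `` {j}" by (auto simp: kerf_def pts_def k0)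
    then show "z \<in> R" using eq_equiv_class_iff[OF R] z by simp
  next
    fix z assume zR: "z \<in> R"
    obtain i j where z: "z = (i, j)" by force
    have "i \<in> NN n" "j \<in> NN n" using zR z R by (auto simp: equiv_def)
    moreover have "R `` {i} = R `` {j}" using zR z equiv_class_eq[OF R] by simp
    ultimately show "z \<in> kr h" using z by (auto simp: kr_def hsb kerf_def pts_def k0)
  qed
  have ckh: "ck h = R"
  proof (intro equalityI subsetI)
    fix z assume "z \<in> ck h"
    then obtain i j where z: "z = (i, j)" "((1, i), (1, j)) \<in> kerf n \<kappa>" by (auto simp: ck_def hsb)
    then have "i \<in> NN n" "j \<in> NN n" "swp (R `` {i}) = swp (R `` {j})" by (auto simp: kerf_def pts_def k1)
    then have "i \<in> NN n" "j \<in> NN n" "R `` {i} = R `` {j}" using swp_swp by metis+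
    then show "z \<in> R" using eq_equiv_class_iff[OF R] z by simp
  next
    fix z assume zR: "z \<in> R"
    obtain i j where z: "z = (i, j)" by force
    have "i \<in> NN n" "j \<in> NN n" using zR z R by (auto simp: equiv_def)
    moreover have "R `` {i} = R `` {j}" using zR z equiv_class_eq[OF R] by simp
    ultimately show "z \<in> ck h" using z by (auto simp: ck_def hsb kerf_def pts_def k1)
  qed
  have hT: "h \<in> T" by (rule H_in_T[OF iso R eR h krh ckh])
  have e: "idm n P \<in> DS n" by (rule idm_props(1)[OF P])
  define w where "w = dmult (idm n P) h"
  have w: "w \<in> DS n" unfolding w_def by (rule dmult_in[OF e h])
  have wT: "w \<in> T" unfolding w_def by (rule ss_mult[OF ss eP hT])
  have esb: "((0, i), (1, j)) \<in> sb (idm n P)" if "(i, j) \<in> P" for i j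
    using that idm_props(2)[OF P] P by (auto simp: pts_def equiv_def)
  have F1: "((0, x'), (1, x')) \<in> sb w"
  proof -
    have "((0, x'), (1, x')) \<in> sb (idm n P)" using esb equiv_refl[OF P N(2)] by blast
    then have 1: "((0, x'), (2, x')) \<in> (GG (idm n P) h)\<^sup>*" using GG_L'[of "(0, x')" "(1, x')"] by simp
    have "((0, x'), (1, x')) \<in> sb h" using hsbI N(2) swpx' by (simp add: pts_def k0 k1)
    then have 2: "((2, x'), (1, x')) \<in> (GG (idm n P) h)\<^sup>*" using GG_R'[of "(0, x')" "(1, x')"] by simp
    show ?thesis unfolding w_def using PATH[OF e h _ _ rtrancl_trans[OF 1 2]] N(2) by (simp add: pts_def)
  qed
  have krw: "P \<subseteq> kr w" using kr_mono[OF e h] kr_idm[OF P] unfolding w_def by simp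
  have F2: "((0, x'), (0, x)) \<in> sb w" using krw xx(1) Psym by (auto simp: kr_def)
  have F3: "((0, y), (1, x)) \<in> sb w"
  proof -
    have "((0, y), (1, y)) \<in> sb (idm n P)" using esb equiv_refl[OF P N(3)] by blast
    then have 1: "((0, y), (2, y)) \<in> (GG (idm n P) h)\<^sup>*" using GG_L'[of "(0, y)" "(1, y)"] by simp
    have "\<kappa> (0, y) = \<kappa> (1, x)" using swpX unfolding X_def Y_def by (simp add: k0 k1)
    then have "((0, y), (1, x)) \<in> sb h" using hsbI N by (simp add: pts_def)
    then have 2: "((2, y), (1, x)) \<in> (GG (idm n P) h)\<^sup>*" using GG_R'[of "(0, y)" "(1, x)"] by simp
    show ?thesis unfolding w_def using PATH[OF e h _ _ rtrancl_trans[OF 1 2]] N by (simp add: pts_def)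
  qed
  have ww: "(x', y) \<in> kr (dmult w w)"
  proof -
    have 1: "((0, x'), (2, x')) \<in> (GG w w)\<^sup>*" using GG_L'[OF F1, of w] by simp
    have 2: "((2, x'), (2, x)) \<in> (GG w w)\<^sup>*" using GG_R'[OF F2, of w] by simp
    have 3: "((2, x), (0, y)) \<in> (GG w w)\<^sup>*" using GG_L'[OF sb_sym[OF F3], of w] by simp
    have "((0, x'), (0, y)) \<in> sb (dmult w w)"
      using PATH[OF w w _ _ rtrancl_trans[OF rtrancl_trans[OF 1 2] 3]] N by (simp add: pts_def)
    then show ?thesis by (simp add: kr_def)
  qed
  obtain m where m: "m \<ge> 2" "dpow w m = idm n (kr (dpow w m))" using idem_power[OF w] by blast
  define Q where "Q = kr (dpow w m)"
  have wm: "dpow w m \<in> DS n" using dpow_in[OF w] m by simp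
  have Q: "equiv (NN n) Q" unfolding Q_def by (rule kr_equiv[OF wm])
  have wwQ: "kr (dmult w w) \<subseteq> Q"
  proof (cases "m = 2")
    case True then show ?thesis unfolding Q_def by (simp add: dpow_2)
  next
    case False
    then have m2: "m = 2 + (m - 2)" "1 \<le> m - 2" using m by auto
    have "dpow w (2 + (m - 2)) = dmult (dpow w 2) (dpow w (m - 2))" using dpow_add[OF w _ m2(2), of 2] by simp
    then have "dpow w m = dmult (dpow w 2) (dpow w (m - 2))" using m2(1) by simp
    then show ?thesis unfolding Q_def using kr_mono[OF dpow_in[OF w] dpow_in[OF w], of 2 "m - 2"] m False
      by (simp add: dpow_2)
  qed
  have PQ: "P \<subseteq> Q" using krw kr_mono[OF w w] wwQ by blast
  have "(x', y) \<notin> P" using xy xx(1) Ptr by blast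
  then have "P \<subset> Q" using PQ ww wwQ by blast
  moreover have "idm n Q \<in> T" using ss_pow[OF ss wT, of m] m unfolding Q_def by simp
  ultimately show ?thesis using Q by blast
qed



lemma split_equiv:
  assumes P: "equiv (NN n) P"
  shows "equiv (NN n) {(i, j). (i, j) \<in> P \<and> (i \<in> W1 \<longleftrightarrow> j \<in> W1)}"
proof (rule equivI)
  show "{(i, j). (i, j) \<in> P \<and> (i \<in> W1 \<longleftrightarrow> j \<in> W1)} \<subseteq> NN n \<times> NN n" using P by (auto simp: equiv_def)
  show "refl_on (NN n) {(i, j). (i, j) \<in> P \<and> (i \<in> W1 \<longleftrightarrow> j \<in> W1)}"
    using P unfolding equiv_def refl_on_def by auto
  show "sym {(i, j). (i, j) \<in> P \<and> (i \<in> W1 \<longleftrightarrow> j \<in> W1)}" using P unfolding equiv_def sym_def by auto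
  show "trans {(i, j). (i, j) \<in> P \<and> (i \<in> W1 \<longleftrightarrow> j \<in> W1)}" using P unfolding equiv_def trans_def by blast
qed

lemma tp_equiv:
  assumes P: "equiv (NN n) P" and A: "P `` {a} = {a, b}" and ab: "a \<noteq> b"
  shows "equiv (NN n) (P - {(a, b), (b, a)})"
proof (rule equivI)
  have PN: "P \<subseteq> NN n \<times> NN n" using P by (simp add: equiv_def)
  have Psym: "(u, v) \<in> P \<Longrightarrow> (v, u) \<in> P" for u v using P unfolding equiv_def sym_def by blast
  have Ptr: "(u, v) \<in> P \<Longrightarrow> (v, w) \<in> P \<Longrightarrow> (u, w) \<in> P" for u v w using P unfolding equiv_def trans_def by blast
  have clsA: "(u, v) \<in> P \<Longrightarrow> u \<in> {a, b} \<Longrightarrow> v \<in> {a, b}" for u v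
  proof -
    assume uv: "(u, v) \<in> P" and u: "u \<in> {a, b}"
    have "(a, u) \<in> P" using u A by auto
    then have "(a, v) \<in> P" using Ptr uv by blast
    then show "v \<in> {a, b}" using A by auto
  qed
  show "P - {(a, b), (b, a)} \<subseteq> NN n \<times> NN n" using PN by auto
  show "refl_on (NN n) (P - {(a, b), (b, a)})" using P ab unfolding equiv_def refl_on_def by auto
  show "sym (P - {(a, b), (b, a)})" using Psym unfolding sym_def by auto
  show "trans (P - {(a, b), (b, a)})"
  proof (rule transI)
    fix u v w assume uv: "(u, v) \<in> P - {(a, b), (b, a)}" and vw: "(v, w) \<in> P - {(a, b), (b, a)}"
    have uw: "(u, w) \<in> P" using uv vw Ptr by blast
    have "(u, w) \<notin> {(a, b), (b, a)}"
    proof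
      assume "(u, w) \<in> {(a, b), (b, a)}"
      then have "u \<in> {a, b}" "w \<in> {a, b}" "u \<noteq> w" using ab by auto
      moreover have "v \<in> {a, b}" using clsA uv \<open>u \<in> {a, b}\<close> by blast
      ultimately show False using uv vw by auto
    qed
    then show "(u, w) \<in> P - {(a, b), (b, a)}" using uw by blast
  qed
qed

lemma big_cases:
  assumes P: "equiv (NN n) P" and bg: "big P"
  shows "(\<exists>a b c. a \<noteq> b \<and> a \<noteq> c \<and> b \<noteq> c \<and> (a, b) \<in> P \<and> (a, c) \<in> P) \<or>
         (\<exists>a b c d. a \<noteq> b \<and> a \<noteq> c \<and> a \<noteq> d \<and> b \<noteq> c \<and> b \<noteq> d \<and> c \<noteq> d \<and> P `` {a} = {a, b} \<and> P `` {c} = {c, d})"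
  (is "?A \<or> ?B")
proof -
  obtain a b c d where abcd: "(a, b) \<in> P" "(c, d) \<in> P" "a \<noteq> b" "c \<noteq> d" "{a, b} \<noteq> {c, d}"
    using bg unfolding big_def by blast
  have Psym: "(u, v) \<in> P \<Longrightarrow> (v, u) \<in> P" for u v using P unfolding equiv_def sym_def by blast
  have Ptr: "(u, v) \<in> P \<Longrightarrow> (v, w) \<in> P \<Longrightarrow> (u, w) \<in> P" for u v w using P unfolding equiv_def trans_def by blast
  have Prefl: "(u, v) \<in> P \<Longrightarrow> (u, u) \<in> P" for u v using Psym Ptr by blast
  have tri: "?A" if "u \<noteq> v" "u \<noteq> w" "v \<noteq> w" "(u, v) \<in> P" "(u, w) \<in> P" for u v w
    using that by blast
  show ?thesis
  proof (cases "(a, c) \<in> P")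
    case True
    then have ad: "(a, d) \<in> P" using Ptr abcd(2) by blast
    have "c \<notin> {a, b} \<or> d \<notin> {a, b}" using abcd(4,5) by auto
    then show ?thesis
    proof
      assume "c \<notin> {a, b}" then have "?A" using tri[of a b c] abcd True by simp
      then show ?thesis ..
    next
      assume "d \<notin> {a, b}" then have "?A" using tri[of a b d] abcd ad by simp
      then show ?thesis ..
    qed
  next
    case False
    show ?thesis
    proof (cases "\<exists>e. (a, e) \<in> P \<and> e \<notin> {a, b}")
      case True
      then obtain e where "(a, e) \<in> P" "e \<notin> {a, b}" by blast
      then have "?A" using tri[of a b e] abcd by simp
      then show ?thesis ..
    next
      case nA: False
      show ?thesis
      proof (cases "\<exists>e. (c, e) \<in> P \<and> e \<notin> {c, d}")
        case True
        then obtain e where "(c, e) \<in> P" "e \<notin> {c, d}" by blast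
        then have "?A" using tri[of c d e] abcd by simp
        then show ?thesis ..
      next
        case nC: False
        have A: "P `` {a} = {a, b}" using nA abcd(1) Prefl by auto
        have C: "P `` {c} = {c, d}" using nC abcd(2) Prefl by auto
        have "a \<noteq> c" using False Prefl abcd(1) by blast
        moreover have "a \<noteq> d" using False abcd(2) Psym by blast
        moreover have "b \<noteq> c" using False abcd(1) Ptr by blast
        moreover have "b \<noteq> d" using False abcd(1,2) Ptr Psym by blast
        ultimately have "?B" using abcd(3,4) A C by blast
        then show ?thesis ..
      qed
    qed
  qed
qed

lemma not_full:
  assumes P: "equiv (NN n) P" and nf: "P \<noteq> NN n \<times> NN n" and a: "a \<in> NN n"
  shows "\<exists>v\<in>NN n. (a, v) \<notin> P"
proof (rule ccontr)
  assume "\<not> ?thesis"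
  then have all: "\<forall>v\<in>NN n. (a, v) \<in> P" by blast
  have "NN n \<times> NN n \<subseteq> P"
  proof
    fix z assume "z \<in> NN n \<times> NN n"
    then obtain i j where "z = (i, j)" "i \<in> NN n" "j \<in> NN n" by blast
    then show "z \<in> P" using all P unfolding equiv_def sym_def trans_def by blast
  qed
  then show False using nf P by (auto simp: equiv_def)
qed

lemma step:
  assumes ss: "subsemigroup n T" and iso: "isolated n T"
    and P: "equiv (NN n) P" and eP: "idm n P \<in> T" and bg: "big P" and nf: "P \<noteq> NN n \<times> NN n"
  shows "\<exists>Q. equiv (NN n) Q \<and> idm n Q \<in> T \<and> P \<subset> Q"
proof -
  have PN: "P \<subseteq> NN n \<times> NN n" using P by (simp add: equiv_def)
  have Psym: "(u, v) \<in> P \<Longrightarrow> (v, u) \<in> P" for u v using P unfolding equiv_def sym_def by blast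
  from big_cases[OF P bg] show ?thesis
  proof
    assume "\<exists>a b c. a \<noteq> b \<and> a \<noteq> c \<and> b \<noteq> c \<and> (a, b) \<in> P \<and> (a, c) \<in> P"
    then obtain a b c where abc: "a \<noteq> b" "a \<noteq> c" "b \<noteq> c" "(a, b) \<in> P" "(a, c) \<in> P" by blast
    have N: "a \<in> NN n" "b \<in> NN n" "c \<in> NN n" using abc PN by auto
    define W where "W = P `` {a}"
    define W1 where "W1 = W - {c}"
    have aW: "a \<in> W" using equiv_refl[OF P N(1)] unfolding W_def by simp
    have Rin: "idm n {(i, j). (i, j) \<in> P \<and> (i \<in> W1 \<longleftrightarrow> j \<in> W1)} \<in> T"
      by (rule split_class[OF ss iso P eP N(1) W_def, of W1 a b c])
         (use abc aW in \<open>auto simp: W1_def W_def\<close>)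
    define R where "R = {(i, j). (i, j) \<in> P \<and> (i \<in> W1 \<longleftrightarrow> j \<in> W1)}"
    have R: "equiv (NN n) R" unfolding R_def by (rule split_equiv[OF P])
    obtain v where v: "v \<in> NN n" "(a, v) \<notin> P" using not_full[OF P nf N(1)] by blast
    have "(c, v) \<notin> P"
    proof
      assume "(c, v) \<in> P"
      then have "(a, v) \<in> P" using abc(5) P unfolding equiv_def trans_def by blast
      then show False using v by simp
    qed
    moreover have "(c, a) \<in> P" using Psym abc(5) .
    moreover have "(c, a) \<notin> R" using aW abc(2) unfolding R_def W1_def by auto
    ultimately show ?thesis
      using merge[OF ss iso P R eP _ _ N(3) N(1) v(1)] Rin unfolding R_def by blast
  next
    assume "\<exists>a b c d. a \<noteq> b \<and> a \<noteq> c \<and> a \<noteq> d \<and> b \<noteq> c \<and> b \<noteq> d \<and> c \<noteq> d \<and> P `` {a} = {a, b} \<and> P `` {c} = {c, d}"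
    then obtain a b c d where abcd: "a \<noteq> b" "a \<noteq> c" "a \<noteq> d" "b \<noteq> c" "b \<noteq> d" "c \<noteq> d"
      "P `` {a} = {a, b}" "P `` {c} = {c, d}" by blast
    have ab: "(a, b) \<in> P" "(c, d) \<in> P" using abcd by auto
    have N: "a \<in> NN n" "b \<in> NN n" "c \<in> NN n" "d \<in> NN n" using ab PN by auto
    have Rin: "idm n (P - {(a, b), (b, a)}) \<in> T"
      by (rule two_pairs[OF ss iso P eP N abcd])
    have R: "equiv (NN n) (P - {(a, b), (b, a)})" by (rule tp_equiv[OF P abcd(7) abcd(1)])
    have "(a, c) \<notin> P" using abcd by auto
    then show ?thesis using merge[OF ss iso P R eP Rin _ N(1) N(2) N(3) ab(1)] by blast
  qed
qed

lemma crux: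
  assumes ss: "subsemigroup n T" and iso: "isolated n T"
  shows "equiv (NN n) P \<Longrightarrow> idm n P \<in> T \<Longrightarrow> big P \<Longrightarrow> idm n (NN n \<times> NN n) \<in> T"
proof (induction "card (NN n \<times> NN n - P)" arbitrary: P rule: less_induct)
  case less
  show ?case
  proof (cases "P = NN n \<times> NN n")
    case True then show ?thesis using less by simp
  next
    case False
    obtain Q where Q: "equiv (NN n) Q" "idm n Q \<in> T" "P \<subset> Q" using step[OF ss iso less(2-4) False] by blast
    have QN: "Q \<subseteq> NN n \<times> NN n" using Q(1) by (simp add: equiv_def)
    have "NN n \<times> NN n - Q \<subset> NN n \<times> NN n - P" using Q(3) QN by blast
    then have "card (NN n \<times> NN n - Q) < card (NN n \<times> NN n - P)" by (intro psubset_card_mono) auto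
    moreover have "big Q" using big_mono[OF less(4)] Q(3) by blast
    ultimately show ?thesis using less(1) Q by blast
  qed
qed

lemma closed_equiv:
  assumes Q: "equiv (NN n) Q" and W: "W \<subseteq> NN n" and cl: "\<And>i. i \<in> W \<Longrightarrow> Q `` {i} \<subseteq> W"
  shows "equiv (NN n) (Q \<union> W \<times> W)"
proof (rule equivI)
  have Qsym: "(u, v) \<in> Q \<Longrightarrow> (v, u) \<in> Q" for u v using Q unfolding equiv_def sym_def by blast
  show "Q \<union> W \<times> W \<subseteq> NN n \<times> NN n" using Q W by (auto simp: equiv_def)
  show "refl_on (NN n) (Q \<union> W \<times> W)" using Q unfolding equiv_def refl_on_def by auto
  show "sym (Q \<union> W \<times> W)" using Qsym unfolding sym_def by auto
  show "trans (Q \<union> W \<times> W)"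
  proof (rule transI)
    fix u v w assume uv: "(u, v) \<in> Q \<union> W \<times> W" and vw: "(v, w) \<in> Q \<union> W \<times> W"
    show "(u, w) \<in> Q \<union> W \<times> W"
    proof (cases "(u, v) \<in> Q")
      case True
      show ?thesis
      proof (cases "(v, w) \<in> Q")
        case True then show ?thesis using \<open>(u, v) \<in> Q\<close> Q unfolding equiv_def trans_def by blast
      next
        case False
        then have "v \<in> W" "w \<in> W" using vw by auto
        moreover have "u \<in> W" using cl[OF \<open>v \<in> W\<close>] Qsym[OF True] by blast
        ultimately show ?thesis by blast
      qed
    next
      case False
      then have "u \<in> W" "v \<in> W" using uv by auto
      show ?thesis
      proof (cases "(v, w) \<in> Q")
        case True
        then have "w \<in> W" using cl[OF \<open>v \<in> W\<close>] by blast
        then show ?thesis using \<open>u \<in> W\<close> by blast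
      next
        case False
        then show ?thesis using vw \<open>u \<in> W\<close> by auto
      qed
    qed
  qed
qed

lemma allQ:
  assumes ss: "subsemigroup n T" and iso: "isolated n T" and U: "idm n (NN n \<times> NN n) \<in> T"
    and Q: "equiv (NN n) Q" and nd: "Q \<noteq> Dl n"
  shows "idm n Q \<in> T"
proof -
  have QN: "Q \<subseteq> NN n \<times> NN n" using Q by (simp add: equiv_def)
  have Qsym: "(u, v) \<in> Q \<Longrightarrow> (v, u) \<in> Q" for u v using Q unfolding equiv_def sym_def by blast
  obtain a b where ab: "(a, b) \<in> Q" "a \<noteq> b"
  proof -
    have "\<not> Q \<subseteq> Dl n" using nonDl[OF Q nd] .
    then obtain z where "z \<in> Q" "z \<notin> Dl n" by blast
    then show ?thesis using that QN by (cases z) auto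
  qed
  have N: "a \<in> NN n" "b \<in> NN n" using ab QN by auto
  define C where "C = Q `` {a}"
  have aC: "a \<in> C" "b \<in> C" using ab equiv_refl[OF Q N(1)] unfolding C_def by auto
  have key: "idm n (Q \<union> W \<times> W) \<in> T"
    if "C \<subseteq> W" "W \<subseteq> NN n" "\<And>i. i \<in> W \<Longrightarrow> Q `` {i} \<subseteq> W" for W
    using that
  proof (induction "card (NN n - W)" arbitrary: W rule: less_induct)
    case less
    show ?case
    proof (cases "W = NN n")
      case True
      then have "Q \<union> W \<times> W = NN n \<times> NN n" using QN by auto
      then show ?thesis using U by simp
    next
      case False
      then obtain i where i: "i \<in> NN n" "i \<notin> W" using less(3) by blast
      define C' where "C' = Q `` {i}"
      define W' where "W' = W \<union> C'"
      have iC': "i \<in> C'" using equiv_refl[OF Q i(1)] unfolding C'_def by simp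
      have C'N: "C' \<subseteq> NN n" using QN unfolding C'_def by auto
      have disj: "C' \<inter> W = {}"
      proof (rule ccontr)
        assume "C' \<inter> W \<noteq> {}"
        then obtain j where "j \<in> C'" "j \<in> W" by blast
        then have "(j, i) \<in> Q" using Qsym unfolding C'_def by blast
        then show False using less(4)[OF \<open>j \<in> W\<close>] i(2) by blast
      qed
      have W'N: "W' \<subseteq> NN n" using less(3) C'N unfolding W'_def by blast
      have clW': "Q `` {j} \<subseteq> W'" if "j \<in> W'" for j
      proof (cases "j \<in> W")
        case True then show ?thesis using less(4) unfolding W'_def by blast
      next
        case False
        then have "j \<in> C'" using that unfolding W'_def by blast
        then have "Q `` {j} = C'" using equiv_class_eq[OF Q] Qsym unfolding C'_def by blast
        then show ?thesis unfolding W'_def by blast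
      qed
      have "NN n - W' \<subset> NN n - W" using i iC' unfolding W'_def by blast
      then have "card (NN n - W') < card (NN n - W)" by (intro psubset_card_mono) auto
      moreover have "C \<subseteq> W'" using less(2) unfolding W'_def by blast
      ultimately have IH: "idm n (Q \<union> W' \<times> W') \<in> T" using less(1) W'N clW' by blast
      define P' where "P' = Q \<union> W' \<times> W'"
      have P': "equiv (NN n) P'" unfolding P'_def by (rule closed_equiv[OF Q W'N clW'])
      have aW: "a \<in> W" using aC less(2) by blast
      have cls: "W' = P' `` {a}"
      proof -
        have "Q `` {a} \<subseteq> W'" using clW' aW unfolding W'_def by blast
        moreover have "a \<in> W'" using aW unfolding W'_def by blast
        ultimately show ?thesis unfolding P'_def by blast
      qed
      have sp: "idm n {(u, v). (u, v) \<in> P' \<and> (u \<in> W \<longleftrightarrow> v \<in> W)} \<in> T"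
        by (rule split_class[OF ss iso P' IH[folded P'_def] N(1) cls, of W a b i])
           (use aC less(2) ab(2) i iC' in \<open>auto simp: W'_def\<close>)
      have "{(u, v). (u, v) \<in> P' \<and> (u \<in> W \<longleftrightarrow> v \<in> W)} = Q \<union> W \<times> W"
      proof (intro equalityI subsetI)
        fix z assume z: "z \<in> {(u, v). (u, v) \<in> P' \<and> (u \<in> W \<longleftrightarrow> v \<in> W)}"
        obtain u v where uv: "z = (u, v)" by force
        show "z \<in> Q \<union> W \<times> W"
        proof (cases "(u, v) \<in> Q")
          case True then show ?thesis using uv by blast
        next
          case False
          then have uvW': "u \<in> W'" "v \<in> W'" "u \<in> W \<longleftrightarrow> v \<in> W" using z uv unfolding P'_def by auto
          show ?thesis
          proof (cases "u \<in> W")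
            case True then show ?thesis using uvW' uv by blast
          next
            case False
            then have "u \<in> C'" "v \<in> C'" using uvW' unfolding W'_def by auto
            then have "(u, v) \<in> Q" using Q Qsym unfolding C'_def equiv_def trans_def by blast
            then show ?thesis using uv by blast
          qed
        qed
      next
        fix z assume z: "z \<in> Q \<union> W \<times> W"
        obtain u v where uv: "z = (u, v)" by force
        show "z \<in> {(u, v). (u, v) \<in> P' \<and> (u \<in> W \<longleftrightarrow> v \<in> W)}"
        proof (cases "(u, v) \<in> Q")
          case True
          have "u \<in> W \<longleftrightarrow> v \<in> W" using less(4) True Qsym by blast
          then show ?thesis using True uv unfolding P'_def by blast
        next
          case False
          then have "u \<in> W" "v \<in> W" using z uv by auto
          then show ?thesis using uv unfolding P'_def W'_def by blast
        qed
      qed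
      then show ?thesis using sp by simp
    qed
  qed
  have "C \<subseteq> NN n" using QN unfolding C_def by auto
  moreover have "Q `` {i} \<subseteq> C" if "i \<in> C" for i
    using that equiv_class_eq[OF Q] unfolding C_def by blast
  ultimately have "idm n (Q \<union> C \<times> C) \<in> T" using key[of C] by blast
  moreover have "C \<times> C \<subseteq> Q" unfolding C_def using Q unfolding equiv_def sym_def trans_def by blast
  ultimately show ?thesis by (simp add: sup_absorb1)
qed



lemma rmap_Dl:
  assumes s: "\<sigma> ` NN n = NN n"
  shows "rmap \<sigma> (Dl n) = Dl n"
proof (intro equalityI subsetI)
  fix z assume "z \<in> rmap \<sigma> (Dl n)"
  then obtain i where "i \<in> NN n" "z = (\<sigma> i, \<sigma> i)" by (auto simp: rmap_def)
  moreover then have "\<sigma> i \<in> NN n" using s by blast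
  ultimately show "z \<in> Dl n" by auto
next
  fix z assume "z \<in> Dl n"
  then obtain x where x: "x \<in> NN n" "z = (x, x)" by blast
  then have "x \<in> \<sigma> ` NN n" using s by simp
  then obtain i where "i \<in> NN n" "x = \<sigma> i" by blast
  then have "(i, i) \<in> Dl n" "z = (\<sigma> i, \<sigma> i)" using x by auto
  then show "z \<in> rmap \<sigma> (Dl n)" using rmap_mem by metis
qed

lemma conj_atom:
  assumes ss: "subsemigroup n T" and U: "SU n \<subseteq> T"
    and N: "a \<in> NN n" "b \<in> NN n" "c \<in> NN n" and d: "a \<noteq> b" "a \<noteq> c" "b \<noteq> c"
    and e0: "idm n (Dl n \<union> {(a, b), (b, a)}) \<in> T"
  shows "idm n (Dl n \<union> {(c, b), (b, c)}) \<in> T"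
proof -
  define P0 where "P0 = Dl n \<union> {(a, b), (b, a)}"
  define P1 where "P1 = Dl n \<union> {(c, b), (b, c)}"
  have P0: "equiv (NN n) P0" unfolding P0_def by (rule atom_equiv) (use N d in \<open>auto simp: atom_def\<close>)
  have P1: "equiv (NN n) P1" unfolding P1_def by (rule atom_equiv) (use N d in \<open>auto simp: atom_def\<close>)
  define \<sigma> where "\<sigma> = sw a c"
  have inv: "\<sigma> (\<sigma> i) = i" for i by (auto simp: \<sigma>_def sw_def)
  have sN: "\<sigma> i \<in> NN n" if "i \<in> NN n" for i using that N by (auto simp: \<sigma>_def sw_def)
  have s: "\<sigma> ` NN n = NN n" by (rule invol_img[OF inv sN])
  have i: "id ` NN n = NN n" by simp
  have Dl: "equiv (NN n) (Dl n)" by (rule Dl_equiv)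
  let ?u = "elt n (Dl n) \<sigma>"
  have u: "?u \<in> DS n" by (rule elt_props(1)[OF Dl s])
  have "kr ?u = Dl n" by (rule kr_elt[OF Dl s])
  then have uT: "?u \<in> T" using U unit_iff u by blast
  have e0': "idm n P0 \<in> T" using e0 unfolding P0_def .
  have "rmap \<sigma> P0 = P1"
  proof -
    have "rmap \<sigma> P0 = rmap \<sigma> (Dl n) \<union> rmap \<sigma> {(a, b), (b, a)}" unfolding P0_def by (rule rmap_Un)
    also have "\<dots> = P1" unfolding rmap_Dl[OF s] P1_def using d by (auto simp: rmap_def \<sigma>_def sw_def)
    finally show ?thesis .
  qed
  moreover have "(Dl n \<union> P1)\<^sup>+ = P1" using trancl_equiv[OF P1] Dl_sub[OF P1] by (simp add: sup_absorb2)
  ultimately have 1: "dmult ?u (idm n P0) = elt n P1 \<sigma>"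
    unfolding idm_def using elt_mult[OF Dl P0 s i] by simp
  have "(P1 \<union> rmap \<sigma> (Dl n))\<^sup>+ = P1" using trancl_equiv[OF P1] Dl_sub[OF P1] rmap_Dl[OF s] by (simp add: sup_absorb1)
  moreover have "elt n P1 (\<sigma> \<circ> \<sigma>) = elt n P1 id" by (rule elt_cong) (simp add: inv)
  ultimately have 2: "dmult (elt n P1 \<sigma>) ?u = idm n P1"
    unfolding idm_def using elt_mult[OF P1 Dl s s] by simp
  have "elt n P1 \<sigma> \<in> T" using ss_mult[OF ss uT e0'] 1 by simp
  then have "idm n P1 \<in> T" using ss_mult[OF ss _ uT] 2 by metis
  then show ?thesis unfolding P1_def .
qed

lemma atom_min:
  assumes A: "atom n K" and Q: "equiv (NN n) Q" and sub: "Q \<subseteq> K" and nd: "Q \<noteq> Dl n"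
  shows "Q = K"
proof -
  obtain a b where ab: "a \<in> NN n" "b \<in> NN n" "a \<noteq> b" "K = Dl n \<union> {(a, b), (b, a)}"
    using A unfolding atom_def by blast
  have QN: "Q \<subseteq> NN n \<times> NN n" using Q by (simp add: equiv_def)
  obtain z where z: "z \<in> Q" "z \<notin> Dl n" using nonDl[OF Q nd] by blast
  then have "z = (a, b) \<or> z = (b, a)" using sub ab(4) by auto
  then have "(a, b) \<in> Q" "(b, a) \<in> Q" using z(1) Q unfolding equiv_def sym_def by blast+
  then show ?thesis using sub ab(4) Dl_sub[OF Q] by blast
qed

lemma full_equiv: "equiv (NN n) (NN n \<times> NN n)"
  by (rule equivI) (auto simp: refl_on_def sym_def trans_def)

lemma full_nonDl: "n \<ge> 2 \<Longrightarrow> NN n \<times> NN n \<noteq> Dl n"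
proof
  assume n: "n \<ge> 2" and e: "NN n \<times> NN n = Dl n"
  have "(1::nat, 2::nat) \<in> NN n \<times> NN n" using n by auto
  then have "(1::nat, 2::nat) \<in> Dl n" unfolding e .
  then show False by auto
qed

lemma idm_idem: "equiv (NN n) K \<Longrightarrow> idem (idm n K)"
proof -
  assume K: "equiv (NN n) K"
  have "dmult (idm n K) (idm n K) = idm n ((K \<union> K)\<^sup>+)" by (rule join_idm(1)[OF K K])
  also have "\<dots> = idm n K" using trancl_equiv[OF K] by simp
  finally show ?thesis unfolding idem_def .
qed

subsection \<open>The listed sets are isolated subsemigroups\<close>

lemma DS_ok: "subsemigroup n (DS n) \<and> isolated n (DS n)"
  unfolding subsemigroup_def isolated_def using idm_props(1)[OF Dl_equiv, of n] dmult_in by blast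

lemma SU_ok: "subsemigroup n (SU n) \<and> isolated n (SU n)"
proof -
  have "idm n (Dl n) \<in> SU n" using unit_iff idm_props(1)[OF Dl_equiv] kr_idm[OF Dl_equiv] by blast
  moreover have "\<forall>a\<in>DS n. \<forall>k\<ge>1. dpow a k \<in> SU n \<longrightarrow> a \<in> SU n"
    using nonunit_pow by blast
  ultimately show ?thesis unfolding subsemigroup_def isolated_def using SU_DS unit_mult by blast
qed

lemma NU_ok: "n \<ge> 2 \<Longrightarrow> subsemigroup n (DS n - SU n) \<and> isolated n (DS n - SU n)"
proof -
  assume n: "n \<ge> 2"
  have "idm n (NN n \<times> NN n) \<in> DS n - SU n"
    using unit_iff idm_props(1)[OF full_equiv] kr_idm[OF full_equiv] full_nonDl[OF n] by blast
  moreover have "\<forall>a\<in>DS n. \<forall>k\<ge>1. dpow a k \<in> DS n - SU n \<longrightarrow> a \<in> DS n - SU n"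
    using unit_pow by blast
  moreover have "\<forall>a\<in>DS n - SU n. \<forall>b\<in>DS n - SU n. dmult a b \<in> DS n - SU n"
    using nonunit_mult by blast
  ultimately show ?thesis unfolding subsemigroup_def isolated_def by blast
qed

lemma H_ok:
  assumes n: "n \<ge> 2" and e: "e \<in> DS n" and ide: "idempotent e" and r: "rank e = n - 1"
  shows "subsemigroup n (H_class n e) \<and> isolated n (H_class n e)"
proof -
  define K where "K = kr e"
  have K: "equiv (NN n) K" unfolding K_def by (rule kr_equiv[OF e])
  have ee: "e = idm n K" unfolding K_def by (rule idem_is_idm[OF e]) (use ide in \<open>simp add: idempotent_idem\<close>)
  have "card (NN n // K) = n - 1" using r card_idm[OF K] ee by (simp add: rank_def)
  then have A: "atom n K" by (rule card_atom[OF K n])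
  have H: "H_class n e = {x \<in> DS n. kr x = K \<and> ck x = K}" using H_class_char[OF K] ee by simp
  have ne: "e \<in> H_class n e" unfolding H using e ee kr_idm[OF K] ck_idm[OF K] by simp
  have cl: "\<forall>a\<in>H_class n e. \<forall>b\<in>H_class n e. dmult a b \<in> H_class n e"
  proof (intro ballI)
    fix a b assume "a \<in> H_class n e" "b \<in> H_class n e"
    then have ab: "a \<in> DS n" "kr a = K" "ck a = K" "b \<in> DS n" "kr b = K" "ck b = K" unfolding H by auto
    note m = H_mult[OF ab(1-3) ab(4-6)]
    show "dmult a b \<in> H_class n e" unfolding H using m by simp
  qed
  have iso: "\<forall>a\<in>DS n. \<forall>k\<ge>1. dpow a k \<in> H_class n e \<longrightarrow> a \<in> H_class n e"
  proof (intro ballI allI impI)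
    fix a k assume a: "a \<in> DS n" and k: "1 \<le> k" and ak: "dpow a k \<in> H_class n e"
    have "dpow a k \<in> {x \<in> DS n. kr x = K \<and> ck x = K}" using ak H by simp
    then have akK: "kr (dpow a k) = K" "ck (dpow a k) = K" by simp_all
    have s1: "kr a \<subseteq> K" using kr_pow[OF a k] akK by simp
    have s2: "ck a \<subseteq> K" using ck_pow[OF a k] akK by simp
    have "a \<notin> SU n"
    proof
      assume "a \<in> SU n"
      then have "dpow a k \<in> SU n" using unit_pow k by blast
      then have "K = Dl n" using unit_iff akK by auto
      then show False using atom_nonDl[OF A] by simp
    qed
    then have nk: "kr a \<noteq> Dl n" using unit_iff a by blast
    then have nc: "ck a \<noteq> Dl n" using ck_Dl_kr[OF a] by blast
    have "kr a = K" by (rule atom_min[OF A kr_equiv[OF a] s1 nk])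
    moreover have "ck a = K" by (rule atom_min[OF A ck_equiv[OF a] s2 nc])
    ultimately show "a \<in> H_class n e" unfolding H using a by simp
  qed
  have "H_class n e \<subseteq> DS n" unfolding H by blast
  then show ?thesis unfolding subsemigroup_def isolated_def using ne cl iso by blast
qed



lemma classify:
  assumes n: "n \<ge> 2" and ss: "subsemigroup n T" and iso: "isolated n T"
  shows "T = DS n \<or> T = SU n \<or> T = DS n - SU n \<or>
         (\<exists>e. e \<in> DS n \<and> idempotent e \<and> rank e = n - 1 \<and> T = H_class n e)"
proof -
  have Tsub: "T \<subseteq> DS n" by (rule ss_sub[OF ss])
  have Tne: "T \<noteq> {}" using ss by (simp add: subsemigroup_def)
  show ?thesis
  proof (cases "T \<subseteq> SU n")
    case True
    obtain u where u: "u \<in> T" using Tne by blast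
    have "SU n \<subseteq> T" by (rule units_all[OF ss iso u]) (use True u in blast)
    then show ?thesis using True by blast
  next
    case False
    then obtain x where x: "x \<in> T" "x \<notin> SU n" by blast
    have xD: "x \<in> DS n" using x Tsub by blast
    obtain m where m: "m \<ge> 2" "dpow x m = idm n (kr (dpow x m))" using idem_power[OF xD] by blast
    define K0 where "K0 = kr (dpow x m)"
    have xm: "dpow x m \<in> DS n - SU n" using nonunit_pow[of x n m] x xD m by simp
    have K0: "equiv (NN n) K0" unfolding K0_def using kr_equiv xm by blast
    have K0nd: "K0 \<noteq> Dl n" unfolding K0_def using xm unit_iff by blast
    have K0T: "idm n K0 \<in> T" using ss_pow[OF ss x(1), of m] m unfolding K0_def by simp
    have nonunits: "DS n - SU n \<subseteq> T" if G: "idm n (NN n \<times> NN n) \<in> T"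
    proof
      fix y assume y: "y \<in> DS n - SU n"
      then have yD: "y \<in> DS n" by simp
      obtain m' where m': "m' \<ge> 2" "dpow y m' = idm n (kr (dpow y m'))" using idem_power[OF yD] by blast
      have ym: "dpow y m' \<in> DS n - SU n" using nonunit_pow[OF y] m' by simp
      have "idm n (kr (dpow y m')) \<in> T"
        by (rule allQ[OF ss iso G]) (use ym kr_equiv unit_iff in auto)
      then show "y \<in> T" using iso_root[OF iso yD, of m'] m' by simp
    qed
    show ?thesis
    proof (cases "idm n (NN n \<times> NN n) \<in> T \<or> (\<exists>P. equiv (NN n) P \<and> idm n P \<in> T \<and> big P)")
      case True
      then have G: "idm n (NN n \<times> NN n) \<in> T" using crux[OF ss iso] by blast
      have NU: "DS n - SU n \<subseteq> T" by (rule nonunits[OF G])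
      show ?thesis
      proof (cases "\<exists>u\<in>T. u \<in> SU n")
        case True
        then obtain u where "u \<in> T" "u \<in> SU n" by blast
        then have "SU n \<subseteq> T" by (rule units_all[OF ss iso])
        then have "T = DS n" using NU Tsub by blast
        then show ?thesis by blast
      next
        case False
        then have "T = DS n - SU n" using NU Tsub by blast
        then show ?thesis by blast
      qed
    next
      case False
      then have nG: "idm n (NN n \<times> NN n) \<notin> T" and nB: "\<And>P. equiv (NN n) P \<Longrightarrow> idm n P \<in> T \<Longrightarrow> \<not> big P"
        by blast+
      have atomT: "atom n Q" if "equiv (NN n) Q" "idm n Q \<in> T" "Q \<noteq> Dl n" for Q
        using nonbig_atom[OF that(1,3)] nB[OF that(1,2)] by blast
      have A0: "atom n K0" by (rule atomT[OF K0 K0T K0nd])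
      obtain a b where ab: "a \<in> NN n" "b \<in> NN n" "a \<noteq> b" "K0 = Dl n \<union> {(a, b), (b, a)}"
        using A0 unfolding atom_def by blast
      have unique: "Q = K0" if Q: "equiv (NN n) Q" "idm n Q \<in> T" "Q \<noteq> Dl n" for Q
      proof (rule ccontr)
        assume ne: "Q \<noteq> K0"
        obtain c d where cd: "c \<in> NN n" "d \<in> NN n" "c \<noteq> d" "Q = Dl n \<union> {(c, d), (d, c)}"
          using atomT[OF Q] unfolding atom_def by blast
        have "{a, b} \<noteq> {c, d}"
        proof
          assume "{a, b} = {c, d}"
          then have "Q = K0" using ab(4) cd(4) by (auto simp: doubleton_eq_iff)
          then show False using ne by simp
        qed
        define J where "J = (K0 \<union> Q)\<^sup>+"
        have J: "equiv (NN n) J" unfolding J_def by (rule join_idm(2)[OF K0 Q(1)])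
        have JT: "idm n J \<in> T" unfolding J_def using join_idm(1)[OF K0 Q(1)] ss_mult[OF ss K0T Q(2)] by simp
        have "(a, b) \<in> J" "(c, d) \<in> J" unfolding J_def using ab(4) cd(4) by auto
        then have "big J" unfolding big_def using ab(3) cd(3) \<open>{a, b} \<noteq> {c, d}\<close> by blast
        then show False using nB[OF J JT] by simp
      qed
      have noU: "\<forall>u\<in>T. u \<notin> SU n"
      proof (rule ccontr)
        assume "\<not> (\<forall>u\<in>T. u \<notin> SU n)"
        then obtain u where "u \<in> T" "u \<in> SU n" by blast
        then have U: "SU n \<subseteq> T" by (rule units_all[OF ss iso])
        have "\<exists>c. c \<in> NN n \<and> c \<noteq> a \<and> c \<noteq> b"
        proof (rule ccontr)
          assume "\<not> (\<exists>c. c \<in> NN n \<and> c \<noteq> a \<and> c \<noteq> b)"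
          then have "NN n \<subseteq> {a, b}" by blast
          then have "K0 = NN n \<times> NN n" using ab K0 unfolding equiv_def by auto
          then show False using nG K0T by simp
        qed
        then obtain c where c: "c \<in> NN n" "c \<noteq> a" "c \<noteq> b" by blast
        have P1: "idm n (Dl n \<union> {(c, b), (b, c)}) \<in> T"
          by (rule conj_atom[OF ss U ab(1) ab(2) c(1)]) (use ab c K0T in auto)
        have P1e: "equiv (NN n) (Dl n \<union> {(c, b), (b, c)})"
          by (rule atom_equiv) (use ab c in \<open>auto simp: atom_def\<close>)
        have "Dl n \<union> {(c, b), (b, c)} = K0" by (rule unique[OF P1e P1]) (use c in auto)
        then show False using ab(4) c by auto
      qed
      have H: "H_class n (idm n K0) = {y \<in> DS n. kr y = K0 \<and> ck y = K0}" by (rule H_class_char[OF K0])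
      have "T = H_class n (idm n K0)"
        unfolding H
      proof (intro equalityI subsetI)
        fix y assume yT: "y \<in> T"
        then have yD: "y \<in> DS n" and yU: "y \<notin> SU n" using Tsub noU by auto
        obtain m' where m': "m' \<ge> 2" "dpow y m' = idm n (kr (dpow y m'))" using idem_power[OF yD] by blast
        have ym: "dpow y m' \<in> DS n - SU n" using nonunit_pow[of y n m'] yD yU m' by simp
        have Ky: "kr (dpow y m') = K0"
          by (rule unique) (use ym kr_equiv unit_iff ss_pow[OF ss yT, of m'] m' in auto)
        have s1: "kr y \<subseteq> K0" using kr_pow[OF yD, of m'] Ky m' by simp
        have "ck (dpow y m') = K0" using m'(2) Ky ck_idm[OF K0] by simp
        then have s2: "ck y \<subseteq> K0" using ck_pow[OF yD, of m'] m' by simp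
        have nk: "kr y \<noteq> Dl n" using yU yD unit_iff by blast
        have nc: "ck y \<noteq> Dl n" using nk ck_Dl_kr[OF yD] by blast
        have "kr y = K0" by (rule atom_min[OF A0 kr_equiv[OF yD] s1 nk])
        moreover have "ck y = K0" by (rule atom_min[OF A0 ck_equiv[OF yD] s2 nc])
        ultimately show "y \<in> {y \<in> DS n. kr y = K0 \<and> ck y = K0}" using yD by simp
      next
        fix y assume "y \<in> {y \<in> DS n. kr y = K0 \<and> ck y = K0}"
        then have y: "y \<in> DS n" "kr y = K0" "ck y = K0" by auto
        show "y \<in> T" by (rule H_in_T[OF iso K0 K0T y])
      qed
      moreover have "idm n K0 \<in> DS n" by (rule idm_props(1)[OF K0])
      moreover have "idempotent (idm n K0)" using idm_idem[OF K0] by (simp add: idempotent_idem)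
      moreover have "rank (idm n K0) = n - 1" using card_idm[OF K0] atom_card[OF A0] by (simp add: rank_def)
      ultimately show ?thesis by blast
    qed
  qed
qed

theorem mainTheorem12:
  fixes n :: nat
  assumes "n \<ge> 2"
  shows "{T. subsemigroup n T \<and> isolated n T} =
           {dual_sym n, sym_units n, dual_sym n - sym_units n} \<union>
           {H_class n e | e. e \<in> dual_sym n \<and> idempotent e \<and> rank e = n - 1}"
proof (intro equalityI subsetI)
  fix T assume "T \<in> {T. subsemigroup n T \<and> isolated n T}"
  then have ss: "subsemigroup n T" and iso: "isolated n T" by auto
  show "T \<in> {dual_sym n, sym_units n, dual_sym n - sym_units n} \<union>
           {H_class n e | e. e \<in> dual_sym n \<and> idempotent e \<and> rank e = n - 1}"
    using classify[OF assms ss iso] by blast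
next
  fix T assume "T \<in> {dual_sym n, sym_units n, dual_sym n - sym_units n} \<union>
           {H_class n e | e. e \<in> dual_sym n \<and> idempotent e \<and> rank e = n - 1}"
  then consider "T = dual_sym n" | "T = sym_units n" | "T = dual_sym n - sym_units n"
    | e where "e \<in> dual_sym n" "idempotent e" "rank e = n - 1" "T = H_class n e" by blast
  then show "T \<in> {T. subsemigroup n T \<and> isolated n T}"
  proof cases
    case 1 then show ?thesis using DS_ok by simp
  next
    case 2 then show ?thesis using SU_ok by simp
  next
    case 3 then show ?thesis using NU_ok[OF assms] by simp
  next
    case 4 then show ?thesis using H_ok[OF assms 4(1-3)] by simp
  qed
qed


end
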